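(* For all (well-formed, possibly open) $\lambda$-terms $t$ and $s$, $t \approx_{\mathrm{nf}} s$ if and only if there exists a natural number $n > \max(\mathrm{fv}(t)\cup\mathrm{fv}(s))$ such that $[\![\langle t, [], n\rangle_{\mathrm{ev}}]\!] \approx_H [\![\langle s, [], n\rangle_{\mathrm{ev}}]\!]$, where $H = \{c, hd, b, k, init, rec, ch\}$.
   Context: HOcore: processes $P,Q ::= a(x).P \mid \overline{a}\langle P\rangle \mid P \parallel Q \mid x \mid 0$ ($a$ channel names, $x$ process variables, $a(x).P$ binds $x$, $a(\_).P$ when $x$ is unused, $\parallel$ associative and commutative with unit $0$, $\mathrm{fn}(P)$ the free names). LTS: $\overline{a}\langle P\rangle \xrightarrow{\overline{a}\langle P\rangle} 0$; $a(x).Q \xrightarrow{a(P)} Q\{P/x\}$; if $P \xrightarrow{l} P'$ then $P\parallel Q \xrightarrow{l} P'\parallel Q$ (and symmetrically); if $P \xrightarrow{\overline{a}\langle R\rangle} P'$ and $Q \xrightarrow{a(R)} Q'$ then $P \parallel Q \xrightarrow{\tau} P'\parallel Q'$ (and symmetrically). $\Rightarrow$ is the reflexive transitive closure of $\xrightarrow{\tau}$. For a finite set $H$: $P\downarrow^H_a$ (resp. $P\downarrow^H_{\overline a}$) if $a\notin H$ and $P\xrightarrow{a(Q)}R$ (resp. $P\xrightarrow{\overline a\langle Q\rangle}R$) for some $Q,R$; $P\Downarrow^H_\mu$ if $P\Rightarrow P'\downarrow^H_\mu$. A barbed bisimulation w.r.t. $H$ is a symmetric relation $\mathcal R$ such that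 $P\mathcal RQ$ implies: $P\downarrow^H_\mu$ implies $Q\Downarrow^H_\mu$; for all $R$ with $\mathrm{fn}(R)\cap H=\emptyset$, $(P\parallel R)\mathcal R(Q\parallel R)$; if $P\xrightarrow\tau P'$ then $Q\Rightarrow Q'$ with $P'\mathcal RQ'$. $\approx_H$ is the largest barbed bisimulation w.r.t. $H$. Terms: $t,s ::= f \mid x \mid \lambda x.t \mid t\,s$ ($f$ free variables identified with natural numbers, $x$ bound variables, terms well formed; $\mathrm{fv}(t)$ the free variables). Stacks $\pi ::= t::\pi\mid[]$. KAM: $\langle t\,s, \pi\rangle \to \langle t, s :: \pi\rangle$, $\langle \lambda x.t, s::\pi\rangle \to \langle t\{s/x\}, \pi\rangle$. Relations on terms extend to stacks pointwise (equal length, elementwise related). Normal-form bisimulation: symmetric $\mathcal R$ on terms with $t\mathcal Rs$ implying (1) if $\langle t, []\rangle \to^* \langle \lambda x.t', []\rangle$ then $\langle s,[]\rangle \to^* \langle \lambda x.s', []\rangle$ for some $s'$ with $t'\{f/x\} \mathcal R s'\{f/x\}$ for a fresh $f$; (2) if $\langle t, []\rangle \to^* \langle f, \pi\rangle$ then $\langle s,[]\rangle\to^*\langle f,\pi'\rangle$ for some $\pi'$ with $\pi\mathcal R\pi'$. $\approx_{\mathrm{nf}}$ is the largest normal-form bisimulation. NFB machine configurations: $\langle t,\pi,n\rangle_{\mathrm{ev}}$ and $\langle \pi, n\rangle_{\mathrm{cont}}$ ($n\in\mathbb N$). Translation into HOcore, using channel names $c, hd, b, k, init, rec, ch$ and flag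 names $\lambda, \mathsf{enter}, \mathsf{skip}, \mathsf{done}, suc, z$ ($p$ fresh). Internal choice: $P + Q = \overline{ch}\langle P\rangle \parallel \overline{ch}\langle Q\rangle \parallel ch(x).ch(\_).x$. Numbers: $[0] = z(\_).\overline{init}\langle 0\rangle$, $[n+1] = suc(\_).[n]$. $[\![t\,s]\!] = c(p).([\![t]\!] \parallel \overline{c}\langle \overline{hd}\langle[\![s]\!]\rangle \parallel \overline{c}\langle p\rangle\rangle)$; $[\![\lambda x.t]\!] = c(p).(p \parallel \overline{b}\langle \mathit{Restart}\rangle \parallel hd(x).b(\_).[\![t]\!])$; $[\![x]\!] = x$; $[\![f]\!] = [f]$; $\mathit{Restart} = \lambda(\_).k(x).(\overline{hd}\langle x\rangle \parallel \overline{k}\langle suc(\_).x\rangle \parallel \overline{c}\langle[\![[]]\!]\rangle \parallel \overline{b}\langle 0\rangle)$; $\mathit{Rec} = init(\_).rec(x).(x \parallel \overline{rec}\langle x\rangle \parallel \mathit{Cont})$; $\mathit{Cont} = c(p).(p \parallel \overline{b}\langle \mathsf{done}(\_).0\rangle \parallel hd(x).b(\_).\mathit{Choice}(x))$; $\mathit{Choice}(P) = \mathsf{enter}(\_).c(\_).(P \parallel \overline{c}\langle[\![[]]\!]\rangle) + \mathsf{skip}(\_).\overline{init}\langle 0\rangle$; $[\![[]]\!] = b(x).x$; $[\![t::\pi]\!] = \overline{hd}\langle[\![t]\!]\rangle \parallel \overline{c}\langle[\![\pi]\!]\rangle$; $[\![\langle t,\pi,n\rangle_{\mathrm{ev}}]\!]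 = [\![t]\!] \parallel \overline{c}\langle[\![\pi]\!]\rangle \parallel \overline{k}\langle [n]\rangle \parallel \mathit{Rec} \parallel \overline{rec}\langle\mathit{Rec}\rangle$. *)

theory Defs
  imports Main
begin

type_synonym name = string

text \<open>Process variables: PL d are the variables coming from lambda binders (de Bruijn level d),
  PP is the variable p of the translation, PX the variable x used in Restart/Rec/Cont/plus,
  PW the wildcard used for binders whose variable is unused.\<close>
datatype pvar = PL nat | PP | PX | PW

datatype proc =
    Inp name pvar proc
  | Out name proc
  | Par proc proc
  | Var pvar
  | Nil

fun fvp :: "proc \<Rightarrow> pvar set" where
  "fvp (Inp a x P) = fvp P - {x}"
| "fvp (Out a P) = fvp P"
| "fvp (Par P Q) = fvp P \<union> fvp Q"
| "fvp (Var x) = {x}"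
| "fvp Nil = {}"

definition closed :: "proc \<Rightarrow> bool" where
  "closed P \<longleftrightarrow> fvp P = {}"

fun fn :: "proc \<Rightarrow> name set" where
  "fn (Inp a x P) = insert a (fn P)"
| "fn (Out a P) = insert a (fn P)"
| "fn (Par P Q) = fn P \<union> fn Q"
| "fn (Var x) = {}"
| "fn Nil = {}"

text \<open>subst Q x P is Q{P/x}. Substituted processes are always closed in our use,
  so no capture can occur.\<close>
fun subst :: "proc \<Rightarrow> pvar \<Rightarrow> proc \<Rightarrow> proc" where
  "subst (Inp a y Q) x P = Inp a y (if y = x then Q else subst Q x P)"
| "subst (Out a Q) x P = Out a (subst Q x P)"
| "subst (Par Q1 Q2) x P = Par (subst Q1 x P) (subst Q2 x P)"
| "subst (Var y) x P = (if y = x then P else Var y)"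
| "subst Nil x P = Nil"

datatype label = LIn name proc | LOut name proc | Tau

inductive step :: "proc \<Rightarrow> label \<Rightarrow> proc \<Rightarrow> bool" where
  out: "step (Out a P) (LOut a P) Nil"
| inp: "step (Inp a x Q) (LIn a P) (subst Q x P)"
| parL: "step P l P' \<Longrightarrow> step (Par P Q) l (Par P' Q)"
| parR: "step Q l Q' \<Longrightarrow> step (Par P Q) l (Par P Q')"
| comL: "step P (LOut a R) P' \<Longrightarrow> step Q (LIn a R) Q' \<Longrightarrow> step (Par P Q) Tau (Par P' Q')"
| comR: "step P (LIn a R) P' \<Longrightarrow> step Q (LOut a R) Q' \<Longrightarrow> step (Par P Q) Tau (Par P' Q')"

abbreviation tau_steps :: "proc \<Rightarrow> proc \<Rightarrow> bool" where
  "tau_steps \<equiv> (\<lambda>P Q. step P Tau Q)\<^sup>*\<^sup>*"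

datatype barb = BIn name | BOut name

fun has_barb :: "name set \<Rightarrow> proc \<Rightarrow> barb \<Rightarrow> bool" where
  "has_barb H P (BIn a) \<longleftrightarrow> a \<notin> H \<and> (\<exists>Q R. step P (LIn a Q) R)"
| "has_barb H P (BOut a) \<longleftrightarrow> a \<notin> H \<and> (\<exists>Q R. step P (LOut a Q) R)"

definition has_wbarb :: "name set \<Rightarrow> proc \<Rightarrow> barb \<Rightarrow> bool" where
  "has_wbarb H P \<mu> \<longleftrightarrow> (\<exists>P'. tau_steps P P' \<and> has_barb H P' \<mu>)"

definition barbed_bisim :: "name set \<Rightarrow> (proc \<Rightarrow> proc \<Rightarrow> bool) \<Rightarrow> bool" where
  "barbed_bisim H \<R> \<longleftrightarrow> symp \<R> \<and>
     (\<forall>P Q. \<R> P Q \<longrightarrow>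
        (\<forall>\<mu>. has_barb H P \<mu> \<longrightarrow> has_wbarb H Q \<mu>) \<and>
        (\<forall>R. closed R \<and> fn R \<inter> H = {} \<longrightarrow> \<R> (Par P R) (Par Q R)) \<and>
        (\<forall>P'. step P Tau P' \<longrightarrow> (\<exists>Q'. tau_steps Q Q' \<and> \<R> P' Q')))"

definition hbisim :: "name set \<Rightarrow> proc \<Rightarrow> proc \<Rightarrow> bool" where
  "hbisim H P Q \<longleftrightarrow> (\<exists>\<R>. barbed_bisim H \<R> \<and> \<R> P Q)"

section \<open>Lambda terms (locally nameless: free variables are naturals, bound ones de Bruijn)\<close>

datatype lterm = FVar nat | BVar nat | Abs lterm | App lterm lterm

fun lc_at :: "nat \<Rightarrow> lterm \<Rightarrow> bool" where
  "lc_at d (FVar f) = True"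
| "lc_at d (BVar i) = (i < d)"
| "lc_at d (Abs t) = lc_at (Suc d) t"
| "lc_at d (App t s) = (lc_at d t \<and> lc_at d s)"

definition well_formed :: "lterm \<Rightarrow> bool" where
  "well_formed t \<longleftrightarrow> lc_at 0 t"

fun fv :: "lterm \<Rightarrow> nat set" where
  "fv (FVar f) = {f}"
| "fv (BVar i) = {}"
| "fv (Abs t) = fv t"
| "fv (App t s) = fv t \<union> fv s"

fun open_at :: "nat \<Rightarrow> lterm \<Rightarrow> lterm \<Rightarrow> lterm" where
  "open_at k u (FVar f) = FVar f"
| "open_at k u (BVar i) = (if i = k then u else BVar i)"
| "open_at k u (Abs t) = Abs (open_at (Suc k) u t)"
| "open_at k u (App t s) = App (open_at k u t) (open_at k u s)"

text \<open>For Abs t, the term t{s/x} is open_at 0 s t.\<close>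

inductive kam :: "lterm \<times> lterm list \<Rightarrow> lterm \<times> lterm list \<Rightarrow> bool" where
  push: "kam (App t s, \<pi>) (t, s # \<pi>)"
| grab: "kam (Abs t, s # \<pi>) (open_at 0 s t, \<pi>)"

definition nf_bisim :: "(lterm \<Rightarrow> lterm \<Rightarrow> bool) \<Rightarrow> bool" where
  "nf_bisim \<R> \<longleftrightarrow> symp \<R> \<and>
     (\<forall>t s. \<R> t s \<longrightarrow>
        (\<forall>t'. kam\<^sup>*\<^sup>* (t, []) (Abs t', []) \<longrightarrow>
           (\<exists>s'. kam\<^sup>*\<^sup>* (s, []) (Abs s', []) \<and>
              (\<exists>f. f \<notin> fv t' \<union> fv s' \<and> \<R> (open_at 0 (FVar f) t') (open_at 0 (FVar f) s')))) \<and>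
        (\<forall>f \<pi>. kam\<^sup>*\<^sup>* (t, []) (FVar f, \<pi>) \<longrightarrow>
           (\<exists>\<pi>'. kam\<^sup>*\<^sup>* (s, []) (FVar f, \<pi>') \<and> list_all2 \<R> \<pi> \<pi>')))"

definition nf_equiv :: "lterm \<Rightarrow> lterm \<Rightarrow> bool" where
  "nf_equiv t s \<longleftrightarrow> (\<exists>\<R>. nf_bisim \<R> \<and> \<R> t s)"

definition H :: "name set" where
  "H = {''c'', ''hd'', ''b'', ''k'', ''init'', ''rec'', ''ch''}"

definition plus :: "proc \<Rightarrow> proc \<Rightarrow> proc" where
  "plus P Q = Par (Out ''ch'' P) (Par (Out ''ch'' Q) (Inp ''ch'' PX (Inp ''ch'' PW (Var PX))))"

fun num :: "nat \<Rightarrow> proc" where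
  "num 0 = Inp ''z'' PW (Out ''init'' Nil)"
| "num (Suc n) = Inp ''suc'' PW (num n)"

definition tr_empty :: proc where
  "tr_empty = Inp ''b'' PX (Var PX)"

definition restart :: proc where
  "restart = Inp ''lambda'' PW (Inp ''k'' PX
     (Par (Out ''hd'' (Var PX)) (Par (Out ''k'' (Inp ''suc'' PW (Var PX)))
        (Par (Out ''c'' tr_empty) (Out ''b'' Nil)))))"

text \<open>tr d t: translation of a term under d enclosing lambda binders;
  the bound variable BVar i is the process variable PL (d - 1 - i).\<close>
fun tr :: "nat \<Rightarrow> lterm \<Rightarrow> proc" where
  "tr d (App t s) = Inp ''c'' PP (Par (tr d t) (Out ''c'' (Par (Out ''hd'' (tr d s)) (Out ''c'' (Var PP)))))"
| "tr d (Abs t) = Inp ''c'' PP (Par (Var PP) (Par (Out ''b'' restart)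
      (Inp ''hd'' (PL d) (Inp ''b'' PW (tr (Suc d) t)))))"
| "tr d (BVar i) = Var (PL (d - Suc i))"
| "tr d (FVar f) = num f"

fun tr_stack :: "lterm list \<Rightarrow> proc" where
  "tr_stack [] = tr_empty"
| "tr_stack (t # \<pi>) = Par (Out ''hd'' (tr 0 t)) (Out ''c'' (tr_stack \<pi>))"

definition choice :: "proc \<Rightarrow> proc" where
  "choice P = plus (Inp ''enter'' PW (Inp ''c'' PW (Par P (Out ''c'' tr_empty))))
                   (Inp ''skip'' PW (Out ''init'' Nil))"

definition cont :: proc where
  "cont = Inp ''c'' PP (Par (Var PP) (Par (Out ''b'' (Inp ''done'' PW Nil))
      (Inp ''hd'' PX (Inp ''b'' PW (choice (Var PX))))))"

definition rec_proc :: proc where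
  "rec_proc = Inp ''init'' PW (Inp ''rec'' PX (Par (Var PX) (Par (Out ''rec'' (Var PX)) cont)))"

definition tr_ev :: "lterm \<Rightarrow> lterm list \<Rightarrow> nat \<Rightarrow> proc" where
  "tr_ev t \<pi> n = Par (tr 0 t) (Par (Out ''c'' (tr_stack \<pi>))
      (Par (Out ''k'' (num n)) (Par rec_proc (Out ''rec'' rec_proc))))"

end

theory Submission
  imports Defs "HOL-Library.Multiset"
begin

fun threads :: "proc \<Rightarrow> proc multiset" where
  "threads (Par P Q) = threads P + threads Q"
| "threads Nil = {#}"
| "threads (Inp a x P) = {#Inp a x P#}"
| "threads (Out a P) = {#Out a P#}"
| "threads (Var x) = {#Var x#}"

lemma subst_fresh[simp]: "x \<notin> fvp Q \<Longrightarrow> subst Q x P = Q"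
  by (induction Q x P rule: subst.induct) auto

lemma closed_subst_id: "fvp Q = {} \<Longrightarrow> subst Q x P = Q"
  by simp

lemma fvp_subst: "fvp P = {} \<Longrightarrow> fvp (subst Q x P) = fvp Q - {x}"
  by (induction Q x P rule: subst.induct) auto

lemma fn_subst: "fn (subst Q x P) \<subseteq> fn Q \<union> fn P"
  by (induction Q x P rule: subst.induct) auto

lemma threads_fvp: "T \<in># threads P \<Longrightarrow> fvp T \<subseteq> fvp P"
  by (induction P) auto

lemma threads_fn: "T \<in># threads P \<Longrightarrow> fn T \<subseteq> fn P"
  by (induction P) auto

lemma step_out: "step P (LOut a R) P' \<Longrightarrow> \<exists>M. threads P = add_mset (Out a R) M \<and> threads P' = M"
proof (induction P "LOut a R" P' rule: step.induct)
  case (parL P P' Q) then show ?case by auto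
next
  case (parR Q Q' P) then show ?case by auto
qed auto

lemma step_inp: "step P (LIn a R) P' \<Longrightarrow> \<exists>x Q M. threads P = add_mset (Inp a x Q) M \<and> threads P' = M + threads (subst Q x R)"
proof (induction P "LIn a R" P' rule: step.induct)
  case (inp x Q) then show ?case by auto
next
  case (parL P P' Q)
  then obtain x Q1 M where "threads P = add_mset (Inp a x Q1) M" "threads P' = M + threads (subst Q1 x R)" by auto
  then show ?case by (intro exI[of _ x] exI[of _ Q1] exI[of _ "M + threads Q"]) (simp add: add_ac)
next
  case (parR Q Q' P)
  then obtain x Q1 M where "threads Q = add_mset (Inp a x Q1) M" "threads Q' = M + threads (subst Q1 x R)" by auto
  then show ?case by (intro exI[of _ x] exI[of _ Q1] exI[of _ "M + threads P"]) (simp add: add_ac)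
qed

lemma step_tau: "step P Tau P' \<Longrightarrow> \<exists>a R x Q M. threads P = add_mset (Out a R) (add_mset (Inp a x Q) M) \<and> threads P' = M + threads (subst Q x R)"
proof (induction P "Tau" P' rule: step.induct)
  case (parL P P' Q)
  then obtain a R x Q1 M where "threads P = add_mset (Out a R) (add_mset (Inp a x Q1) M)" "threads P' = M + threads (subst Q1 x R)" by blast
  then show ?case by (intro exI[of _ a] exI[of _ R] exI[of _ x] exI[of _ Q1] exI[of _ "M + threads Q"]) (simp add: add_ac)
next
  case (parR Q Q' P)
  then obtain a R x Q1 M where "threads Q = add_mset (Out a R) (add_mset (Inp a x Q1) M)" "threads Q' = M + threads (subst Q1 x R)" by blast
  then show ?case by (intro exI[of _ a] exI[of _ R] exI[of _ x] exI[of _ Q1] exI[of _ "M + threads P"]) (simp add: add_ac)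
next
  case (comL P a R P' Q Q')
  obtain M1 where 1: "threads P = add_mset (Out a R) M1" "threads P' = M1" using step_out[OF comL(1)] by blast
  obtain x Q1 M2 where 2: "threads Q = add_mset (Inp a x Q1) M2" "threads Q' = M2 + threads (subst Q1 x R)" using step_inp[OF comL(2)] by blast
  show ?case using 1 2 by (intro exI[of _ a] exI[of _ R] exI[of _ x] exI[of _ Q1] exI[of _ "M1 + M2"]) (simp add: add_ac)
next
  case (comR P a R P' Q Q')
  obtain M1 where 1: "threads Q = add_mset (Out a R) M1" "threads Q' = M1" using step_out[OF comR(2)] by blast
  obtain x Q1 M2 where 2: "threads P = add_mset (Inp a x Q1) M2" "threads P' = M2 + threads (subst Q1 x R)" using step_inp[OF comR(1)] by blast
  show ?case using 1 2 by (intro exI[of _ a] exI[of _ R] exI[of _ x] exI[of _ Q1] exI[of _ "M1 + M2"]) (simp add: add_ac)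
qed

lemma out_step: "Out a R \<in># threads P \<Longrightarrow> \<exists>P'. step P (LOut a R) P' \<and> threads P' = threads P - {#Out a R#}"
proof (induction P)
  case (Par P1 P2)
  show ?case
  proof (cases "Out a R \<in># threads P1")
    case True
    then obtain P' where "step P1 (LOut a R) P'" "threads P' = threads P1 - {#Out a R#}" using Par by auto
    then show ?thesis using True by (intro exI[of _ "Par P' P2"]) (auto intro: step.parL)
  next
    case False
    then have "Out a R \<in># threads P2" using Par by auto
    then obtain P' where "step P2 (LOut a R) P'" "threads P' = threads P2 - {#Out a R#}" using Par by auto
    then show ?thesis using False \<open>Out a R \<in># threads P2\<close> by (intro exI[of _ "Par P1 P'"]) (auto intro: step.parR)
  qed
qed (auto intro: step.out)

lemma inp_step: "Inp a x Q \<in># threads P \<Longrightarrow> \<exists>P'. step P (LIn a R) P' \<and> threads P' = threads P - {#Inp a x Q#} + threads (subst Q x R)"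
proof (induction P)
  case (Par P1 P2)
  show ?case
  proof (cases "Inp a x Q \<in># threads P1")
    case True
    then obtain P' where "step P1 (LIn a R) P'" "threads P' = threads P1 - {#Inp a x Q#} + threads (subst Q x R)" using Par by auto
    then show ?thesis using True by (intro exI[of _ "Par P' P2"]) (auto intro: step.parL simp: add_ac)
  next
    case False
    then have "Inp a x Q \<in># threads P2" using Par by auto
    then obtain P' where "step P2 (LIn a R) P'" "threads P' = threads P2 - {#Inp a x Q#} + threads (subst Q x R)" using Par by auto
    then show ?thesis using False \<open>Inp a x Q \<in># threads P2\<close> by (intro exI[of _ "Par P1 P'"]) (auto intro: step.parR simp: add_ac)
  qed
qed (auto intro: step.inp)

lemma two_sub: "A \<in># M \<Longrightarrow> B \<in># M - {#A#} \<Longrightarrow> {#A, B#} \<subseteq># M"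
  by (metis add_mset_add_single insert_DiffM mset_subset_eq_add_mset_cancel single_subset_iff subset_mset.add_diff_inverse union_mset_add_mset_left)

lemma two_sub_plus: "A \<in># M \<Longrightarrow> B \<in># M - {#A#} \<Longrightarrow> M + N - {#A, B#} = (M - {#A, B#}) + N"
  using two_sub by (metis subset_mset.diff_add_assoc2)

lemma split_two: "A \<in># M \<Longrightarrow> B \<in># N \<Longrightarrow> M + N - {#A, B#} = (M - {#A#}) + (N - {#B#})"
proof -
  assume "A \<in># M" "B \<in># N"
  then obtain M' N' where "M = add_mset A M'" "N = add_mset B N'" by (metis insert_DiffM)
  then show ?thesis by simp
qed

lemma tau_step: "Out a R \<in># threads P \<Longrightarrow> Inp a x Q \<in># threads P - {#Out a R#} \<Longrightarrow>
   \<exists>P'. step P Tau P' \<and> threads P' = threads P - {#Out a R, Inp a x Q#} + threads (subst Q x R)"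
proof (induction P)
  case (Par P1 P2)
  let ?O = "Out a R" and ?I = "Inp a x Q"
  have res: "threads (subst Q x R) = threads (subst Q x R)" ..
  show ?case
  proof (cases "?O \<in># threads P1")
    case O1: True
    show ?thesis
    proof (cases "?I \<in># threads P1 - {#?O#}")
      case True
      then obtain P' where "step P1 Tau P'" "threads P' = threads P1 - {#?O, ?I#} + threads (subst Q x R)"
        using Par.IH(1) O1 by blast
      then show ?thesis using O1 True two_sub_plus[OF O1 True, of "threads P2"]
        by (intro exI[of _ "Par P' P2"]) (auto intro: step.parL simp: add_ac)
    next
      case False
      then have I2: "?I \<in># threads P2" using Par.prems O1
        by (metis Un_iff add_mset_remove_trivial insert_DiffM set_mset_union threads.simps(1) union_mset_add_mset_left)
      obtain P1' where a: "step P1 (LOut a R) P1'" "threads P1' = threads P1 - {#?O#}" using out_step[OF O1] by blast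
      obtain P2' where b: "step P2 (LIn a R) P2'" "threads P2' = threads P2 - {#?I#} + threads (subst Q x R)" using inp_step[OF I2] by blast
      have "step (Par P1 P2) Tau (Par P1' P2')" using a b by (auto intro: step.comL)
      moreover have "threads (Par P1' P2') = threads (Par P1 P2) - {#?O, ?I#} + threads (subst Q x R)"
        using a(2) b(2) split_two[OF O1 I2] I2 by (simp add: add_ac)
      ultimately show ?thesis by blast
    qed
  next
    case O1: False
    then have O2: "?O \<in># threads P2" using Par.prems by auto
    show ?thesis
    proof (cases "?I \<in># threads P2 - {#?O#}")
      case True
      then obtain P' where "step P2 Tau P'" "threads P' = threads P2 - {#?O, ?I#} + threads (subst Q x R)"
        using Par.IH(2) O2 by blast
      then show ?thesis using O2 True two_sub_plus[OF O2 True, of "threads P1"]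
        by (intro exI[of _ "Par P1 P'"]) (auto intro: step.parR simp: add_ac)
    next
      case False
      then have I1: "?I \<in># threads P1" using Par.prems O2
        by (metis Un_iff add_mset_remove_trivial insert_DiffM set_mset_union threads.simps(1) union_mset_add_mset_right)
      obtain P2' where a: "step P2 (LOut a R) P2'" "threads P2' = threads P2 - {#?O#}" using out_step[OF O2] by blast
      obtain P1' where b: "step P1 (LIn a R) P1'" "threads P1' = threads P1 - {#?I#} + threads (subst Q x R)" using inp_step[OF I1] by blast
      have "step (Par P1 P2) Tau (Par P1' P2')" using a b by (auto intro: step.comR)
      moreover have "threads (Par P1' P2') = threads (Par P1 P2) - {#?O, ?I#} + threads (subst Q x R)"
        using a(2) b(2) split_two[OF I1 O2] I1 by (simp add: add_ac add_mset_commute)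
      ultimately show ?thesis by blast
    qed
  qed
qed auto

definition mtau :: "proc multiset \<Rightarrow> proc multiset \<Rightarrow> bool" where
  "mtau M M' \<longleftrightarrow> (\<exists>a R x Q N. M = add_mset (Out a R) (add_mset (Inp a x Q) N) \<and> M' = N + threads (subst Q x R))"

lemma mtauI: "M = add_mset (Out a R) (add_mset (Inp a x Q) N) \<Longrightarrow> M' = N + threads (subst Q x R) \<Longrightarrow> mtau M M'"
  unfolding mtau_def by blast

fun mbarb :: "name set \<Rightarrow> proc multiset \<Rightarrow> barb \<Rightarrow> bool" where
  "mbarb Hs M (BIn a) \<longleftrightarrow> a \<notin> Hs \<and> (\<exists>x Q. Inp a x Q \<in># M)"
| "mbarb Hs M (BOut a) \<longleftrightarrow> a \<notin> Hs \<and> (\<exists>R. Out a R \<in># M)"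

lemma step_tau_mtau: "step P Tau P' \<Longrightarrow> mtau (threads P) (threads P')"
  using step_tau unfolding mtau_def by blast

lemma mtau_step: "mtau (threads P) M' \<Longrightarrow> \<exists>P'. step P Tau P' \<and> threads P' = M'"
proof -
  assume "mtau (threads P) M'"
  then obtain a R x Q N where e: "threads P = add_mset (Out a R) (add_mset (Inp a x Q) N)" "M' = N + threads (subst Q x R)"
    unfolding mtau_def by blast
  have "Out a R \<in># threads P" "Inp a x Q \<in># threads P - {#Out a R#}" using e by auto
  from tau_step[OF this] obtain P' where "step P Tau P'" "threads P' = threads P - {#Out a R, Inp a x Q#} + threads (subst Q x R)" by blast
  then show ?thesis using e by (intro exI[of _ P']) (simp add: add_mset_commute)
qed

lemma mtaus_steps: "mtau\<^sup>*\<^sup>* M M' \<Longrightarrow> threads P = M \<Longrightarrow> \<exists>P'. tau_steps P P' \<and> threads P' = M'"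
proof (induction rule: rtranclp_induct)
  case base then show ?case by auto
next
  case (step y z)
  then obtain P1 where p1: "tau_steps P P1" "threads P1 = y" by blast
  from mtau_step[of P1 z] step(2) p1(2) obtain P2 where "step P1 Tau P2" "threads P2 = z" by auto
  with p1 show ?case using rtranclp.rtrancl_into_rtrancl[of _ P P1 P2] by blast
qed

lemma steps_mtaus: "tau_steps P P' \<Longrightarrow> mtau\<^sup>*\<^sup>* (threads P) (threads P')"
  by (induction rule: rtranclp_induct) (auto intro: rtranclp.rtrancl_into_rtrancl step_tau_mtau)

lemma has_barb_mbarb: "has_barb Hs P \<mu> \<longleftrightarrow> mbarb Hs (threads P) \<mu>"
proof (cases \<mu>)
  case (BIn a)
  show ?thesis
  proof
    assume "has_barb Hs P \<mu>"
    then show "mbarb Hs (threads P) \<mu>" using BIn step_inp by fastforce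
  next
    assume "mbarb Hs (threads P) \<mu>"
    then show "has_barb Hs P \<mu>" using BIn inp_step by fastforce
  qed
next
  case (BOut a)
  show ?thesis
  proof
    assume "has_barb Hs P \<mu>"
    then show "mbarb Hs (threads P) \<mu>" using BOut step_out by fastforce
  next
    assume "mbarb Hs (threads P) \<mu>"
    then show "has_barb Hs P \<mu>" using BOut out_step by fastforce
  qed
qed

lemma two_elems: "A \<in># M \<Longrightarrow> B \<in># M - {#A#} \<Longrightarrow> M = add_mset A (add_mset B (M - {#A#} - {#B#}))"
  by (metis insert_DiffM)

lemma mtau_ctx: "mtau A A1 \<Longrightarrow> mtau (C + A) (C + A1)"
  unfolding mtau_def by (metis union_assoc union_mset_add_mset_right)

lemma mtaus_ctx: "mtau\<^sup>*\<^sup>* A A1 \<Longrightarrow> mtau\<^sup>*\<^sup>* (C + A) (C + A1)"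
  by (induction rule: rtranclp_induct) (auto intro: rtranclp.rtrancl_into_rtrancl mtau_ctx)

lemma add_mset_eq_plus: "add_mset x N = C + A \<Longrightarrow>
   (x \<in># C \<and> N = (C - {#x#}) + A) \<or> (x \<in># A \<and> N = C + (A - {#x#}))"
proof -
  assume e: "add_mset x N = C + A"
  then have "x \<in># C + A" by (metis union_single_eq_member)
  then have "x \<in># C \<or> x \<in># A" by simp
  then show ?thesis
  proof
    assume "x \<in># C"
    then obtain C' where "C = add_mset x C'" by (metis insert_DiffM)
    then show ?thesis using e by auto
  next
    assume "x \<in># A"
    then obtain A' where "A = add_mset x A'" by (metis insert_DiffM)
    then show ?thesis using e by auto
  qed
qed

lemma mtau_split: "mtau (C + A) M' \<Longrightarrow>
   (\<exists>C'. mtau C C' \<and> M' = C' + A) \<or> (\<exists>A1. mtau A A1 \<and> M' = C + A1) \<or>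
   (\<exists>a R x Q C1 A1. C = add_mset (Out a R) C1 \<and> A = add_mset (Inp a x Q) A1 \<and> M' = C1 + A1 + threads (subst Q x R)) \<or>
   (\<exists>a R x Q C1 A1. C = add_mset (Inp a x Q) C1 \<and> A = add_mset (Out a R) A1 \<and> M' = C1 + A1 + threads (subst Q x R))"
proof -
  assume "mtau (C + A) M'"
  then obtain a R x Q N where e: "C + A = add_mset (Out a R) (add_mset (Inp a x Q) N)" and m: "M' = N + threads (subst Q x R)"
    unfolding mtau_def by blast
  from add_mset_eq_plus[OF e[symmetric]]
  show ?thesis
  proof (elim disjE conjE)
    assume o: "Out a R \<in># C" and n1: "add_mset (Inp a x Q) N = C - {#Out a R#} + A"
    from add_mset_eq_plus[OF n1] show ?thesis
    proof (elim disjE conjE)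
      assume i: "Inp a x Q \<in># C - {#Out a R#}" and n2: "N = C - {#Out a R#} - {#Inp a x Q#} + A"
      have "mtau C (C - {#Out a R#} - {#Inp a x Q#} + threads (subst Q x R))"
        by (rule mtauI[of _ a R x Q]) (use two_elems[OF o i] in \<open>auto simp: insert_DiffM\<close>)
      then show ?thesis using m n2 by (auto simp: add_ac)
    next
      assume i: "Inp a x Q \<in># A" and n2: "N = C - {#Out a R#} + (A - {#Inp a x Q#})"
      show ?thesis using o i m n2
        by (intro disjI2 disjI1 exI[of _ a] exI[of _ R] exI[of _ x] exI[of _ Q] exI[of _ "C - {#Out a R#}"] exI[of _ "A - {#Inp a x Q#}"])
          (auto simp: insert_DiffM)
    qed
  next
    assume o: "Out a R \<in># A" and n1: "add_mset (Inp a x Q) N = C + (A - {#Out a R#})"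
    from add_mset_eq_plus[OF n1] show ?thesis
    proof (elim disjE conjE)
      assume i: "Inp a x Q \<in># C" and n2: "N = C - {#Inp a x Q#} + (A - {#Out a R#})"
      show ?thesis using o i m n2
        by (intro disjI2 disjI2 disjI2 exI[of _ a] exI[of _ R] exI[of _ x] exI[of _ Q] exI[of _ "C - {#Inp a x Q#}"] exI[of _ "A - {#Out a R#}"])
          (auto simp: insert_DiffM)
    next
      assume i: "Inp a x Q \<in># A - {#Out a R#}" and n2: "N = C + (A - {#Out a R#} - {#Inp a x Q#})"
      have "mtau A (A - {#Out a R#} - {#Inp a x Q#} + threads (subst Q x R))"
        by (rule mtauI[of _ a R x Q]) (use two_elems[OF o i] in \<open>auto simp: insert_DiffM\<close>)
      then show ?thesis using m n2 by (auto simp: add_ac)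
    qed
  qed
qed

definition ctxok :: "proc multiset \<Rightarrow> bool" where
  "ctxok C \<longleftrightarrow> (\<forall>T \<in># C. fvp T = {} \<and> fn T \<inter> H = {})"

lemma ctxok_threads: "fvp R = {} \<Longrightarrow> fn R \<inter> H = {} \<Longrightarrow> ctxok (threads R)"
  unfolding ctxok_def using threads_fvp threads_fn by blast

lemma ctxok_plus[simp]: "ctxok (A + B) \<longleftrightarrow> ctxok A \<and> ctxok B"
  unfolding ctxok_def by auto

lemma ctxok_add[simp]: "ctxok (add_mset T B) \<longleftrightarrow> fvp T = {} \<and> fn T \<inter> H = {} \<and> ctxok B"
  unfolding ctxok_def by auto

lemma ctxok_subst: "fvp (Inp a x Q) = {} \<Longrightarrow> fn (Inp a x Q) \<inter> H = {} \<Longrightarrow> fvp R = {} \<Longrightarrow> fn R \<inter> H = {} \<Longrightarrow>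
   ctxok (threads (subst Q x R))"
  apply (rule ctxok_threads)
  using fvp_subst[of R Q x] fn_subst[of Q x R] by auto

lemma ctxok_mtau: "ctxok C \<Longrightarrow> mtau C C' \<Longrightarrow> ctxok C'"
  unfolding mtau_def using ctxok_subst by fastforce

definition good_rel :: "(proc multiset \<Rightarrow> proc multiset \<Rightarrow> bool) \<Rightarrow> bool" where
  "good_rel Rel \<longleftrightarrow> symp Rel \<and> (\<forall>A A'. Rel A A' \<longrightarrow>
     (\<forall>\<mu>. mbarb H A \<mu> \<longrightarrow> (\<exists>A''. mtau\<^sup>*\<^sup>* A' A'' \<and> mbarb H A'' \<mu>)) \<and>
     (\<forall>A1. mtau A A1 \<longrightarrow> (\<exists>A1'. mtau\<^sup>*\<^sup>* A' A1' \<and> Rel A1 A1')) \<and>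
     (\<forall>a x Q N R. A = add_mset (Inp a x Q) N \<longrightarrow> a \<notin> H \<longrightarrow> fvp R = {} \<longrightarrow> fn R \<inter> H = {} \<longrightarrow>
        (\<exists>x' Q' N'. mtau\<^sup>*\<^sup>* A' (add_mset (Inp a x' Q') N') \<and> Rel (N + threads (subst Q x R)) (N' + threads (subst Q' x' R)))) \<and>
     (\<forall>a R. Out a R \<in># A \<longrightarrow> a \<in> H))"

lemma good_rel_hbisim:
  assumes g: "good_rel Rel" and r: "Rel (threads P) (threads Q)"
  shows "hbisim H P Q"
proof -
  define B where "B P Q \<longleftrightarrow> (\<exists>C A A'. threads P = C + A \<and> threads Q = C + A' \<and> ctxok C \<and> Rel A A')" for P Q
  have sym: "symp Rel" using g unfolding good_rel_def by blast
  have "barbed_bisim H B"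
    unfolding barbed_bisim_def
  proof (intro conjI allI impI)
    show "symp B" unfolding symp_def B_def using sym by (meson sympD)
  next
    fix P Q \<mu> assume "B P Q" "has_barb H P \<mu>"
    then obtain C A A' where e: "threads P = C + A" "threads Q = C + A'" "ctxok C" "Rel A A'" unfolding B_def by blast
    have mb: "mbarb H (C + A) \<mu>" using \<open>has_barb H P \<mu>\<close> e by (simp add: has_barb_mbarb)
    show "has_wbarb H Q \<mu>"
    proof (cases "mbarb H C \<mu>")
      case True
      then have "mbarb H (threads Q) \<mu>" using e by (cases \<mu>) auto
      then show ?thesis unfolding has_wbarb_def by (auto simp: has_barb_mbarb)
    next
      case False
      then have "mbarb H A \<mu>" using mb by (cases \<mu>) auto
      then obtain A'' where "mtau\<^sup>*\<^sup>* A' A''" "mbarb H A'' \<mu>" using g e(4) unfolding good_rel_def by blast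
      then obtain Q'' where "tau_steps Q Q''" "threads Q'' = C + A''" using mtaus_steps[OF mtaus_ctx[of A' A'' C]] e(2) by blast
      moreover have "mbarb H (C + A'') \<mu>" using \<open>mbarb H A'' \<mu>\<close> by (cases \<mu>) auto
      ultimately show ?thesis unfolding has_wbarb_def by (auto simp: has_barb_mbarb)
    qed
  next
    fix P Q R assume "B P Q" "closed R \<and> fn R \<inter> H = {}"
    then obtain C A A' where e: "threads P = C + A" "threads Q = C + A'" "ctxok C" "Rel A A'" unfolding B_def by blast
    have "ctxok (threads R)" using ctxok_threads \<open>closed R \<and> fn R \<inter> H = {}\<close> unfolding closed_def by blast
    then show "B (Par P R) (Par Q R)" unfolding B_def using e
      by (intro exI[of _ "C + threads R"] exI[of _ A] exI[of _ A']) (auto simp: add_ac)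
  next
    fix P Q P' assume "B P Q" "step P Tau P'"
    then obtain C A A' where e: "threads P = C + A" "threads Q = C + A'" "ctxok C" "Rel A A'" unfolding B_def by blast
    have "mtau (C + A) (threads P')" using step_tau_mtau[OF \<open>step P Tau P'\<close>] e by simp
    from mtau_split[OF this] show "\<exists>Q'. tau_steps Q Q' \<and> B P' Q'"
    proof (elim disjE exE conjE)
      fix C' assume "mtau C C'" "threads P' = C' + A"
      then obtain Q' where "step Q Tau Q'" "threads Q' = C' + A'"
        using mtau_step[of Q "C' + A'"] e mtau_ctx[of C C' A'] by (auto simp: add_ac)
      then show ?thesis unfolding B_def using e \<open>threads P' = C' + A\<close> ctxok_mtau[OF e(3) \<open>mtau C C'\<close>]
        by (intro exI[of _ Q']) auto
    next
      fix A1 assume "mtau A A1" "threads P' = C + A1"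
      then obtain A1' where "mtau\<^sup>*\<^sup>* A' A1'" "Rel A1 A1'" using g e(4) unfolding good_rel_def by blast
      then obtain Q' where "tau_steps Q Q'" "threads Q' = C + A1'" using mtaus_steps[OF mtaus_ctx[of A' A1' C]] e(2) by blast
      then show ?thesis unfolding B_def using e \<open>threads P' = C + A1\<close> \<open>Rel A1 A1'\<close> by blast
    next
      fix a R x Qa C1 A1
      assume c: "C = add_mset (Out a R) C1" "A = add_mset (Inp a x Qa) A1" "threads P' = C1 + A1 + threads (subst Qa x R)"
      have h: "a \<notin> H" "fvp R = {}" "fn R \<inter> H = {}" "ctxok C1" using e(3) c by auto
      then obtain x' Q' N' where m: "mtau\<^sup>*\<^sup>* A' (add_mset (Inp a x' Q') N')"
          "Rel (A1 + threads (subst Qa x R)) (N' + threads (subst Q' x' R))"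
        using g e(4) c(2) unfolding good_rel_def by blast
      obtain Q1 where q1: "tau_steps Q Q1" "threads Q1 = C + add_mset (Inp a x' Q') N'"
        using mtaus_steps[OF mtaus_ctx[OF m(1), of C]] e(2) by blast
      have "mtau (threads Q1) (C1 + (N' + threads (subst Q' x' R)))"
        by (rule mtauI[of _ a R x' Q' "C1 + N'"]) (auto simp: q1 c add_ac)
      then obtain Q2 where "step Q1 Tau Q2" "threads Q2 = C1 + (N' + threads (subst Q' x' R))"
        using mtau_step by blast
      then show ?thesis unfolding B_def using q1 c m h
        by (intro exI[of _ Q2]) (auto intro: rtranclp.rtrancl_into_rtrancl simp: add_ac)
    next
      fix a R x Qa C1 A1
      assume c: "C = add_mset (Inp a x Qa) C1" "A = add_mset (Out a R) A1"
      have "\<forall>a R. Out a R \<in># A \<longrightarrow> a \<in> H" using g e(4) unfolding good_rel_def by blast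
      then have "a \<in> H" using c(2) by auto
      moreover have "a \<notin> H" using e(3) c(1) by auto
      ultimately show ?thesis by blast
    qed
  qed
  moreover have "B P Q" unfolding B_def using r by (intro exI[of _ "{#}"] exI[of _ "threads P"] exI[of _ "threads Q"]) (auto simp: ctxok_def)
  ultimately show ?thesis unfolding hbisim_def by blast
qed

lemma hbisim_sym: "hbisim Hs P Q \<Longrightarrow> hbisim Hs Q P"
proof -
  assume "hbisim Hs P Q"
  then obtain R where "barbed_bisim Hs R" "R P Q" unfolding hbisim_def by blast
  moreover then have "symp R" unfolding barbed_bisim_def by blast
  ultimately show ?thesis unfolding hbisim_def by (meson sympD)
qed

lemma hbisim_tau: "hbisim Hs P Q \<Longrightarrow> step P Tau P' \<Longrightarrow> \<exists>Q'. tau_steps Q Q' \<and> hbisim Hs P' Q'"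
  unfolding hbisim_def barbed_bisim_def by blast

lemma hbisim_taus: "tau_steps P P' \<Longrightarrow> hbisim Hs P Q \<Longrightarrow> \<exists>Q'. tau_steps Q Q' \<and> hbisim Hs P' Q'"
proof (induction arbitrary: rule: rtranclp_induct)
  case base then show ?case by auto
next
  case (step y z)
  then obtain Q1 where "tau_steps Q Q1" "hbisim Hs y Q1" by blast
  moreover from hbisim_tau[OF this(2) step(2)] obtain Q2 where "tau_steps Q1 Q2" "hbisim Hs z Q2" by blast
  ultimately show ?case using rtranclp_trans[of _ Q Q1 Q2] by blast
qed

lemma hbisim_barb: "hbisim Hs P Q \<Longrightarrow> has_barb Hs P \<mu> \<Longrightarrow> has_wbarb Hs Q \<mu>"
  unfolding hbisim_def barbed_bisim_def by blast

lemma hbisim_ctx: "hbisim Hs P Q \<Longrightarrow> closed R \<Longrightarrow> fn R \<inter> Hs = {} \<Longrightarrow> hbisim Hs (Par P R) (Par Q R)"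
  unfolding hbisim_def barbed_bisim_def by blast

definition hb :: "proc multiset \<Rightarrow> proc multiset \<Rightarrow> bool" where
  "hb M N \<longleftrightarrow> (\<exists>X Y. threads X = M \<and> threads Y = N \<and> hbisim H X Y)"

lemma hb_sym: "hb M N \<Longrightarrow> hb N M"
  unfolding hb_def using hbisim_sym by blast

lemma hb_taus: "hb M N \<Longrightarrow> mtau\<^sup>*\<^sup>* M M' \<Longrightarrow> \<exists>N'. mtau\<^sup>*\<^sup>* N N' \<and> hb M' N'"
proof -
  assume "hb M N" "mtau\<^sup>*\<^sup>* M M'"
  then obtain X Y where xy: "threads X = M" "threads Y = N" "hbisim H X Y" unfolding hb_def by blast
  obtain X' where "tau_steps X X'" "threads X' = M'" using mtaus_steps \<open>mtau\<^sup>*\<^sup>* M M'\<close> xy(1) by blast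
  from hbisim_taus[OF this(1) xy(3)] obtain Y' where "tau_steps Y Y'" "hbisim H X' Y'" by blast
  then show ?thesis unfolding hb_def using steps_mtaus xy(2) \<open>threads X' = M'\<close> by blast
qed

lemma hb_barb: "hb M N \<Longrightarrow> mbarb H M \<mu> \<Longrightarrow> \<exists>N'. mtau\<^sup>*\<^sup>* N N' \<and> mbarb H N' \<mu>"
proof -
  assume "hb M N" "mbarb H M \<mu>"
  then obtain X Y where xy: "threads X = M" "threads Y = N" "hbisim H X Y" unfolding hb_def by blast
  then have "has_wbarb H Y \<mu>" using hbisim_barb \<open>mbarb H M \<mu>\<close> has_barb_mbarb by blast
  then show ?thesis unfolding has_wbarb_def using steps_mtaus has_barb_mbarb xy(2) by blast
qed

lemma hb_wbarb: "hb M N \<Longrightarrow> mtau\<^sup>*\<^sup>* M M' \<Longrightarrow> mbarb H M' \<mu> \<Longrightarrow> \<exists>N'. mtau\<^sup>*\<^sup>* N N' \<and> mbarb H N' \<mu>"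
proof -
  assume a: "hb M N" "mtau\<^sup>*\<^sup>* M M'" "mbarb H M' \<mu>"
  obtain N1 where "mtau\<^sup>*\<^sup>* N N1" "hb M' N1" using hb_taus[OF a(1,2)] by blast
  moreover obtain N2 where "mtau\<^sup>*\<^sup>* N1 N2" "mbarb H N2 \<mu>" using hb_barb[OF \<open>hb M' N1\<close> a(3)] by blast
  ultimately show ?thesis using rtranclp_trans[of _ N N1 N2] by blast
qed

lemma hb_ctx: "hb M N \<Longrightarrow> fvp R = {} \<Longrightarrow> fn R \<inter> H = {} \<Longrightarrow> hb (M + threads R) (N + threads R)"
proof -
  assume "hb M N" "fvp R = {}" "fn R \<inter> H = {}"
  then obtain X Y where xy: "threads X = M" "threads Y = N" "hbisim H X Y" unfolding hb_def by blast
  then have "hbisim H (Par X R) (Par Y R)" using hbisim_ctx \<open>fvp R = {}\<close> \<open>fn R \<inter> H = {}\<close> unfolding closed_def by blast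
  then show ?thesis unfolding hb_def using xy by (intro exI[of _ "Par X R"] exI[of _ "Par Y R"]) auto
qed

fun picks :: "'a list \<Rightarrow> ('a \<times> 'a list) list" where
  "picks [] = []"
| "picks (x # xs) = (x, xs) # map (\<lambda>(y, ys). (y, x # ys)) (picks xs)"

lemma picks_sound: "(y, ys) \<in> set (picks xs) \<Longrightarrow> y \<in> set xs \<and> mset xs = add_mset y (mset ys)"
  by (induction xs arbitrary: y ys) auto

lemma picks_complete: "y \<in> set xs \<Longrightarrow> \<exists>ys. (y, ys) \<in> set (picks xs) \<and> mset xs = add_mset y (mset ys)"
proof (induction xs)
  case Nil then show ?case by simp
next
  case (Cons x xs)
  show ?case
  proof (cases "y = x")
    case True then show ?thesis by (intro exI[of _ xs]) auto
  next
    case False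
    then obtain ys where "(y, ys) \<in> set (picks xs)" "mset xs = add_mset y (mset ys)" using Cons by auto
    then show ?thesis by (intro exI[of _ "x # ys"]) (auto simp: add_mset_commute)
  qed
qed

fun comm :: "proc \<Rightarrow> proc \<Rightarrow> proc multiset option" where
  "comm (Out a R) (Inp b x Q) = (if a = b then Some (threads (subst Q x R)) else None)"
| "comm _ _ = None"

lemma comm_Some: "comm Ot It = Some r \<longleftrightarrow> (\<exists>a R x Q. Ot = Out a R \<and> It = Inp a x Q \<and> r = threads (subst Q x R))"
  by (cases "(Ot, It)" rule: comm.cases) auto

definition succs :: "proc list \<Rightarrow> proc multiset list" where
  "succs xs = concat (map (\<lambda>(Ot, rest1). concat (map (\<lambda>(It, rest2).
       (case comm Ot It of Some r \<Rightarrow> [mset rest2 + r] | None \<Rightarrow> [])) (picks rest1))) (picks xs))"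

lemma mtau_succs: "mtau (mset xs) M' \<longleftrightarrow> M' \<in> set (succs xs)"
proof
  assume "mtau (mset xs) M'"
  then obtain a R x Q N where e: "mset xs = add_mset (Out a R) (add_mset (Inp a x Q) N)" "M' = N + threads (subst Q x R)"
    unfolding mtau_def by blast
  have "Out a R \<in># mset xs" using e(1) by simp
  then have "Out a R \<in> set xs" by simp
  from picks_complete[OF this] obtain rest1 where r1: "(Out a R, rest1) \<in> set (picks xs)" "mset xs = add_mset (Out a R) (mset rest1)"
    by blast
  have "mset rest1 = add_mset (Inp a x Q) N" using r1(2) e(1) by simp
  then have "Inp a x Q \<in># mset rest1" by simp
  then have "Inp a x Q \<in> set rest1" by simp
  from picks_complete[OF this] obtain rest2 where r2: "(Inp a x Q, rest2) \<in> set (picks rest1)" "mset rest1 = add_mset (Inp a x Q) (mset rest2)"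
    by blast
  have "mset rest2 = N" using r2(2) \<open>mset rest1 = add_mset (Inp a x Q) N\<close> by simp
  have c: "M' \<in> set (case comm (Out a R) (Inp a x Q) of None \<Rightarrow> [] | Some r \<Rightarrow> [mset rest2 + r])"
    using e(2) \<open>mset rest2 = N\<close> by simp
  show "M' \<in> set (succs xs)" unfolding succs_def set_concat set_map
    apply (rule UN_I[OF imageI[OF r1(1)]])
    apply (simp only: prod.case set_concat set_map)
    apply (rule UN_I[OF imageI[OF r2(1)]])
    using c by simp
next
  assume "M' \<in> set (succs xs)"
  then obtain Ot rest1 It rest2 r where p: "(Ot, rest1) \<in> set (picks xs)" "(It, rest2) \<in> set (picks rest1)"
    "comm Ot It = Some r" "M' = mset rest2 + r"
    unfolding succs_def by (auto split: prod.splits option.splits) (metis that)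
  obtain a R x Q where "Ot = Out a R" "It = Inp a x Q" "r = threads (subst Q x R)"
    using comm_Some[THEN iffD1, OF p(3)] by blast
  moreover have "mset xs = add_mset Ot (add_mset It (mset rest2))" using picks_sound[OF p(1)] picks_sound[OF p(2)] by simp
  ultimately show "mtau (mset xs) M'" using p(4) unfolding mtau_def by blast
qed

definition appt :: "proc \<Rightarrow> proc \<Rightarrow> proc" where
  "appt P Q = Inp ''c'' PP (Par P (Out ''c'' (Par (Out ''hd'' Q) (Out ''c'' (Var PP)))))"
definition abst :: "nat \<Rightarrow> proc \<Rightarrow> proc" where
  "abst j B = Inp ''c'' PP (Par (Var PP) (Par (Out ''b'' restart) (Inp ''hd'' (PL j) (Inp ''b'' PW B))))"

definition RB :: proc where
  "RB = Inp ''k'' PX (Par (Out ''hd'' (Var PX)) (Par (Out ''k'' (Inp ''suc'' PW (Var PX)))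
        (Par (Out ''c'' tr_empty) (Out ''b'' Nil))))"
definition RI :: proc where
  "RI = Inp ''rec'' PX (Par (Var PX) (Par (Out ''rec'' (Var PX)) cont))"
definition doneP :: proc where "doneP = Inp ''done'' PW Nil"
definition contHd :: proc where "contHd = Inp ''hd'' PX (Inp ''b'' PW (choice (Var PX)))"
definition enterP :: "proc \<Rightarrow> proc" where
  "enterP P = Inp ''enter'' PW (Inp ''c'' PW (Par P (Out ''c'' tr_empty)))"
definition skipT :: proc where "skipT = Inp ''skip'' PW (Out ''init'' Nil)"
definition chI :: proc where "chI = Inp ''ch'' PX (Inp ''ch'' PW (Var PX))"

lemma restart_eq: "restart = Inp ''lambda'' PW RB" by (simp add: restart_def RB_def)
lemma rec_proc_eq: "rec_proc = Inp ''init'' PW RI" by (simp add: rec_proc_def RI_def)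
lemma cont_eq: "cont = Inp ''c'' PP (Par (Var PP) (Par (Out ''b'' doneP) contHd))"
  by (simp add: cont_def doneP_def contHd_def)
lemma choice_eq: "choice P = Par (Out ''ch'' (enterP P)) (Par (Out ''ch'' skipT) chI)"
  by (simp add: choice_def plus_def enterP_def skipT_def chI_def)

lemma fvp_num[simp]: "fvp (num n) = {}" by (induction n) auto
lemma fn_num: "fn (num n) \<subseteq> {''z'', ''suc'', ''init''}" by (induction n) auto
lemma fvp_consts[simp]: "fvp tr_empty = {}" "fvp RB = {}" "fvp restart = {}" "fvp doneP = {}"
  "fvp contHd = {}" "fvp cont = {}" "fvp RI = {}" "fvp rec_proc = {}" "fvp skipT = {}" "fvp chI = {}"
  by (auto simp: tr_empty_def RB_def restart_def doneP_def contHd_def cont_def RI_def rec_proc_def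
      skipT_def chI_def choice_def plus_def)

lemma subst_choice: "subst (choice (Var PX)) PX P = choice P"
  by (simp add: choice_def plus_def tr_empty_def)

lemma threads_num[simp]: "threads (num n) = {#num n#}" by (cases n) auto

inductive corr :: "nat list \<Rightarrow> proc \<Rightarrow> lterm \<Rightarrow> bool" where
  cnum: "corr e (num f) (FVar f)"
| cvar: "i < length e \<Longrightarrow> corr e (Var (PL (e ! i))) (BVar i)"
| capp: "corr e P t \<Longrightarrow> corr e Q s \<Longrightarrow> corr e (appt P Q) (App t s)"
| cabs: "corr (j # e) B t \<Longrightarrow> j \<notin> set e \<Longrightarrow> corr e (abst j B) (Abs t)"
| cclosed: "corr [] P t \<Longrightarrow> corr e P t"

lemma lc_at_mono: "lc_at k t \<Longrightarrow> k \<le> k' \<Longrightarrow> lc_at k' t"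
  by (induction t arbitrary: k k') auto

lemma corr_fvp: "corr e P t \<Longrightarrow> fvp P \<subseteq> PL ` set e"
  by (induction rule: corr.induct) (auto simp: appt_def abst_def)

lemma corr_closed: "corr [] P t \<Longrightarrow> fvp P = {}"
  using corr_fvp by fastforce

lemma corr_lc: "corr e P t \<Longrightarrow> lc_at (length e) t"
  by (induction rule: corr.induct) (auto intro: lc_at_mono)

lemma open_lc: "lc_at k t \<Longrightarrow> open_at k u t = t"
  by (induction t arbitrary: k) auto

lemma corr_threads: "corr e P t \<Longrightarrow> threads P = {#P#}"
  by (induction rule: corr.induct) (auto simp: appt_def abst_def)

lemma restart_closed_subst[simp]: "subst restart x P = restart"
  by simp

lemma corr_subst: "corr e' B t \<Longrightarrow> e' = e @ [j] \<Longrightarrow> j \<notin> set e \<Longrightarrow> corr [] P u \<Longrightarrow>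
   corr e (subst B (PL j) P) (open_at (length e) u t)"
proof (induction arbitrary: e rule: corr.induct)
  case (cnum e f) then show ?case by (auto intro: corr.intros)
next
  case (cvar i e')
  show ?case
  proof (cases "i = length e")
    case True
    then show ?thesis using cvar by (auto intro: corr.cclosed)
  next
    case False
    then have "i < length e" using cvar by auto
    moreover then have "e' ! i = e ! i" using cvar by (simp add: nth_append)
    moreover have "e ! i \<noteq> j" using cvar \<open>i < length e\<close> by (metis nth_mem)
    ultimately show ?thesis using cvar False by (auto intro: corr.cvar)
  qed
next
  case (capp e P t Q s)
  then show ?case by (auto simp: appt_def intro!: corr.capp[unfolded appt_def])
next
  case (cabs k e' B t)
  have "k \<noteq> j" using cabs by auto
  have "corr (k # e) (subst B (PL j) P) (open_at (length (k # e)) u t)"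
    using cabs by auto
  then have "corr e (abst k (subst B (PL j) P)) (Abs (open_at (Suc (length e)) u t))"
    using cabs by (auto intro: corr.cabs)
  then show ?case using \<open>k \<noteq> j\<close> by (simp add: abst_def)
next
  case (cclosed P' t e')
  have "fvp P' = {}" using corr_closed[OF cclosed(1)] .
  moreover have "open_at (length e) u t = t" using corr_lc[OF cclosed(1)] open_lc lc_at_mono by fastforce
  ultimately show ?case using cclosed by (auto intro: corr.cclosed)
qed

lemma corr_subst0: "corr [j] B t \<Longrightarrow> corr [] P u \<Longrightarrow> corr [] (subst B (PL j) P) (open_at 0 u t)"
  using corr_subst[of "[j]" B t "[]" j P u] by simp

lemma corr_tr: "lc_at d t \<Longrightarrow> corr (rev [0..<d]) (tr d t) t"
proof (induction t arbitrary: d)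
  case (FVar f) then show ?case by (auto intro: corr.cnum)
next
  case (BVar i)
  then have "rev [0..<d] ! i = d - Suc i" by (simp add: rev_nth)
  then show ?case using BVar corr.cvar[of i "rev [0..<d]"] by auto
next
  case (Abs t)
  have "corr (rev [0..<Suc d]) (tr (Suc d) t) t" using Abs.IH[of "Suc d"] Abs.prems by simp
  then have "corr (d # rev [0..<d]) (tr (Suc d) t) t" by simp
  then show ?case by (auto intro!: corr.cabs[unfolded abst_def])
next
  case (App t s)
  then show ?case by (auto intro!: corr.capp[unfolded appt_def])
qed

lemma corr_tr0: "well_formed t \<Longrightarrow> corr [] (tr 0 t) t"
  using corr_tr[of 0 t] unfolding well_formed_def by simp

lemma corr_inv: "corr e P t \<Longrightarrow> e = [] \<Longrightarrow>
   (\<exists>f. t = FVar f \<and> P = num f) \<or>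
   (\<exists>t1 t2 P1 P2. t = App t1 t2 \<and> P = appt P1 P2 \<and> corr [] P1 t1 \<and> corr [] P2 t2) \<or>
   (\<exists>t1 j B. t = Abs t1 \<and> P = abst j B \<and> corr [j] B t1)"
  by (induction rule: corr.induct) auto

inductive scorr :: "proc \<Rightarrow> lterm list \<Rightarrow> bool" where
  snil: "scorr tr_empty []"
| scons: "corr [] P t \<Longrightarrow> scorr S \<pi> \<Longrightarrow> scorr (Par (Out ''hd'' P) (Out ''c'' S)) (t # \<pi>)"

lemma scorr_closed: "scorr S \<pi> \<Longrightarrow> fvp S = {}"
  by (induction rule: scorr.induct) (auto simp: corr_closed)

lemma scorr_tr: "list_all well_formed \<pi> \<Longrightarrow> scorr (tr_stack \<pi>) \<pi>"
  by (induction \<pi>) (auto intro: scorr.intros corr_tr0)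

definition baseL :: "nat \<Rightarrow> proc list" where
  "baseL n = [Out ''k'' (num n), rec_proc, Out ''rec'' rec_proc]"

definition "EVm P S n = mset ([P, Out ''c'' S] @ baseL n)"
definition "AS1m j B P2 S1 n = mset ([Out ''hd'' P2, Out ''c'' S1, Out ''b'' restart, Inp ''hd'' (PL j) (Inp ''b'' PW B)] @ baseL n)"
definition "AS2m B' S1 n = mset ([Out ''c'' S1, Out ''b'' restart, Inp ''b'' PW B'] @ baseL n)"
definition "AE1m j B n = mset ([Out ''b'' restart, Inp ''hd'' (PL j) (Inp ''b'' PW B), tr_empty] @ baseL n)"
definition "WLm j B n = mset ([restart, Inp ''hd'' (PL j) (Inp ''b'' PW B)] @ baseL n)"
definition "L1m j B n = mset ([RB, Inp ''hd'' (PL j) (Inp ''b'' PW B)] @ baseL n)"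
definition "L2m j B n = mset ([Out ''hd'' (num n), Out ''c'' tr_empty, Out ''b'' Nil, Inp ''hd'' (PL j) (Inp ''b'' PW B)] @ baseL (Suc n))"
definition "L3m B' n = mset ([Out ''c'' tr_empty, Out ''b'' Nil, Inp ''b'' PW B'] @ baseL (Suc n))"
definition "Zm S n = mset ([Out ''init'' Nil, Out ''c'' S] @ baseL n)"
definition "Z1m S n = mset [RI, Out ''c'' S, Out ''k'' (num n), Out ''rec'' rec_proc]"
definition "Z2m S n = mset ([cont, Out ''c'' S] @ baseL n)"
definition "Z3m P S1 n = mset ([Out ''hd'' P, Out ''c'' S1, Out ''b'' doneP, contHd] @ baseL n)"
definition "Z4m P S1 n = mset ([Out ''c'' S1, Out ''b'' doneP, Inp ''b'' PW (choice P)] @ baseL n)"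
definition "CPm P S1 n = mset ([Out ''ch'' (enterP P), Out ''ch'' skipT, chI, Out ''c'' S1] @ baseL n)"
definition "CEm P S1 n = mset ([Out ''ch'' skipT, Inp ''ch'' PW (enterP P), Out ''c'' S1] @ baseL n)"
definition "CSm P S1 n = mset ([Out ''ch'' (enterP P), Inp ''ch'' PW skipT, Out ''c'' S1] @ baseL n)"
definition "ENm P S1 n = mset ([enterP P, Out ''c'' S1] @ baseL n)"
definition "SKm S1 n = mset ([skipT, Out ''c'' S1] @ baseL n)"
definition "EN1m P S1 n = mset ([Inp ''c'' PW (Par P (Out ''c'' tr_empty)), Out ''c'' S1] @ baseL n)"
definition "ZDm n = mset ([Out ''b'' doneP, contHd, tr_empty] @ baseL n)"
definition "Dm n = mset ([doneP, contHd] @ baseL n)"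
definition "Deadm n = mset ([contHd] @ baseL n)"

lemmas sdefs = EVm_def AS1m_def AS2m_def AE1m_def WLm_def L1m_def L2m_def L3m_def Zm_def Z1m_def Z2m_def
  Z3m_def Z4m_def CPm_def CEm_def CSm_def ENm_def SKm_def EN1m_def ZDm_def Dm_def Deadm_def baseL_def

lemmas unf = restart_eq rec_proc_eq cont_eq RB_def RI_def doneP_def contHd_def choice_eq enterP_def
  skipT_def chI_def tr_empty_def appt_def abst_def


lemma EV_app: "fvp P1 = {} \<Longrightarrow> fvp P2 = {} \<Longrightarrow> fvp S = {} \<Longrightarrow> threads P1 = {#P1#} \<Longrightarrow>
  mtau (EVm (appt P1 P2) S n) M' \<longleftrightarrow> M' = EVm P1 (Par (Out ''hd'' P2) (Out ''c'' S)) n"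
  unfolding sdefs mtau_succs by (simp add: succs_def unf add_mset_commute)

lemma EV_abs_cons: "PP \<notin> fvp B \<Longrightarrow>
  mtau (EVm (abst j B) (Par (Out ''hd'' P2) (Out ''c'' S1)) n) M' \<longleftrightarrow> M' = AS1m j B P2 S1 n"
  unfolding sdefs mtau_succs by (simp add: succs_def unf add_mset_commute)

lemma EV_abs_nil: "PP \<notin> fvp B \<Longrightarrow> mtau (EVm (abst j B) tr_empty n) M' \<longleftrightarrow> M' = AE1m j B n"
  unfolding sdefs mtau_succs by (simp add: succs_def unf add_mset_commute)

lemma EV_num: "\<not> mtau (EVm (num f) S n) M'"
  unfolding sdefs mtau_succs by (cases f) (simp_all add: succs_def unf add_mset_commute)

lemma AS1_step: "mtau (AS1m j B P2 S1 n) M' \<longleftrightarrow> M' = AS2m (subst B (PL j) P2) S1 n"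
  unfolding sdefs mtau_succs by (simp add: succs_def unf add_mset_commute)

lemma AS2_step: "fvp B' = {} \<Longrightarrow> threads B' = {#B'#} \<Longrightarrow> mtau (AS2m B' S1 n) M' \<longleftrightarrow> M' = EVm B' S1 n"
  unfolding sdefs mtau_succs by (simp add: succs_def unf add_mset_commute)

lemma AE1_step: "mtau (AE1m j B n) M' \<longleftrightarrow> M' = WLm j B n"
  unfolding sdefs mtau_succs by (simp add: succs_def unf add_mset_commute)

lemma WL_step: "\<not> mtau (WLm j B n) M'"
  unfolding sdefs mtau_succs by (simp add: succs_def unf add_mset_commute)

lemma L1_step: "mtau (L1m j B n) M' \<longleftrightarrow> M' = L2m j B n"
  unfolding sdefs mtau_succs by (simp add: succs_def unf add_mset_commute)

lemma L2_step: "mtau (L2m j B n) M' \<longleftrightarrow> M' = L3m (subst B (PL j) (num n)) n"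
  unfolding sdefs mtau_succs by (simp add: succs_def unf add_mset_commute)

lemma L3_step: "fvp B' = {} \<Longrightarrow> threads B' = {#B'#} \<Longrightarrow> mtau (L3m B' n) M' \<longleftrightarrow> M' = EVm B' tr_empty (Suc n)"
  unfolding sdefs mtau_succs by (simp add: succs_def unf add_mset_commute)

lemma Z_step: "mtau (Zm S n) M' \<longleftrightarrow> M' = Z1m S n"
  unfolding sdefs mtau_succs by (simp add: succs_def unf add_mset_commute)

lemma Z1_step: "mtau (Z1m S n) M' \<longleftrightarrow> M' = Z2m S n"
  unfolding sdefs mtau_succs by (simp add: succs_def unf add_mset_commute)

lemma Z2_cons: "mtau (Z2m (Par (Out ''hd'' P) (Out ''c'' S1)) n) M' \<longleftrightarrow> M' = Z3m P S1 n"
  unfolding sdefs mtau_succs by (simp add: succs_def unf add_mset_commute)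

lemma Z2_nil: "mtau (Z2m tr_empty n) M' \<longleftrightarrow> M' = ZDm n"
  unfolding sdefs mtau_succs by (simp add: succs_def unf add_mset_commute)

lemma Z3_step: "mtau (Z3m P S1 n) M' \<longleftrightarrow> M' = Z4m P S1 n"
  unfolding sdefs mtau_succs by (simp add: succs_def unf add_mset_commute)

lemma Z4_step: "mtau (Z4m P S1 n) M' \<longleftrightarrow> M' = CPm P S1 n"
  unfolding sdefs mtau_succs by (simp add: succs_def unf add_mset_commute)

lemma CP_step: "mtau (CPm P S1 n) M' \<longleftrightarrow> M' = CEm P S1 n \<or> M' = CSm P S1 n"
  unfolding sdefs mtau_succs by (simp add: succs_def unf add_mset_commute)

lemma CE_step: "mtau (CEm P S1 n) M' \<longleftrightarrow> M' = ENm P S1 n"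
  unfolding sdefs mtau_succs by (simp add: succs_def unf add_mset_commute)

lemma CS_step: "mtau (CSm P S1 n) M' \<longleftrightarrow> M' = SKm S1 n"
  unfolding sdefs mtau_succs by (simp add: succs_def unf add_mset_commute)

lemma EN_step: "\<not> mtau (ENm P S1 n) M'"
  unfolding sdefs mtau_succs by (simp add: succs_def unf add_mset_commute)

lemma SK_step: "\<not> mtau (SKm S1 n) M'"
  unfolding sdefs mtau_succs by (simp add: succs_def unf add_mset_commute)

lemma EN1_step: "fvp P = {} \<Longrightarrow> threads P = {#P#} \<Longrightarrow> mtau (EN1m P S1 n) M' \<longleftrightarrow> M' = EVm P tr_empty n"
  unfolding sdefs mtau_succs by (simp add: succs_def unf add_mset_commute)

lemma ZD_step: "mtau (ZDm n) M' \<longleftrightarrow> M' = Dm n"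
  unfolding sdefs mtau_succs by (simp add: succs_def unf add_mset_commute)

lemma D_step: "\<not> mtau (Dm n) M'"
  unfolding sdefs mtau_succs by (simp add: succs_def unf add_mset_commute)

lemma Dead_step: "\<not> mtau (Deadm n) M'"
  unfolding sdefs mtau_succs by (simp add: succs_def unf add_mset_commute)

definition flags :: "proc multiset \<Rightarrow> (name \<times> pvar \<times> proc) set" where
  "flags M = {(a, x, Q). Inp a x Q \<in># M \<and> a \<notin> H}"

definition outsH :: "proc multiset \<Rightarrow> bool" where
  "outsH M \<longleftrightarrow> (\<forall>a R. Out a R \<in># M \<longrightarrow> a \<in> H)"

lemmas fsimps = flags_def outsH_def sdefs H_def unf

lemma flags_none:
  "flags (EVm (appt P1 P2) S n) = {}" "flags (EVm (abst j B) S n) = {}"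
  "flags (AS1m j B P2 S1 n) = {}" "flags (AS2m B' S1 n) = {}" "flags (AE1m j B n) = {}"
  "flags (L1m j B n) = {}" "flags (L2m j B n) = {}" "flags (L3m B' n) = {}"
  "flags (Zm S n) = {}" "flags (Z1m S n) = {}" "flags (Z2m S n) = {}" "flags (Z3m P S1 n) = {}"
  "flags (Z4m P S1 n) = {}" "flags (CPm P S1 n) = {}" "flags (CEm P S1 n) = {}" "flags (CSm P S1 n) = {}"
  "flags (EN1m P S1 n) = {}" "flags (ZDm n) = {}" "flags (Deadm n) = {}"
  by (auto simp: fsimps)

lemma flags_WL: "flags (WLm j B n) = {(''lambda'', PW, RB)}"
  by (auto simp: fsimps)
lemma flags_num0: "flags (EVm (num 0) S n) = {(''z'', PW, Out ''init'' Nil)}"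
  by (auto simp: fsimps)
lemma flags_numS: "flags (EVm (num (Suc g)) S n) = {(''suc'', PW, num g)}"
  by (auto simp: fsimps)
lemma flags_EN: "flags (ENm P S1 n) = {(''enter'', PW, Inp ''c'' PW (Par P (Out ''c'' tr_empty)))}"
  by (auto simp: fsimps)
lemma flags_SK: "flags (SKm S1 n) = {(''skip'', PW, Out ''init'' Nil)}"
  by (auto simp: fsimps)
lemma flags_D: "flags (Dm n) = {(''done'', PW, Nil)}"
  by (auto simp: fsimps)

lemma outs_all:
  "outsH (AS1m j B P2 S1 n)" "outsH (AS2m B' S1 n)" "outsH (AE1m j B n)"
  "outsH (WLm j B n)" "outsH (L1m j B n)" "outsH (L2m j B n)" "outsH (L3m B' n)"
  "outsH (Zm S n)" "outsH (Z1m S n)" "outsH (Z2m S n)" "outsH (Z3m P S1 n)"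
  "outsH (Z4m P S1 n)" "outsH (CPm P S1 n)" "outsH (CEm P S1 n)" "outsH (CSm P S1 n)"
  "outsH (ENm P S1 n)" "outsH (SKm S1 n)" "outsH (EN1m P S1 n)" "outsH (ZDm n)" "outsH (Dm n)" "outsH (Deadm n)"
  by (auto simp: fsimps)

lemma outs_EV: "(\<And>a R. P \<noteq> Out a R) \<Longrightarrow> outsH (EVm P S n)"
  by (auto simp: fsimps)

lemma trans_WL: "WLm j B n - {#Inp ''lambda'' PW RB#} + threads (subst RB PW R) = L1m j B n"
  by (simp add: sdefs unf add_mset_commute)
lemma trans_num0: "EVm (num 0) S n - {#Inp ''z'' PW (Out ''init'' Nil)#} + threads (subst (Out ''init'' Nil) PW R) = Zm S n"
  by (simp add: sdefs unf add_mset_commute)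
lemma trans_numS: "EVm (num (Suc g)) S n - {#Inp ''suc'' PW (num g)#} + threads (subst (num g) PW R) = EVm (num g) S n"
  by (simp add: sdefs unf add_mset_commute)
lemma trans_EN: "fvp P = {} \<Longrightarrow> ENm P S1 n - {#Inp ''enter'' PW (Inp ''c'' PW (Par P (Out ''c'' tr_empty)))#} + threads (subst (Inp ''c'' PW (Par P (Out ''c'' tr_empty))) PW R) = EN1m P S1 n"
  by (simp add: sdefs unf add_mset_commute)
lemma trans_SK: "SKm S1 n - {#Inp ''skip'' PW (Out ''init'' Nil)#} + threads (subst (Out ''init'' Nil) PW R) = Zm S1 n"
  by (simp add: sdefs unf add_mset_commute)
lemma trans_D: "Dm n - {#Inp ''done'' PW Nil#} + threads (subst Nil PW R) = Deadm n"
  by (simp add: sdefs unf add_mset_commute)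

lemma kam_det: "kam a b \<Longrightarrow> kam a c \<Longrightarrow> b = c"
  by (induction rule: kam.induct) (auto elim: kam.cases)

lemma kam_abs_nil_final: "\<not> kam (Abs t, []) c"
  by (auto elim: kam.cases)

lemma kam_fvar_final: "\<not> kam (FVar f, \<pi>) c"
  by (auto elim: kam.cases)

lemma kam_rtc_det: "kam\<^sup>*\<^sup>* a b \<Longrightarrow> kam\<^sup>*\<^sup>* a c \<Longrightarrow> kam\<^sup>*\<^sup>* b c \<or> kam\<^sup>*\<^sup>* c b"
proof (induction arbitrary: c rule: converse_rtranclp_induct)
  case base then show ?case by auto
next
  case (step a a1)
  note st = step
  from st(4) show ?case
  proof (cases rule: converse_rtranclpE)
    case base then show ?thesis using st(1,2) by (meson converse_rtranclp_into_rtranclp)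
  next
    case (step a2)
    then have "a2 = a1" using kam_det st(1) by blast
    then show ?thesis using st(3)[of c] step(2) by blast
  qed
qed

lemma kam_final: "kam\<^sup>*\<^sup>* a b \<Longrightarrow> kam\<^sup>*\<^sup>* a c \<Longrightarrow> (\<And>d. \<not> kam c d) \<Longrightarrow> kam\<^sup>*\<^sup>* b c"
  using kam_rtc_det by (metis converse_rtranclpE)

lemma fv_open: "fv (open_at k u t) \<subseteq> fv u \<union> fv t"
  by (induction t arbitrary: k) auto

lemma kam_fv: "kam (t, \<pi>) (t', \<pi>') \<Longrightarrow> fv t' \<union> \<Union>(fv ` set \<pi>') \<subseteq> fv t \<union> \<Union>(fv ` set \<pi>)"
  by (induction "(t, \<pi>)" "(t', \<pi>')" arbitrary: t \<pi> t' \<pi>' rule: kam.induct) (use fv_open in auto)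

lemma kams_fv: "kam\<^sup>*\<^sup>* c c' \<Longrightarrow> fv (fst c') \<union> \<Union>(fv ` set (snd c')) \<subseteq> fv (fst c) \<union> \<Union>(fv ` set (snd c))"
proof (induction rule: rtranclp_induct)
  case base then show ?case by simp
next
  case (step y z)
  have "fv (fst z) \<union> \<Union>(fv ` set (snd z)) \<subseteq> fv (fst y) \<union> \<Union>(fv ` set (snd y))"
    using kam_fv[of "fst y" "snd y" "fst z" "snd z"] step(2) by simp
  then show ?case using step(3) by (rule subset_trans)
qed

lemma kams_fv': "kam\<^sup>*\<^sup>* (t, \<pi>) (t', \<pi>') \<Longrightarrow> fv t' \<union> \<Union>(fv ` set \<pi>') \<subseteq> fv t \<union> \<Union>(fv ` set \<pi>)"
  using kams_fv[of "(t, \<pi>)" "(t', \<pi>')"] by simp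

definition swn :: "nat \<Rightarrow> nat \<Rightarrow> nat \<Rightarrow> nat" where
  "swn f g x = (if x = f then g else if x = g then f else x)"

fun sw :: "nat \<Rightarrow> nat \<Rightarrow> lterm \<Rightarrow> lterm" where
  "sw f g (FVar x) = FVar (swn f g x)"
| "sw f g (BVar i) = BVar i"
| "sw f g (Abs t) = Abs (sw f g t)"
| "sw f g (App t s) = App (sw f g t) (sw f g s)"

lemma swn_inv[simp]: "swn f g (swn f g x) = x" by (simp add: swn_def)
lemma sw_inv[simp]: "sw f g (sw f g t) = t" by (induction t) auto
lemma sw_open: "sw f g (open_at k u t) = open_at k (sw f g u) (sw f g t)" by (induction t arbitrary: k) auto
lemma fv_sw: "fv (sw f g t) = swn f g ` fv t" by (induction t) auto
lemma sw_id: "f \<notin> fv t \<Longrightarrow> g \<notin> fv t \<Longrightarrow> sw f g t = t" by (induction t) (auto simp: swn_def)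

lemma kam_sw: "kam (t, \<pi>) (t', \<pi>') \<Longrightarrow> kam (sw f g t, map (sw f g) \<pi>) (sw f g t', map (sw f g) \<pi>')"
  by (induction "(t, \<pi>)" "(t', \<pi>')" arbitrary: t \<pi> t' \<pi>' rule: kam.induct) (auto simp: sw_open intro: kam.intros)

lemma kams_sw: "kam\<^sup>*\<^sup>* c c' \<Longrightarrow> kam\<^sup>*\<^sup>* (sw f g (fst c), map (sw f g) (snd c)) (sw f g (fst c'), map (sw f g) (snd c'))"
proof (induction rule: rtranclp_induct)
  case base then show ?case by simp
next
  case (step y z)
  then show ?case using kam_sw[of "fst y" "snd y" "fst z" "snd z" f g]
    by (metis prod.collapse rtranclp.rtrancl_into_rtrancl)
qed

lemma kams_sw': "kam\<^sup>*\<^sup>* (t, \<pi>) (t', \<pi>') \<Longrightarrow> kam\<^sup>*\<^sup>* (sw f g t, map (sw f g) \<pi>) (sw f g t', map (sw f g) \<pi>')"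
  using kams_sw[of "(t, \<pi>)" "(t', \<pi>')"] by simp

lemma nf_bisim_le: "nf_bisim R \<Longrightarrow> R t s \<Longrightarrow> nf_equiv t s"
  unfolding nf_equiv_def by blast

lemma nf_equiv_sym: "nf_equiv t s \<Longrightarrow> nf_equiv s t"
proof -
  assume "nf_equiv t s"
  then obtain R where "nf_bisim R" "R t s" unfolding nf_equiv_def by blast
  moreover then have "symp R" unfolding nf_bisim_def by blast
  ultimately show ?thesis unfolding nf_equiv_def by (meson sympD)
qed

lemma nf_equiv_abs: "nf_equiv t s \<Longrightarrow> kam\<^sup>*\<^sup>* (t, []) (Abs t', []) \<Longrightarrow>
   \<exists>s'. kam\<^sup>*\<^sup>* (s, []) (Abs s', []) \<and> (\<exists>f. f \<notin> fv t' \<union> fv s' \<and> nf_equiv (open_at 0 (FVar f) t') (open_at 0 (FVar f) s'))"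
proof -
  assume a: "nf_equiv t s" "kam\<^sup>*\<^sup>* (t, []) (Abs t', [])"
  then obtain R where r: "nf_bisim R" "R t s" unfolding nf_equiv_def by blast
  then show ?thesis using a(2) nf_bisim_le[OF r(1)] unfolding nf_bisim_def by blast
qed

lemma nf_equiv_var: "nf_equiv t s \<Longrightarrow> kam\<^sup>*\<^sup>* (t, []) (FVar f, \<pi>) \<Longrightarrow>
   \<exists>\<pi>'. kam\<^sup>*\<^sup>* (s, []) (FVar f, \<pi>') \<and> list_all2 nf_equiv \<pi> \<pi>'"
proof -
  assume a: "nf_equiv t s" "kam\<^sup>*\<^sup>* (t, []) (FVar f, \<pi>)"
  then obtain R where r: "nf_bisim R" "R t s" unfolding nf_equiv_def by blast
  then obtain \<pi>' where "kam\<^sup>*\<^sup>* (s, []) (FVar f, \<pi>')" "list_all2 R \<pi> \<pi>'" using a(2) unfolding nf_bisim_def by blast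
  moreover then have "list_all2 nf_equiv \<pi> \<pi>'" using nf_bisim_le[OF r(1)] list_all2_mono by blast
  ultimately show ?thesis by blast
qed

lemma nf_equiv_sw: "nf_equiv t s \<Longrightarrow> nf_equiv (sw f g t) (sw f g s)"
proof -
  define R where "R a b \<longleftrightarrow> (\<exists>t s. nf_equiv t s \<and> a = sw f g t \<and> b = sw f g s)" for a b
  have "nf_bisim R"
    unfolding nf_bisim_def
  proof (intro conjI allI impI)
    show "symp R" unfolding R_def symp_def using nf_equiv_sym by blast
  next
    fix a b a' assume "R a b" "kam\<^sup>*\<^sup>* (a, []) (Abs a', [])"
    then obtain t s where ts: "nf_equiv t s" "a = sw f g t" "b = sw f g s" unfolding R_def by blast
    have "kam\<^sup>*\<^sup>* (t, []) (Abs (sw f g a'), [])" using kams_sw'[OF \<open>kam\<^sup>*\<^sup>* (a, []) (Abs a', [])\<close>, of f g] ts by simp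
    from nf_equiv_abs[OF ts(1) this] obtain s1 h where
      s1: "kam\<^sup>*\<^sup>* (s, []) (Abs s1, [])" "h \<notin> fv (sw f g a') \<union> fv s1"
      "nf_equiv (open_at 0 (FVar h) (sw f g a')) (open_at 0 (FVar h) s1)" by blast
    have "kam\<^sup>*\<^sup>* (b, []) (Abs (sw f g s1), [])" using kams_sw'[OF s1(1), of f g] ts by simp
    moreover have "swn f g h \<notin> fv a' \<union> fv (sw f g s1)" using s1(2) by (auto simp: fv_sw) (metis image_eqI swn_inv)+
    moreover have "R (open_at 0 (FVar (swn f g h)) a') (open_at 0 (FVar (swn f g h)) (sw f g s1))"
      unfolding R_def using s1(3) by (intro exI[of _ "open_at 0 (FVar h) (sw f g a')"] exI[of _ "open_at 0 (FVar h) s1"]) (simp add: sw_open)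
    ultimately show "\<exists>b'. kam\<^sup>*\<^sup>* (b, []) (Abs b', []) \<and> (\<exists>h. h \<notin> fv a' \<union> fv b' \<and> R (open_at 0 (FVar h) a') (open_at 0 (FVar h) b'))"
      by blast
  next
    fix a b x \<pi> assume "R a b" "kam\<^sup>*\<^sup>* (a, []) (FVar x, \<pi>)"
    then obtain t s where ts: "nf_equiv t s" "a = sw f g t" "b = sw f g s" unfolding R_def by blast
    have "kam\<^sup>*\<^sup>* (t, []) (FVar (swn f g x), map (sw f g) \<pi>)" using kams_sw'[OF \<open>kam\<^sup>*\<^sup>* (a, []) (FVar x, \<pi>)\<close>, of f g] ts by simp
    from nf_equiv_var[OF ts(1) this] obtain \<pi>' where p: "kam\<^sup>*\<^sup>* (s, []) (FVar (swn f g x), \<pi>')" "list_all2 nf_equiv (map (sw f g) \<pi>) \<pi>'"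
      by blast
    have "kam\<^sup>*\<^sup>* (b, []) (FVar x, map (sw f g) \<pi>')" using kams_sw'[OF p(1), of f g] ts by simp
    moreover have "list_all2 R \<pi> (map (sw f g) \<pi>')"
      using p(2) unfolding R_def list_all2_map1 list_all2_map2
      by (rule list_all2_mono) (metis sw_inv)
    ultimately show "\<exists>\<pi>'. kam\<^sup>*\<^sup>* (b, []) (FVar x, \<pi>') \<and> list_all2 R \<pi> \<pi>'" by blast
  qed
  moreover have "R (sw f g t) (sw f g s)" if "nf_equiv t s" unfolding R_def using that by blast
  ultimately show "nf_equiv t s \<Longrightarrow> nf_equiv (sw f g t) (sw f g s)" using nf_bisim_le by blast
qed

lemma nf_equiv_rename: "nf_equiv (open_at 0 (FVar f) t') (open_at 0 (FVar f) s') \<Longrightarrow> f \<notin> fv t' \<union> fv s' \<Longrightarrow>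
   g \<notin> fv t' \<union> fv s' \<Longrightarrow> nf_equiv (open_at 0 (FVar g) t') (open_at 0 (FVar g) s')"
  using nf_equiv_sw[of "open_at 0 (FVar f) t'" "open_at 0 (FVar f) s'" f g]
  by (simp add: sw_open sw_id swn_def)

lemma nf_equiv_abs_fresh: "nf_equiv t s \<Longrightarrow> kam\<^sup>*\<^sup>* (t, []) (Abs t', []) \<Longrightarrow> g \<notin> fv t \<Longrightarrow> g \<notin> fv s \<Longrightarrow>
   \<exists>s'. kam\<^sup>*\<^sup>* (s, []) (Abs s', []) \<and> nf_equiv (open_at 0 (FVar g) t') (open_at 0 (FVar g) s')"
proof -
  assume a: "nf_equiv t s" "kam\<^sup>*\<^sup>* (t, []) (Abs t', [])" "g \<notin> fv t" "g \<notin> fv s"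
  from nf_equiv_abs[OF a(1,2)] obtain s' f where s': "kam\<^sup>*\<^sup>* (s, []) (Abs s', [])" "f \<notin> fv t' \<union> fv s'"
    "nf_equiv (open_at 0 (FVar f) t') (open_at 0 (FVar f) s')" by blast
  have "fv t' \<subseteq> fv t" using kams_fv'[OF a(2)] by simp
  moreover have "fv s' \<subseteq> fv s" using kams_fv'[OF s'(1)] by simp
  ultimately have "g \<notin> fv t' \<union> fv s'" using a(3,4) by blast
  then show ?thesis using nf_equiv_rename[OF s'(3) s'(2)] s'(1) by blast
qed

abbreviation opn :: "nat \<Rightarrow> lterm \<Rightarrow> lterm" where "opn m t \<equiv> open_at 0 (FVar m) t"

definition evadm :: "lterm \<Rightarrow> lterm list \<Rightarrow> nat \<Rightarrow> proc multiset set" where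
  "evadm t \<pi> n = {EVm P S n | P S. corr [] P t \<and> scorr S \<pi>}
   \<union> {M. \<exists>t1 u \<pi>2 j B P2 S1. t = Abs t1 \<and> \<pi> = u # \<pi>2 \<and> corr [j] B t1 \<and> corr [] P2 u \<and> scorr S1 \<pi>2 \<and>
         (M = AS1m j B P2 S1 n \<or> M = AS2m (subst B (PL j) P2) S1 n)}
   \<union> {M. \<exists>t1 j B. t = Abs t1 \<and> \<pi> = [] \<and> corr [j] B t1 \<and> (M = AE1m j B n \<or> M = WLm j B n)}"

lemma evadm_EV: "corr [] P t \<Longrightarrow> scorr S \<pi> \<Longrightarrow> EVm P S n \<in> evadm t \<pi> n"
  unfolding evadm_def by blast
lemma evadm_AS1: "corr [j] B t1 \<Longrightarrow> corr [] P2 u \<Longrightarrow> scorr S1 \<pi>2 \<Longrightarrow> AS1m j B P2 S1 n \<in> evadm (Abs t1) (u # \<pi>2) n"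
  unfolding evadm_def by blast
lemma evadm_AS2: "corr [j] B t1 \<Longrightarrow> corr [] P2 u \<Longrightarrow> scorr S1 \<pi>2 \<Longrightarrow> AS2m (subst B (PL j) P2) S1 n \<in> evadm (Abs t1) (u # \<pi>2) n"
  unfolding evadm_def by blast
lemma evadm_AE1: "corr [j] B t1 \<Longrightarrow> AE1m j B n \<in> evadm (Abs t1) [] n"
  unfolding evadm_def by blast
lemma evadm_WL: "corr [j] B t1 \<Longrightarrow> WLm j B n \<in> evadm (Abs t1) [] n"
  unfolding evadm_def by blast

lemmas corr_inv0 = corr_inv[OF _ refl]

lemma corr_abs_B: "corr [j] B t \<Longrightarrow> PP \<notin> fvp B"
  using corr_fvp by fastforce

lemma corr_facts: "corr [] P t \<Longrightarrow> fvp P = {} \<and> threads P = {#P#}"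
  using corr_closed corr_threads by blast

lemma evadm_step: "M \<in> evadm t1 \<pi>1 n \<Longrightarrow> mtau M M' \<Longrightarrow>
   M' \<in> evadm t1 \<pi>1 n \<or> (\<exists>t2 \<pi>2. kam (t1, \<pi>1) (t2, \<pi>2) \<and> M' \<in> evadm t2 \<pi>2 n)"
proof -
  assume M: "M \<in> evadm t1 \<pi>1 n" and st: "mtau M M'"
  from M[unfolded evadm_def] show ?thesis
  proof (elim UnE CollectE exE conjE disjE)
    fix P S assume e: "M = EVm P S n" "corr [] P t1" "scorr S \<pi>1"
    from corr_inv0[OF e(2)] show ?thesis
    proof (elim disjE exE conjE)
      fix f assume "t1 = FVar f" "P = num f"
      then show ?thesis using st e EV_num by auto
    next
      fix ta tb P1 P2 assume a: "t1 = App ta tb" "P = appt P1 P2" "corr [] P1 ta" "corr [] P2 tb"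
      have "M' = EVm P1 (Par (Out ''hd'' P2) (Out ''c'' S)) n"
        using st e a EV_app corr_facts[OF a(3)] corr_facts[OF a(4)] scorr_closed[OF e(3)] by auto
      moreover have "kam (t1, \<pi>1) (ta, tb # \<pi>1)" using a by (auto intro: kam.push)
      moreover have "scorr (Par (Out ''hd'' P2) (Out ''c'' S)) (tb # \<pi>1)" using a e by (auto intro: scorr.scons)
      ultimately show ?thesis using evadm_EV[OF a(3)] by blast
    next
      fix ta j B assume a: "t1 = Abs ta" "P = abst j B" "corr [j] B ta"
      from e(3) show ?thesis
      proof (cases rule: scorr.cases)
        case snil
        then have "M' = AE1m j B n" using st e a EV_abs_nil corr_abs_B by auto
        then show ?thesis using a snil evadm_AE1 by blast
      next
        case (scons P2 u S1 \<pi>2)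
        then have "M' = AS1m j B P2 S1 n" using st e a EV_abs_cons corr_abs_B by auto
        then show ?thesis using a scons evadm_AS1 by blast
      qed
    qed
  next
    fix ta u \<pi>2 j B P2 S1 assume a: "t1 = Abs ta" "\<pi>1 = u # \<pi>2" "corr [j] B ta" "corr [] P2 u" "scorr S1 \<pi>2"
      "M = AS1m j B P2 S1 n"
    then have "M' = AS2m (subst B (PL j) P2) S1 n" using st AS1_step by auto
    then show ?thesis using a evadm_AS2 by blast
  next
    fix ta u \<pi>2 j B P2 S1 assume a: "t1 = Abs ta" "\<pi>1 = u # \<pi>2" "corr [j] B ta" "corr [] P2 u" "scorr S1 \<pi>2"
      "M = AS2m (subst B (PL j) P2) S1 n"
    have c: "corr [] (subst B (PL j) P2) (open_at 0 u ta)" using corr_subst0 a by blast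
    then have "M' = EVm (subst B (PL j) P2) S1 n" using st a AS2_step corr_facts[OF c] by auto
    moreover have "kam (t1, \<pi>1) (open_at 0 u ta, \<pi>2)" using a by (auto intro: kam.grab)
    ultimately show ?thesis using a c evadm_EV by blast
  next
    fix ta j B assume a: "t1 = Abs ta" "\<pi>1 = []" "corr [j] B ta" "M = AE1m j B n"
    then have "M' = WLm j B n" using st AE1_step by auto
    then show ?thesis using a evadm_WL by blast
  next
    fix ta j B assume a: "t1 = Abs ta" "\<pi>1 = []" "corr [j] B ta" "M = WLm j B n"
    then show ?thesis using st WL_step by auto
  qed
qed

lemma evadm_progress: "M \<in> evadm t1 \<pi>1 n \<Longrightarrow> kam (t1, \<pi>1) (t2, \<pi>2) \<Longrightarrow> \<exists>M2 \<in> evadm t2 \<pi>2 n. mtau\<^sup>*\<^sup>* M M2"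
proof -
  assume M: "M \<in> evadm t1 \<pi>1 n" and k: "kam (t1, \<pi>1) (t2, \<pi>2)"
  from M[unfolded evadm_def] show ?thesis
  proof (elim UnE CollectE exE conjE disjE)
    fix P S assume e: "M = EVm P S n" "corr [] P t1" "scorr S \<pi>1"
    from corr_inv0[OF e(2)] show ?thesis
    proof (elim disjE exE conjE)
      fix f assume "t1 = FVar f" "P = num f"
      then show ?thesis using k kam_fvar_final by blast
    next
      fix ta tb P1 P2 assume a: "t1 = App ta tb" "P = appt P1 P2" "corr [] P1 ta" "corr [] P2 tb"
      have "mtau M (EVm P1 (Par (Out ''hd'' P2) (Out ''c'' S)) n)"
        using e a EV_app corr_facts[OF a(3)] corr_facts[OF a(4)] scorr_closed[OF e(3)] by auto
      moreover have "kam (t1, \<pi>1) (ta, tb # \<pi>1)" using a by (auto intro: kam.push)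
      then have "(t2, \<pi>2) = (ta, tb # \<pi>1)" using k kam_det by blast
      moreover have "scorr (Par (Out ''hd'' P2) (Out ''c'' S)) (tb # \<pi>1)" using a e by (auto intro: scorr.scons)
      ultimately show ?thesis using evadm_EV[OF a(3)] by blast
    next
      fix ta j B assume a: "t1 = Abs ta" "P = abst j B" "corr [j] B ta"
      from e(3) show ?thesis
      proof (cases rule: scorr.cases)
        case snil
        then show ?thesis using k a kam_abs_nil_final by blast
      next
        case (scons P2 u S1 \<pi>3)
        have c: "corr [] (subst B (PL j) P2) (open_at 0 u ta)" using corr_subst0 a scons by blast
        have "mtau M (AS1m j B P2 S1 n)" using e a scons EV_abs_cons corr_abs_B by auto
        moreover have "mtau (AS1m j B P2 S1 n) (AS2m (subst B (PL j) P2) S1 n)" using AS1_step by auto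
        moreover have "mtau (AS2m (subst B (PL j) P2) S1 n) (EVm (subst B (PL j) P2) S1 n)"
          using AS2_step corr_facts[OF c] by auto
        moreover have "kam (t1, \<pi>1) (open_at 0 u ta, \<pi>3)" using a scons by (auto intro: kam.grab)
        then have "(t2, \<pi>2) = (open_at 0 u ta, \<pi>3)" using k kam_det by blast
        ultimately show ?thesis using evadm_EV[OF c scons(4)]
          by (metis (no_types, lifting) Pair_inject converse_rtranclp_into_rtranclp rtranclp.rtrancl_refl)
      qed
    qed
  next
    fix ta u \<pi>3 j B P2 S1 assume a: "t1 = Abs ta" "\<pi>1 = u # \<pi>3" "corr [j] B ta" "corr [] P2 u" "scorr S1 \<pi>3"
      "M = AS1m j B P2 S1 n"
    have c: "corr [] (subst B (PL j) P2) (open_at 0 u ta)" using corr_subst0 a by blast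
    have "mtau M (AS2m (subst B (PL j) P2) S1 n)" using a AS1_step by auto
    moreover have "mtau (AS2m (subst B (PL j) P2) S1 n) (EVm (subst B (PL j) P2) S1 n)"
      using AS2_step corr_facts[OF c] by auto
    moreover have "kam (t1, \<pi>1) (open_at 0 u ta, \<pi>3)" using a by (auto intro: kam.grab)
    then have "(t2, \<pi>2) = (open_at 0 u ta, \<pi>3)" using k kam_det by blast
    ultimately show ?thesis using evadm_EV[OF c a(5)]
      by (metis (no_types, lifting) Pair_inject converse_rtranclp_into_rtranclp rtranclp.rtrancl_refl)
  next
    fix ta u \<pi>3 j B P2 S1 assume a: "t1 = Abs ta" "\<pi>1 = u # \<pi>3" "corr [j] B ta" "corr [] P2 u" "scorr S1 \<pi>3"
      "M = AS2m (subst B (PL j) P2) S1 n"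
    have c: "corr [] (subst B (PL j) P2) (open_at 0 u ta)" using corr_subst0 a by blast
    have "mtau M (EVm (subst B (PL j) P2) S1 n)" using a AS2_step corr_facts[OF c] by auto
    moreover have "kam (t1, \<pi>1) (open_at 0 u ta, \<pi>3)" using a by (auto intro: kam.grab)
    then have "(t2, \<pi>2) = (open_at 0 u ta, \<pi>3)" using k kam_det by blast
    ultimately show ?thesis using evadm_EV[OF c a(5)] by blast
  next
    fix ta j B assume a: "t1 = Abs ta" "\<pi>1 = []" "corr [j] B ta" "M = AE1m j B n"
    then show ?thesis using k kam_abs_nil_final by blast
  next
    fix ta j B assume a: "t1 = Abs ta" "\<pi>1 = []" "corr [j] B ta" "M = WLm j B n"
    then show ?thesis using k kam_abs_nil_final by blast
  qed
qed

definition evreg :: "lterm \<Rightarrow> nat \<Rightarrow> proc multiset set" where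
  "evreg t n = {M. \<exists>t1 \<pi>1. kam\<^sup>*\<^sup>* (t, []) (t1, \<pi>1) \<and> M \<in> evadm t1 \<pi>1 n}"

lemma evreg_step: "M \<in> evreg t n \<Longrightarrow> mtau M M' \<Longrightarrow> M' \<in> evreg t n"
proof -
  assume "M \<in> evreg t n" "mtau M M'"
  then obtain t1 \<pi>1 where a: "kam\<^sup>*\<^sup>* (t, []) (t1, \<pi>1)" "M \<in> evadm t1 \<pi>1 n" unfolding evreg_def by blast
  from evadm_step[OF a(2) \<open>mtau M M'\<close>] show ?thesis
  proof
    assume "M' \<in> evadm t1 \<pi>1 n" then show ?thesis using a unfolding evreg_def by blast
  next
    assume "\<exists>t2 \<pi>2. kam (t1, \<pi>1) (t2, \<pi>2) \<and> M' \<in> evadm t2 \<pi>2 n"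
    then obtain t2 \<pi>2 where "kam (t1, \<pi>1) (t2, \<pi>2)" "M' \<in> evadm t2 \<pi>2 n" by blast
    moreover have "kam\<^sup>*\<^sup>* (t, []) (t2, \<pi>2)" using a(1) \<open>kam (t1, \<pi>1) (t2, \<pi>2)\<close> by (rule rtranclp.rtrancl_into_rtrancl)
    ultimately show ?thesis unfolding evreg_def by blast
  qed
qed

lemma evreg_steps: "mtau\<^sup>*\<^sup>* M M' \<Longrightarrow> M \<in> evreg t n \<Longrightarrow> M' \<in> evreg t n"
  by (induction rule: rtranclp_induct) (auto intro: evreg_step)

lemma evadm_kams: "kam\<^sup>*\<^sup>* c1 c2 \<Longrightarrow> M \<in> evadm (fst c1) (snd c1) n \<Longrightarrow> \<exists>M2 \<in> evadm (fst c2) (snd c2) n. mtau\<^sup>*\<^sup>* M M2"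
proof (induction arbitrary: M rule: converse_rtranclp_induct)
  case base then show ?case by blast
next
  case (step c1 c1')
  obtain M1 where "M1 \<in> evadm (fst c1') (snd c1') n" "mtau\<^sup>*\<^sup>* M M1"
    using evadm_progress[OF step(4), of "fst c1'" "snd c1'"] step(1) by auto
  then show ?case using step(3)[OF \<open>M1 \<in> _\<close>] by (meson rtranclp_trans)
qed

lemma evreg_to_abs: "M \<in> evreg t n \<Longrightarrow> kam\<^sup>*\<^sup>* (t, []) (Abs t', []) \<Longrightarrow> \<exists>j B. corr [j] B t' \<and> mtau\<^sup>*\<^sup>* M (WLm j B n)"
proof -
  assume "M \<in> evreg t n" "kam\<^sup>*\<^sup>* (t, []) (Abs t', [])"
  then obtain t1 \<pi>1 where a: "kam\<^sup>*\<^sup>* (t, []) (t1, \<pi>1)" "M \<in> evadm t1 \<pi>1 n" unfolding evreg_def by blast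
  have "kam\<^sup>*\<^sup>* (t1, \<pi>1) (Abs t', [])" using kam_final[OF a(1) \<open>kam\<^sup>*\<^sup>* (t, []) (Abs t', [])\<close>] kam_abs_nil_final by blast
  from evadm_kams[OF this] a(2) obtain M2 where m2: "M2 \<in> evadm (Abs t') [] n" "mtau\<^sup>*\<^sup>* M M2" by auto
  from m2(1)[unfolded evadm_def] show ?thesis
  proof (elim UnE CollectE exE conjE disjE)
    fix P S assume e: "M2 = EVm P S n" "corr [] P (Abs t')" "scorr S []"
    then have "S = tr_empty" by (auto elim: scorr.cases)
    from corr_inv0[OF e(2)] obtain j B where jb: "P = abst j B" "corr [j] B t'" by auto
    have "mtau M2 (AE1m j B n)" using e jb \<open>S = tr_empty\<close> EV_abs_nil corr_abs_B by auto
    moreover have "mtau (AE1m j B n) (WLm j B n)" using AE1_step by auto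
    ultimately show ?thesis using m2(2) jb(2)
      by (meson rtranclp.rtrancl_into_rtrancl)
  next
    fix t1 j B assume "Abs t' = Abs t1" "[] = []" "corr [j] B t1" "M2 = AE1m j B n"
    moreover have "mtau (AE1m j B n) (WLm j B n)" using AE1_step by auto
    ultimately show ?thesis using m2(2) by (metis rtranclp.rtrancl_into_rtrancl lterm.inject)
  next
    fix t1 j B assume "Abs t' = Abs t1" "[] = []" "corr [j] B t1" "M2 = WLm j B n"
    then show ?thesis using m2(2) by auto
  qed (auto)
qed

lemma evreg_to_var: "M \<in> evreg t n \<Longrightarrow> kam\<^sup>*\<^sup>* (t, []) (FVar f, \<pi>) \<Longrightarrow> \<exists>S. scorr S \<pi> \<and> mtau\<^sup>*\<^sup>* M (EVm (num f) S n)"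
proof -
  assume "M \<in> evreg t n" "kam\<^sup>*\<^sup>* (t, []) (FVar f, \<pi>)"
  then obtain t1 \<pi>1 where a: "kam\<^sup>*\<^sup>* (t, []) (t1, \<pi>1)" "M \<in> evadm t1 \<pi>1 n" unfolding evreg_def by blast
  have "kam\<^sup>*\<^sup>* (t1, \<pi>1) (FVar f, \<pi>)" using kam_final[OF a(1) \<open>kam\<^sup>*\<^sup>* (t, []) (FVar f, \<pi>)\<close>] kam_fvar_final by blast
  from evadm_kams[OF this] a(2) obtain M2 where m2: "M2 \<in> evadm (FVar f) \<pi> n" "mtau\<^sup>*\<^sup>* M M2" by auto
  from m2(1)[unfolded evadm_def] show ?thesis
  proof (elim UnE CollectE exE conjE disjE)
    fix P S assume e: "M2 = EVm P S n" "corr [] P (FVar f)" "scorr S \<pi>"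
    from corr_inv0[OF e(2)] have "P = num f" by auto
    then show ?thesis using e m2(2) by blast
  qed auto
qed

lemma outsH_mbarb: "outsH M \<Longrightarrow> mbarb H M \<mu> \<longleftrightarrow> (\<exists>a x Q. \<mu> = BIn a \<and> (a, x, Q) \<in> flags M)"
  by (cases \<mu>) (auto simp: outsH_def flags_def)

lemma flags_inp: "(a, x, Q) \<in> flags M \<longleftrightarrow> Inp a x Q \<in># M \<and> a \<notin> H"
  by (simp add: flags_def)

lemma corr_not_out: "corr [] P t \<Longrightarrow> P \<noteq> Out a R"
  using corr_inv0[of P t] by (auto simp: appt_def abst_def) (metis num.elims proc.distinct(1))

lemma evadm_outs: "M \<in> evadm t \<pi> n \<Longrightarrow> outsH M"
proof -
  assume "M \<in> evadm t \<pi> n"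
  from this[unfolded evadm_def] show ?thesis
    by (elim UnE CollectE exE conjE disjE) (simp_all add: outs_all outs_EV corr_not_out)
qed

lemma evreg_outs: "M \<in> evreg t n \<Longrightarrow> outsH M"
  unfolding evreg_def using evadm_outs by blast

lemma evreg_flags: "M \<in> evreg t n \<Longrightarrow> fl \<in> flags M \<Longrightarrow>
   (\<exists>t' j B. kam\<^sup>*\<^sup>* (t, []) (Abs t', []) \<and> corr [j] B t' \<and> M = WLm j B n \<and> fl = (''lambda'', PW, RB)) \<or>
   (\<exists>f \<pi> S. kam\<^sup>*\<^sup>* (t, []) (FVar f, \<pi>) \<and> scorr S \<pi> \<and> M = EVm (num f) S n)"
proof -
  assume "M \<in> evreg t n" "fl \<in> flags M"
  then obtain t1 \<pi>1 where a: "kam\<^sup>*\<^sup>* (t, []) (t1, \<pi>1)" "M \<in> evadm t1 \<pi>1 n" unfolding evreg_def by blast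
  from a(2)[unfolded evadm_def] show ?thesis
  proof (elim UnE CollectE exE conjE disjE)
    fix P S assume e: "M = EVm P S n" "corr [] P t1" "scorr S \<pi>1"
    from corr_inv0[OF e(2)] show ?thesis
    proof (elim disjE exE conjE)
      fix f assume "t1 = FVar f" "P = num f"
      then show ?thesis using e a by blast
    qed (use e \<open>fl \<in> flags M\<close> flags_none in auto)
  next
    fix ta j B assume "t1 = Abs ta" "\<pi>1 = []" "corr [j] B ta" "M = WLm j B n"
    then show ?thesis using a \<open>fl \<in> flags M\<close> flags_WL by auto
  qed (use \<open>fl \<in> flags M\<close> flags_none in auto)
qed

definition evpre :: "lterm \<Rightarrow> nat \<Rightarrow> proc multiset set" where
  "evpre t n = {EN1m P S1 n | P S1. corr [] P t \<and> (\<exists>\<pi>. scorr S1 \<pi>)}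
    \<union> {M. \<exists>m t' j B. n = Suc m \<and> t = opn m t' \<and> corr [j] B t' \<and>
          (M = L1m j B m \<or> M = L2m j B m \<or> M = L3m (subst B (PL j) (num m)) m)}"

definition evx :: "lterm \<Rightarrow> nat \<Rightarrow> proc multiset set" where
  "evx t n = evpre t n \<union> evreg t n"

lemma evreg_EV: "corr [] P t \<Longrightarrow> EVm P tr_empty n \<in> evreg t n"
  unfolding evreg_def using evadm_EV scorr.snil by blast

lemma corr_num: "corr e (num m) (FVar m)" by (rule corr.cnum)

lemma evpre_step: "M \<in> evpre t n \<Longrightarrow> mtau M M' \<Longrightarrow> M' \<in> evx t n"
proof -
  assume M: "M \<in> evpre t n" and st: "mtau M M'"
  from M[unfolded evpre_def] show ?thesis
  proof (elim UnE CollectE exE conjE disjE)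
    fix P S1 \<pi> assume a: "M = EN1m P S1 n" "corr [] P t" "scorr S1 \<pi>"
    then have "M' = EVm P tr_empty n" using st EN1_step corr_facts by auto
    then show ?thesis unfolding evx_def using evreg_EV a by blast
  next
    fix m t' j B assume a: "n = Suc m" "t = opn m t'" "corr [j] B t'" "M = L1m j B m"
    then have "M' = L2m j B m" using st L1_step by auto
    then show ?thesis unfolding evx_def evpre_def using a by blast
  next
    fix m t' j B assume a: "n = Suc m" "t = opn m t'" "corr [j] B t'" "M = L2m j B m"
    then have "M' = L3m (subst B (PL j) (num m)) m" using st L2_step by auto
    then show ?thesis unfolding evx_def evpre_def using a by blast
  next
    fix m t' j B assume a: "n = Suc m" "t = opn m t'" "corr [j] B t'" "M = L3m (subst B (PL j) (num m)) m"
    have c: "corr [] (subst B (PL j) (num m)) t" using corr_subst0[OF a(3) corr_num] a(2) by simp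
    then have "M' = EVm (subst B (PL j) (num m)) tr_empty n" using st a L3_step corr_facts by auto
    then show ?thesis unfolding evx_def using evreg_EV c by blast
  qed
qed

lemma evpre_progress: "M \<in> evpre t n \<Longrightarrow> \<exists>P. corr [] P t \<and> mtau\<^sup>*\<^sup>* M (EVm P tr_empty n)"
proof -
  assume M: "M \<in> evpre t n"
  from M[unfolded evpre_def] show ?thesis
  proof (elim UnE CollectE exE conjE disjE)
    fix P S1 \<pi> assume a: "M = EN1m P S1 n" "corr [] P t" "scorr S1 \<pi>"
    then have "mtau M (EVm P tr_empty n)" using EN1_step corr_facts by auto
    then show ?thesis using a by blast
  next
    fix m t' j B assume a: "n = Suc m" "t = opn m t'"  "corr [j] B t'"
    have c: "corr [] (subst B (PL j) (num m)) t" using corr_subst0[OF a(3) corr_num] a(2) by simp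
    have s3: "mtau (L3m (subst B (PL j) (num m)) m) (EVm (subst B (PL j) (num m)) tr_empty n)"
      using a L3_step corr_facts[OF c] by auto
    have s2: "mtau (L2m j B m) (L3m (subst B (PL j) (num m)) m)" using L2_step by auto
    have s1: "mtau (L1m j B m) (L2m j B m)" using L1_step by auto
    {
      assume "M = L1m j B m"
      then show ?thesis using s1 s2 s3 c by (meson converse_rtranclp_into_rtranclp rtranclp.rtrancl_refl)
    next
      assume "M = L2m j B m"
      then show ?thesis using s2 s3 c by (meson converse_rtranclp_into_rtranclp rtranclp.rtrancl_refl)
    next
      assume "M = L3m (subst B (PL j) (num m)) m"
      then show ?thesis using s3 c by (meson converse_rtranclp_into_rtranclp rtranclp.rtrancl_refl)
    }
  qed
qed

lemma evpre_flags: "M \<in> evpre t n \<Longrightarrow> flags M = {}"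
  unfolding evpre_def using flags_none by auto

lemma evpre_outs: "M \<in> evpre t n \<Longrightarrow> outsH M"
  unfolding evpre_def using outs_all by auto

lemma evx_step: "M \<in> evx t n \<Longrightarrow> mtau M M' \<Longrightarrow> M' \<in> evx t n"
proof -
  assume a: "M \<in> evx t n" "mtau M M'"
  show ?thesis
  proof (cases "M \<in> evpre t n")
    case True then show ?thesis using evpre_step a(2) by blast
  next
    case False then have "M \<in> evreg t n" using a(1) unfolding evx_def by blast
    then show ?thesis using evreg_step[OF _ a(2)] unfolding evx_def by blast
  qed
qed

lemma evx_evreg: "M \<in> evx t n \<Longrightarrow> \<exists>M'. mtau\<^sup>*\<^sup>* M M' \<and> M' \<in> evreg t n"
proof -
  assume a: "M \<in> evx t n"
  show ?thesis
  proof (cases "M \<in> evpre t n")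
    case True
    then obtain P where "corr [] P t" "mtau\<^sup>*\<^sup>* M (EVm P tr_empty n)" using evpre_progress by blast
    then show ?thesis using evreg_EV by blast
  next
    case False then show ?thesis using a unfolding evx_def by blast
  qed
qed

lemma evx_to_abs: "M \<in> evx t n \<Longrightarrow> kam\<^sup>*\<^sup>* (t, []) (Abs t', []) \<Longrightarrow> \<exists>j B. corr [j] B t' \<and> mtau\<^sup>*\<^sup>* M (WLm j B n)"
proof -
  assume a: "M \<in> evx t n" "kam\<^sup>*\<^sup>* (t, []) (Abs t', [])"
  obtain M1 where m1: "mtau\<^sup>*\<^sup>* M M1" "M1 \<in> evreg t n" using evx_evreg[OF a(1)] by blast
  obtain j B where "corr [j] B t'" "mtau\<^sup>*\<^sup>* M1 (WLm j B n)" using evreg_to_abs[OF m1(2) a(2)] by blast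
  then show ?thesis using rtranclp_trans[OF m1(1)] by blast
qed

lemma evx_to_var: "M \<in> evx t n \<Longrightarrow> kam\<^sup>*\<^sup>* (t, []) (FVar f, \<pi>) \<Longrightarrow> \<exists>S. scorr S \<pi> \<and> mtau\<^sup>*\<^sup>* M (EVm (num f) S n)"
proof -
  assume a: "M \<in> evx t n" "kam\<^sup>*\<^sup>* (t, []) (FVar f, \<pi>)"
  obtain M1 where m1: "mtau\<^sup>*\<^sup>* M M1" "M1 \<in> evreg t n" using evx_evreg[OF a(1)] by blast
  obtain S where "scorr S \<pi>" "mtau\<^sup>*\<^sup>* M1 (EVm (num f) S n)" using evreg_to_var[OF m1(2) a(2)] by blast
  then show ?thesis using rtranclp_trans[OF m1(1)] by blast
qed

lemma evx_outs: "M \<in> evx t n \<Longrightarrow> outsH M"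
  unfolding evx_def using evpre_outs[of M t n] evreg_outs[of M t n] by blast

lemma evx_flags: "M \<in> evx t n \<Longrightarrow> fl \<in> flags M \<Longrightarrow>
   (\<exists>t' j B. kam\<^sup>*\<^sup>* (t, []) (Abs t', []) \<and> corr [j] B t' \<and> M = WLm j B n \<and> fl = (''lambda'', PW, RB)) \<or>
   (\<exists>f \<pi> S. kam\<^sup>*\<^sup>* (t, []) (FVar f, \<pi>) \<and> scorr S \<pi> \<and> M = EVm (num f) S n)"
proof -
  assume a: "M \<in> evx t n" "fl \<in> flags M"
  then have "M \<in> evreg t n" unfolding evx_def using evpre_flags[of M t n] by auto
  then show ?thesis using evreg_flags[OF _ a(2)] by blast
qed

definition zreg :: "lterm list \<Rightarrow> nat \<Rightarrow> proc multiset set" where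
  "zreg \<pi> n = {M. \<exists>S. scorr S \<pi> \<and> (M = Zm S n \<or> M = Z1m S n \<or> M = Z2m S n)}
    \<union> {M. \<exists>u \<pi>' P S1. \<pi> = u # \<pi>' \<and> corr [] P u \<and> scorr S1 \<pi>' \<and> (M = Z3m P S1 n \<or> M = Z4m P S1 n \<or> M = CPm P S1 n)}
    \<union> {M. \<pi> = [] \<and> (M = ZDm n \<or> M = Dm n)}"

definition cereg :: "lterm \<Rightarrow> lterm list \<Rightarrow> nat \<Rightarrow> proc multiset set" where
  "cereg u \<pi> n = {M. \<exists>P S1. corr [] P u \<and> scorr S1 \<pi> \<and> (M = CEm P S1 n \<or> M = ENm P S1 n)}"

definition csreg :: "lterm list \<Rightarrow> nat \<Rightarrow> proc multiset set" where
  "csreg \<pi> n = {M. \<exists>P u S1. corr [] P u \<and> scorr S1 \<pi> \<and> (M = CSm P S1 n \<or> M = SKm S1 n)}"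

definition nreg :: "nat \<Rightarrow> lterm list \<Rightarrow> nat \<Rightarrow> proc multiset set" where
  "nreg f \<pi> n = {EVm (num f) S n | S. scorr S \<pi>}"

lemma zreg_Z: "scorr S \<pi> \<Longrightarrow> Zm S n \<in> zreg \<pi> n"
  unfolding zreg_def by blast

lemma zreg_step: "M \<in> zreg \<pi> n \<Longrightarrow> mtau M M' \<Longrightarrow> M' \<in> zreg \<pi> n \<or>
   (\<exists>u \<pi>' P S1. \<pi> = u # \<pi>' \<and> corr [] P u \<and> scorr S1 \<pi>' \<and> M = CPm P S1 n \<and> (M' = CEm P S1 n \<or> M' = CSm P S1 n))"
proof -
  assume M: "M \<in> zreg \<pi> n" and st: "mtau M M'"
  from M[unfolded zreg_def] show ?thesis
  proof (elim UnE CollectE exE conjE disjE)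
    fix S assume "scorr S \<pi>" "M = Zm S n"
    then show ?thesis using st Z_step unfolding zreg_def by auto
  next
    fix S assume "scorr S \<pi>" "M = Z1m S n"
    then show ?thesis using st Z1_step unfolding zreg_def by auto
  next
    fix S assume a: "scorr S \<pi>" "M = Z2m S n"
    from a(1) show ?thesis
    proof (cases rule: scorr.cases)
      case snil then show ?thesis using st a Z2_nil unfolding zreg_def by auto
    next
      case (scons P u S1 \<pi>')
      then show ?thesis using st a Z2_cons unfolding zreg_def by auto
    qed
  next
    fix u \<pi>' P S1 assume "\<pi> = u # \<pi>'" "corr [] P u" "scorr S1 \<pi>'" "M = Z3m P S1 n"
    then show ?thesis using st Z3_step unfolding zreg_def by auto
  next
    fix u \<pi>' P S1 assume "\<pi> = u # \<pi>'" "corr [] P u" "scorr S1 \<pi>'" "M = Z4m P S1 n"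
    then show ?thesis using st Z4_step unfolding zreg_def by auto
  next
    fix u \<pi>' P S1 assume "\<pi> = u # \<pi>'" "corr [] P u" "scorr S1 \<pi>'" "M = CPm P S1 n"
    then show ?thesis using st CP_step by blast
  next
    assume "\<pi> = []" "M = ZDm n"
    then show ?thesis using st ZD_step unfolding zreg_def by auto
  next
    assume "\<pi> = []" "M = Dm n"
    then show ?thesis using st D_step by auto
  qed
qed

lemma r1: "mtau a b \<Longrightarrow> mtau\<^sup>*\<^sup>* b c \<Longrightarrow> mtau\<^sup>*\<^sup>* a c" by (rule converse_rtranclp_into_rtranclp)
lemma r0: "mtau a b \<Longrightarrow> mtau\<^sup>*\<^sup>* a b" by (rule r1[OF _ rtranclp.rtrancl_refl])
lemmas Z_to = Z_step[THEN iffD2, OF refl]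
lemmas Z1_to = Z1_step[THEN iffD2, OF refl]
lemmas Z2_cons_to = Z2_cons[THEN iffD2, OF refl]
lemmas Z2_nil_to = Z2_nil[THEN iffD2, OF refl]
lemmas Z3_to = Z3_step[THEN iffD2, OF refl]
lemmas Z4_to = Z4_step[THEN iffD2, OF refl]
lemmas ZD_to = ZD_step[THEN iffD2, OF refl]
lemmas CE_to = CE_step[THEN iffD2, OF refl]
lemmas CS_to = CS_step[THEN iffD2, OF refl]
lemma CP_toE: "mtau (CPm P S1 n) (CEm P S1 n)" by (simp add: CP_step)
lemma CP_toS: "mtau (CPm P S1 n) (CSm P S1 n)" by (simp add: CP_step)

lemma zreg_to_CP: "M \<in> zreg (u # \<pi>') n \<Longrightarrow> \<exists>P S1. corr [] P u \<and> scorr S1 \<pi>' \<and> mtau\<^sup>*\<^sup>* M (CPm P S1 n)"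
proof -
  assume M: "M \<in> zreg (u # \<pi>') n"
  have fromZ3: "mtau\<^sup>*\<^sup>* (Z3m P S1 n) (CPm P S1 n)" for P S1
    by (rule r1[OF Z3_to r0[OF Z4_to]])
  have fromZ2: "\<exists>P S1. corr [] P u \<and> scorr S1 \<pi>' \<and> mtau\<^sup>*\<^sup>* (Z2m S n) (CPm P S1 n)" if "scorr S (u # \<pi>')" for S
  proof -
    from that obtain P S1 where "S = Par (Out ''hd'' P) (Out ''c'' S1)" "corr [] P u" "scorr S1 \<pi>'"
      by (cases rule: scorr.cases) auto
    then show ?thesis using r1[OF Z2_cons_to fromZ3] by blast
  qed
  from M[unfolded zreg_def] show ?thesis
  proof (elim UnE CollectE exE conjE disjE)
    fix S assume "scorr S (u # \<pi>')" "M = Zm S n"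
    then show ?thesis using fromZ2 r1[OF Z_to r1[OF Z1_to]] by metis
  next
    fix S assume "scorr S (u # \<pi>')" "M = Z1m S n"
    then show ?thesis using fromZ2 r1[OF Z1_to] by metis
  next
    fix S assume "scorr S (u # \<pi>')" "M = Z2m S n"
    then show ?thesis using fromZ2 by metis
  next
    fix u1 \<pi>1 P S1 assume "u # \<pi>' = u1 # \<pi>1" "corr [] P u1" "scorr S1 \<pi>1" "M = Z3m P S1 n"
    then show ?thesis using fromZ3 by blast
  next
    fix u1 \<pi>1 P S1 assume "u # \<pi>' = u1 # \<pi>1" "corr [] P u1" "scorr S1 \<pi>1" "M = Z4m P S1 n"
    then show ?thesis using r0[OF Z4_to] by blast
  next
    fix u1 \<pi>1 P S1 assume "u # \<pi>' = u1 # \<pi>1" "corr [] P u1" "scorr S1 \<pi>1" "M = CPm P S1 n"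
    then show ?thesis by blast
  qed auto
qed

lemma zreg_to_D: "M \<in> zreg [] n \<Longrightarrow> mtau\<^sup>*\<^sup>* M (Dm n)"
proof -
  assume M: "M \<in> zreg [] n"
  have fromZ2: "mtau\<^sup>*\<^sup>* (Z2m S n) (Dm n)" if "scorr S []" for S
  proof -
    have "S = tr_empty" using that by (auto elim: scorr.cases)
    then show ?thesis using r1[OF Z2_nil_to r0[OF ZD_to]] by simp
  qed
  from M[unfolded zreg_def] show ?thesis
  proof (elim UnE CollectE exE conjE disjE)
    fix S assume "scorr S []" "M = Zm S n"
    then show ?thesis using fromZ2 r1[OF Z_to r1[OF Z1_to]] by metis
  next
    fix S assume "scorr S []" "M = Z1m S n"
    then show ?thesis using fromZ2 r1[OF Z1_to] by metis
  next
    fix S assume "scorr S []" "M = Z2m S n"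
    then show ?thesis using fromZ2 by metis
  next
    assume "M = ZDm n" then show ?thesis using r0[OF ZD_to] by blast
  qed auto
qed

lemma zreg_flags: "M \<in> zreg \<pi> n \<Longrightarrow> fl \<in> flags M \<Longrightarrow> \<pi> = [] \<and> M = Dm n \<and> fl = (''done'', PW, Nil)"
  unfolding zreg_def using flags_none flags_D by auto

lemma zreg_outs: "M \<in> zreg \<pi> n \<Longrightarrow> outsH M"
  unfolding zreg_def using outs_all by auto

lemma cereg_step: "M \<in> cereg u \<pi> n \<Longrightarrow> mtau M M' \<Longrightarrow> M' \<in> cereg u \<pi> n"
proof -
  assume "M \<in> cereg u \<pi> n" "mtau M M'"
  then obtain P S1 where a: "corr [] P u" "scorr S1 \<pi>" "M = CEm P S1 n \<or> M = ENm P S1 n" unfolding cereg_def by blast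
  then have "M' = ENm P S1 n" using \<open>mtau M M'\<close> CE_step EN_step by blast
  then show ?thesis using a unfolding cereg_def by blast
qed

lemma cereg_to_EN: "M \<in> cereg u \<pi> n \<Longrightarrow> \<exists>P S1. corr [] P u \<and> scorr S1 \<pi> \<and> mtau\<^sup>*\<^sup>* M (ENm P S1 n)"
proof -
  assume "M \<in> cereg u \<pi> n"
  then obtain P S1 where a: "corr [] P u" "scorr S1 \<pi>" "M = CEm P S1 n \<or> M = ENm P S1 n" unfolding cereg_def by blast
  then have "mtau\<^sup>*\<^sup>* M (ENm P S1 n)" using r0[OF CE_to] by blast
  then show ?thesis using a by blast
qed

lemma cereg_flags: "M \<in> cereg u \<pi> n \<Longrightarrow> fl \<in> flags M \<Longrightarrow>
   \<exists>P S1. corr [] P u \<and> scorr S1 \<pi> \<and> M = ENm P S1 n \<and> fl = (''enter'', PW, Inp ''c'' PW (Par P (Out ''c'' tr_empty)))"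
proof -
  assume "M \<in> cereg u \<pi> n" "fl \<in> flags M"
  then obtain P S1 where a: "corr [] P u" "scorr S1 \<pi>" "M = CEm P S1 n \<or> M = ENm P S1 n" unfolding cereg_def by blast
  then have "M = ENm P S1 n" using \<open>fl \<in> flags M\<close> flags_none by auto
  then show ?thesis using a \<open>fl \<in> flags M\<close> flags_EN by auto
qed

lemma cereg_outs: "M \<in> cereg u \<pi> n \<Longrightarrow> outsH M"
  unfolding cereg_def using outs_all by auto

lemma csreg_step: "M \<in> csreg \<pi> n \<Longrightarrow> mtau M M' \<Longrightarrow> M' \<in> csreg \<pi> n"
proof -
  assume "M \<in> csreg \<pi> n" "mtau M M'"
  then obtain P u S1 where a: "corr [] P u" "scorr S1 \<pi>" "M = CSm P S1 n \<or> M = SKm S1 n" unfolding csreg_def by blast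
  then have "M' = SKm S1 n" using \<open>mtau M M'\<close> CS_step SK_step by blast
  then show ?thesis using a unfolding csreg_def by blast
qed

lemma csreg_to_SK: "M \<in> csreg \<pi> n \<Longrightarrow> \<exists>S1. scorr S1 \<pi> \<and> mtau\<^sup>*\<^sup>* M (SKm S1 n)"
proof -
  assume "M \<in> csreg \<pi> n"
  then obtain P u S1 where a: "corr [] P u" "scorr S1 \<pi>" "M = CSm P S1 n \<or> M = SKm S1 n" unfolding csreg_def by blast
  then have "mtau\<^sup>*\<^sup>* M (SKm S1 n)" using r0[OF CS_to] by blast
  then show ?thesis using a by blast
qed

lemma csreg_flags: "M \<in> csreg \<pi> n \<Longrightarrow> fl \<in> flags M \<Longrightarrow>
   \<exists>S1. scorr S1 \<pi> \<and> M = SKm S1 n \<and> fl = (''skip'', PW, Out ''init'' Nil)"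
proof -
  assume "M \<in> csreg \<pi> n" "fl \<in> flags M"
  then obtain P u S1 where a: "corr [] P u" "scorr S1 \<pi>" "M = CSm P S1 n \<or> M = SKm S1 n" unfolding csreg_def by blast
  then have "M = SKm S1 n" using \<open>fl \<in> flags M\<close> flags_none by auto
  then show ?thesis using a \<open>fl \<in> flags M\<close> flags_SK by auto
qed

lemma csreg_outs: "M \<in> csreg \<pi> n \<Longrightarrow> outsH M"
  unfolding csreg_def using outs_all by auto

lemma nreg_step: "M \<in> nreg f \<pi> n \<Longrightarrow> \<not> mtau M M'"
  unfolding nreg_def using EV_num by auto

lemma nreg_outs: "M \<in> nreg f \<pi> n \<Longrightarrow> outsH M"
  unfolding nreg_def using outs_EV by (auto simp: num.simps) (metis num.elims proc.distinct(1))

lemma nreg_flags0: "M \<in> nreg 0 \<pi> n \<Longrightarrow> flags M = {(''z'', PW, Out ''init'' Nil)}"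
  unfolding nreg_def using flags_num0 by auto

lemma nreg_flagsS: "M \<in> nreg (Suc g) \<pi> n \<Longrightarrow> flags M = {(''suc'', PW, num g)}"
  unfolding nreg_def using flags_numS by auto

definition fvl :: "lterm list \<Rightarrow> nat set" where "fvl \<pi> = \<Union>(fv ` set \<pi>)"

definition Rel :: "proc multiset \<Rightarrow> proc multiset \<Rightarrow> bool" where
  "Rel A A' \<longleftrightarrow>
    (\<exists>t s n. nf_equiv t s \<and> (\<forall>f \<in> fv t \<union> fv s. f < n) \<and> A \<in> evx t n \<and> A' \<in> evx s n) \<or>
    (\<exists>f \<pi> \<pi>' n. list_all2 nf_equiv \<pi> \<pi>' \<and> (\<forall>f \<in> fvl \<pi> \<union> fvl \<pi>'. f < n) \<and> A \<in> nreg f \<pi> n \<and> A' \<in> nreg f \<pi>' n) \<or>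
    (\<exists>\<pi> \<pi>' n. list_all2 nf_equiv \<pi> \<pi>' \<and> (\<forall>f \<in> fvl \<pi> \<union> fvl \<pi>'. f < n) \<and> A \<in> zreg \<pi> n \<and> A' \<in> zreg \<pi>' n) \<or>
    (\<exists>u u' \<pi> \<pi>' n. nf_equiv u u' \<and> (\<forall>f \<in> fv u \<union> fv u'. f < n) \<and> A \<in> cereg u \<pi> n \<and> A' \<in> cereg u' \<pi>' n) \<or>
    (\<exists>\<pi> \<pi>' n. list_all2 nf_equiv \<pi> \<pi>' \<and> (\<forall>f \<in> fvl \<pi> \<union> fvl \<pi>'. f < n) \<and> A \<in> csreg \<pi> n \<and> A' \<in> csreg \<pi>' n) \<or>
    (\<exists>n n'. A = Deadm n \<and> A' = Deadm n')"

lemma RelI_ev: "nf_equiv t s \<Longrightarrow> (\<forall>f \<in> fv t \<union> fv s. f < n) \<Longrightarrow> A \<in> evx t n \<Longrightarrow> A' \<in> evx s n \<Longrightarrow> Rel A A'"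
  unfolding Rel_def by (rule disjI1) (intro exI conjI; assumption)
lemma RelI_n: "list_all2 nf_equiv \<pi> \<pi>' \<Longrightarrow> (\<forall>f \<in> fvl \<pi> \<union> fvl \<pi>'. f < n) \<Longrightarrow> A \<in> nreg f \<pi> n \<Longrightarrow> A' \<in> nreg f \<pi>' n \<Longrightarrow> Rel A A'"
  unfolding Rel_def by (rule disjI2, rule disjI1) (intro exI conjI; assumption)
lemma RelI_z: "list_all2 nf_equiv \<pi> \<pi>' \<Longrightarrow> (\<forall>f \<in> fvl \<pi> \<union> fvl \<pi>'. f < n) \<Longrightarrow> A \<in> zreg \<pi> n \<Longrightarrow> A' \<in> zreg \<pi>' n \<Longrightarrow> Rel A A'"
  unfolding Rel_def by (rule disjI2, rule disjI2, rule disjI1) (intro exI conjI; assumption)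
lemma RelI_ce: "nf_equiv u u' \<Longrightarrow> (\<forall>f \<in> fv u \<union> fv u'. f < n) \<Longrightarrow> A \<in> cereg u \<pi> n \<Longrightarrow> A' \<in> cereg u' \<pi>' n \<Longrightarrow> Rel A A'"
  unfolding Rel_def by (rule disjI2, rule disjI2, rule disjI2, rule disjI1) (intro exI conjI; assumption)
lemma RelI_cs: "list_all2 nf_equiv \<pi> \<pi>' \<Longrightarrow> (\<forall>f \<in> fvl \<pi> \<union> fvl \<pi>'. f < n) \<Longrightarrow> A \<in> csreg \<pi> n \<Longrightarrow> A' \<in> csreg \<pi>' n \<Longrightarrow> Rel A A'"
  unfolding Rel_def by (rule disjI2, rule disjI2, rule disjI2, rule disjI2, rule disjI1) (intro exI conjI; assumption)
lemma RelI_dead: "Rel (Deadm n) (Deadm n')"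
  unfolding Rel_def by (rule disjI2, rule disjI2, rule disjI2, rule disjI2, rule disjI2) (intro exI conjI; rule refl)

lemma kam_abs_unique: "kam\<^sup>*\<^sup>* c (Abs s1, []) \<Longrightarrow> kam\<^sup>*\<^sup>* c (Abs s2, []) \<Longrightarrow> s1 = s2"
proof -
  assume a: "kam\<^sup>*\<^sup>* c (Abs s1, [])" "kam\<^sup>*\<^sup>* c (Abs s2, [])"
  have "kam\<^sup>*\<^sup>* (Abs s1, []) (Abs s2, [])" using kam_final[OF a] kam_abs_nil_final by blast
  then show ?thesis by (cases rule: converse_rtranclpE) (auto simp: kam_abs_nil_final)
qed

lemma kam_var_unique: "kam\<^sup>*\<^sup>* c (FVar f, \<pi>) \<Longrightarrow> kam\<^sup>*\<^sup>* c (FVar g, \<pi>') \<Longrightarrow> f = g \<and> \<pi> = \<pi>'"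
proof -
  assume a: "kam\<^sup>*\<^sup>* c (FVar f, \<pi>)" "kam\<^sup>*\<^sup>* c (FVar g, \<pi>')"
  have "kam\<^sup>*\<^sup>* (FVar f, \<pi>) (FVar g, \<pi>')" using kam_final[OF a] kam_fvar_final by blast
  then show ?thesis by (cases rule: converse_rtranclpE) (auto simp: kam_fvar_final)
qed

lemma kam_var_fvl: "kam\<^sup>*\<^sup>* (t, []) (FVar f, \<pi>) \<Longrightarrow> fvl \<pi> \<subseteq> fv t"
  using kams_fv'[of t "[]" "FVar f" \<pi>] unfolding fvl_def by simp

lemma kam_abs_fv: "kam\<^sup>*\<^sup>* (t, []) (Abs t', []) \<Longrightarrow> fv t' \<subseteq> fv t"
  using kams_fv'[of t "[]" "Abs t'" "[]"] by simp

lemma list_all2_sym_nf: "list_all2 nf_equiv \<pi> \<pi>' \<Longrightarrow> list_all2 nf_equiv \<pi>' \<pi>"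
  by (simp add: list_all2_conv_all_nth nf_equiv_sym)

lemma Rel_sym: "Rel A A' \<Longrightarrow> Rel A' A"
proof -
  assume "Rel A A'"
  from this[unfolded Rel_def] show ?thesis
  proof (elim disjE exE conjE)
    fix t s n assume a: "nf_equiv t s" "\<forall>f \<in> fv t \<union> fv s. f < n" "A \<in> evx t n" "A' \<in> evx s n"
    have "\<forall>f \<in> fv s \<union> fv t. f < n" using a(2) by blast
    then show ?thesis using RelI_ev[OF nf_equiv_sym[OF a(1)] _ a(4) a(3)] by blast
  next
    fix f \<pi> \<pi>' n assume a: "list_all2 nf_equiv \<pi> \<pi>'" "\<forall>f \<in> fvl \<pi> \<union> fvl \<pi>'. f < n" "A \<in> nreg f \<pi> n" "A' \<in> nreg f \<pi>' n"
    have "\<forall>f \<in> fvl \<pi>' \<union> fvl \<pi>. f < n" using a(2) by blast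
    then show ?thesis using RelI_n[OF list_all2_sym_nf[OF a(1)] _ a(4) a(3)] by blast
  next
    fix \<pi> \<pi>' n assume a: "list_all2 nf_equiv \<pi> \<pi>'" "\<forall>f \<in> fvl \<pi> \<union> fvl \<pi>'. f < n" "A \<in> zreg \<pi> n" "A' \<in> zreg \<pi>' n"
    have "\<forall>f \<in> fvl \<pi>' \<union> fvl \<pi>. f < n" using a(2) by blast
    then show ?thesis using RelI_z[OF list_all2_sym_nf[OF a(1)] _ a(4) a(3)] by blast
  next
    fix u u' \<pi> \<pi>' n assume a: "nf_equiv u u'" "\<forall>f \<in> fv u \<union> fv u'. f < n" "A \<in> cereg u \<pi> n" "A' \<in> cereg u' \<pi>' n"
    have "\<forall>f \<in> fv u' \<union> fv u. f < n" using a(2) by blast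
    then show ?thesis using RelI_ce[OF nf_equiv_sym[OF a(1)] _ a(4) a(3)] by blast
  next
    fix \<pi> \<pi>' n assume a: "list_all2 nf_equiv \<pi> \<pi>'" "\<forall>f \<in> fvl \<pi> \<union> fvl \<pi>'. f < n" "A \<in> csreg \<pi> n" "A' \<in> csreg \<pi>' n"
    have "\<forall>f \<in> fvl \<pi>' \<union> fvl \<pi>. f < n" using a(2) by blast
    then show ?thesis using RelI_cs[OF list_all2_sym_nf[OF a(1)] _ a(4) a(3)] by blast
  next
    fix n n' assume "A = Deadm n" "A' = Deadm n'"
    then show ?thesis using RelI_dead by simp
  qed
qed

definition stable_ok :: "proc multiset \<Rightarrow> proc multiset \<Rightarrow> bool" where
  "stable_ok A A' \<longleftrightarrow> (\<forall>a x Q. (a, x, Q) \<in> flags A \<longrightarrow> (\<exists>W' x' Q'. mtau\<^sup>*\<^sup>* A' W' \<and> (a, x', Q') \<in> flags W' \<and>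
      (\<forall>R. Rel (A - {#Inp a x Q#} + threads (subst Q x R)) (W' - {#Inp a x' Q'#} + threads (subst Q' x' R)))))"

definition tau_ok :: "proc multiset \<Rightarrow> proc multiset \<Rightarrow> bool" where
  "tau_ok A A' \<longleftrightarrow> (\<forall>A1. mtau A A1 \<longrightarrow> (\<exists>A1'. mtau\<^sup>*\<^sup>* A' A1' \<and> Rel A1 A1'))"

lemma fv_open0: "fv (opn n t') \<subseteq> fv t' \<union> {n}"
  using fv_open[of 0 "FVar n" t'] by auto
lemma evx_L1: "corr [j] B t' \<Longrightarrow> L1m j B m \<in> evx (opn m t') (Suc m)"
  unfolding evx_def evpre_def by auto
lemma evx_EN1: "corr [] P u \<Longrightarrow> scorr S1 \<pi> \<Longrightarrow> EN1m P S1 n \<in> evx u n"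
  unfolding evx_def evpre_def by auto
lemma fb_lemma: "fv t' \<subseteq> fv t \<Longrightarrow> fv s' \<subseteq> fv s \<Longrightarrow> \<forall>f \<in> fv t \<union> fv s. f < n \<Longrightarrow> \<forall>f \<in> fv (opn n t') \<union> fv (opn n s'). f < Suc n"
proof
  fix f assume a: "fv t' \<subseteq> fv t" "fv s' \<subseteq> fv s" "\<forall>f \<in> fv t \<union> fv s. f < n" and f: "f \<in> fv (opn n t') \<union> fv (opn n s')"
  have "fv (opn n t') \<union> fv (opn n s') \<subseteq> fv t \<union> fv s \<union> {n}" using fv_open0[of n t'] fv_open0[of n s'] a(1,2) by blast
  then have "f \<in> fv t \<union> fv s \<or> f = n" using f by blast
  then show "f < Suc n"
  proof
    assume "f \<in> fv t \<union> fv s" then have "f < n" using a(3) by blast then show ?thesis by simp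
  qed simp
qed

lemma ev_stable:
  assumes eq: "nf_equiv t s" and fvb: "\<forall>f \<in> fv t \<union> fv s. f < n" and A: "A \<in> evx t n" and A': "A' \<in> evx s n"
  shows "stable_ok A A'"
  unfolding stable_ok_def
proof (intro allI impI)
  fix a x Q assume fl: "(a, x, Q) \<in> flags A"
  from evx_flags[OF A fl] show "\<exists>W' x' Q'. mtau\<^sup>*\<^sup>* A' W' \<and> (a, x', Q') \<in> flags W' \<and>
      (\<forall>R. Rel (A - {#Inp a x Q#} + threads (subst Q x R)) (W' - {#Inp a x' Q'#} + threads (subst Q' x' R)))"
  proof (elim disjE exE conjE)
    fix t' j B assume k: "kam\<^sup>*\<^sup>* (t, []) (Abs t', [])" and c: "corr [j] B t'" and e: "A = WLm j B n"
      and f: "(a, x, Q) = (''lambda'', PW, RB)"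
    have "n \<notin> fv t" "n \<notin> fv s" using fvb by auto
    from nf_equiv_abs_fresh[OF eq k this] obtain s' where s': "kam\<^sup>*\<^sup>* (s, []) (Abs s', [])"
      "nf_equiv (opn n t') (opn n s')" by blast
    from evx_to_abs[OF A' s'(1)] obtain j' B' where c': "corr [j'] B' s'" "mtau\<^sup>*\<^sup>* A' (WLm j' B' n)" by blast
    have L: "L1m j B n \<in> evx (opn n t') (Suc n)" "L1m j' B' n \<in> evx (opn n s') (Suc n)"
      using evx_L1 c c'(1) by blast+
    have "fv t' \<subseteq> fv t" "fv s' \<subseteq> fv s" using kam_abs_fv k s'(1) by auto
    then have fb: "\<forall>f \<in> fv (opn n t') \<union> fv (opn n s'). f < Suc n"
      using fb_lemma fvb by blast
    have rel: "Rel (L1m j B n) (L1m j' B' n)" using RelI_ev[OF s'(2) fb L] .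
    have fa: "a = ''lambda''" "x = PW" "Q = RB" using f by auto
    show ?thesis
    proof (intro exI conjI allI)
      show "mtau\<^sup>*\<^sup>* A' (WLm j' B' n)" by (rule c'(2))
      show "(a, PW, RB) \<in> flags (WLm j' B' n)" using fa flags_WL by simp
      fix R show "Rel (A - {#Inp a x Q#} + threads (subst Q x R)) (WLm j' B' n - {#Inp a PW RB#} + threads (subst RB PW R))"
        using rel trans_WL[of j B n R] trans_WL[of j' B' n R] e fa by simp
    qed
  next
    fix f \<pi> S assume k: "kam\<^sup>*\<^sup>* (t, []) (FVar f, \<pi>)" and c: "scorr S \<pi>" and e: "A = EVm (num f) S n"
    from nf_equiv_var[OF eq k] obtain \<pi>' where p: "kam\<^sup>*\<^sup>* (s, []) (FVar f, \<pi>')" "list_all2 nf_equiv \<pi> \<pi>'" by blast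
    from evx_to_var[OF A' p(1)] obtain S' where s': "scorr S' \<pi>'" "mtau\<^sup>*\<^sup>* A' (EVm (num f) S' n)" by blast
    have fb: "\<forall>f \<in> fvl \<pi> \<union> fvl \<pi>'. f < n" using kam_var_fvl[OF k] kam_var_fvl[OF p(1)] fvb by blast
    show ?thesis
    proof (cases f)
      case 0
      have rel: "Rel (Zm S n) (Zm S' n)" using RelI_z[OF p(2) fb zreg_Z[OF c] zreg_Z[OF s'(1)]] .
      have fa: "a = ''z''" "x = PW" "Q = Out ''init'' Nil" using fl e 0 flags_num0 by auto
      show ?thesis
      proof (intro exI conjI allI)
        show "mtau\<^sup>*\<^sup>* A' (EVm (num f) S' n)" by (rule s'(2))
        show "(a, PW, Out ''init'' Nil) \<in> flags (EVm (num f) S' n)" using fa flags_num0 0 by simp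
        fix R show "Rel (A - {#Inp a x Q#} + threads (subst Q x R)) (EVm (num f) S' n - {#Inp a PW (Out ''init'' Nil)#} + threads (subst (Out ''init'' Nil) PW R))"
          using rel trans_num0[of S n R] trans_num0[of S' n R] e fa 0 by simp
      qed
    next
      case (Suc g)
      have "EVm (num g) S n \<in> nreg g \<pi> n" "EVm (num g) S' n \<in> nreg g \<pi>' n" using c s'(1) unfolding nreg_def by blast+
      then have rel: "Rel (EVm (num g) S n) (EVm (num g) S' n)" using RelI_n[OF p(2) fb] by blast
      have fa: "a = ''suc''" "x = PW" "Q = num g" using fl e Suc flags_numS by auto
      show ?thesis
      proof (intro exI conjI allI)
        show "mtau\<^sup>*\<^sup>* A' (EVm (num f) S' n)" by (rule s'(2))
        show "(a, PW, num g) \<in> flags (EVm (num f) S' n)" using fa flags_numS Suc by simp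
        fix R show "Rel (A - {#Inp a x Q#} + threads (subst Q x R)) (EVm (num f) S' n - {#Inp a PW (num g)#} + threads (subst (num g) PW R))"
          using rel trans_numS[of g S n R] trans_numS[of g S' n R] e fa Suc by simp
      qed
    qed
  qed
qed

lemma n_stable:
  assumes eq: "list_all2 nf_equiv \<pi> \<pi>'" and fvb: "\<forall>f \<in> fvl \<pi> \<union> fvl \<pi>'. f < n"
    and A: "A \<in> nreg f \<pi> n" and A': "A' \<in> nreg f \<pi>' n"
  shows "stable_ok A A'"
  unfolding stable_ok_def
proof (intro allI impI)
  fix a x Q assume fl: "(a, x, Q) \<in> flags A"
  obtain S where S: "scorr S \<pi>" "A = EVm (num f) S n" using A unfolding nreg_def by blast
  obtain S' where S': "scorr S' \<pi>'" "A' = EVm (num f) S' n" using A' unfolding nreg_def by blast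
  show "\<exists>W' x' Q'. mtau\<^sup>*\<^sup>* A' W' \<and> (a, x', Q') \<in> flags W' \<and>
      (\<forall>R. Rel (A - {#Inp a x Q#} + threads (subst Q x R)) (W' - {#Inp a x' Q'#} + threads (subst Q' x' R)))"
  proof (cases f)
    case 0
    have rel: "Rel (Zm S n) (Zm S' n)" using RelI_z[OF eq fvb zreg_Z[OF S(1)] zreg_Z[OF S'(1)]] .
    have fa: "a = ''z''" "x = PW" "Q = Out ''init'' Nil" using fl S 0 flags_num0 by auto
    show ?thesis
    proof (intro exI conjI allI)
      show "mtau\<^sup>*\<^sup>* A' A'" by simp
      show "(a, PW, Out ''init'' Nil) \<in> flags A'" using fa flags_num0 0 S' by simp
      fix R show "Rel (A - {#Inp a x Q#} + threads (subst Q x R)) (A' - {#Inp a PW (Out ''init'' Nil)#} + threads (subst (Out ''init'' Nil) PW R))"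
        using rel trans_num0[of S n R] trans_num0[of S' n R] S S' fa 0 by simp
    qed
  next
    case (Suc g)
    have "EVm (num g) S n \<in> nreg g \<pi> n" "EVm (num g) S' n \<in> nreg g \<pi>' n" using S S' unfolding nreg_def by blast+
    then have rel: "Rel (EVm (num g) S n) (EVm (num g) S' n)" using RelI_n[OF eq fvb] by blast
    have fa: "a = ''suc''" "x = PW" "Q = num g" using fl S Suc flags_numS by auto
    show ?thesis
    proof (intro exI conjI allI)
      show "mtau\<^sup>*\<^sup>* A' A'" by simp
      show "(a, PW, num g) \<in> flags A'" using fa flags_numS Suc S' by simp
      fix R show "Rel (A - {#Inp a x Q#} + threads (subst Q x R)) (A' - {#Inp a PW (num g)#} + threads (subst (num g) PW R))"
        using rel trans_numS[of g S n R] trans_numS[of g S' n R] S S' fa Suc by simp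
    qed
  qed
qed

lemma z_stable:
  assumes eq: "list_all2 nf_equiv \<pi> \<pi>'" and A: "A \<in> zreg \<pi> n" and A': "A' \<in> zreg \<pi>' n"
  shows "stable_ok A A'"
  unfolding stable_ok_def
proof (intro allI impI)
  fix a x Q assume fl: "(a, x, Q) \<in> flags A"
  from zreg_flags[OF A fl] have z: "\<pi> = []" "A = Dm n" "(a, x, Q) = (''done'', PW, Nil)" by auto
  then have "\<pi>' = []" using eq by auto
  then have m: "mtau\<^sup>*\<^sup>* A' (Dm n)" using zreg_to_D A' by blast
  show "\<exists>W' x' Q'. mtau\<^sup>*\<^sup>* A' W' \<and> (a, x', Q') \<in> flags W' \<and>
      (\<forall>R. Rel (A - {#Inp a x Q#} + threads (subst Q x R)) (W' - {#Inp a x' Q'#} + threads (subst Q' x' R)))"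
  proof (intro exI conjI allI)
    show "mtau\<^sup>*\<^sup>* A' (Dm n)" by (rule m)
    show "(a, PW, Nil) \<in> flags (Dm n)" using z flags_D by simp
    fix R show "Rel (A - {#Inp a x Q#} + threads (subst Q x R)) (Dm n - {#Inp a PW Nil#} + threads (subst Nil PW R))"
      using RelI_dead trans_D[of n R] z by simp
  qed
qed

lemma ce_stable:
  assumes eq: "nf_equiv u u'" and fvb: "\<forall>f \<in> fv u \<union> fv u'. f < n" and A: "A \<in> cereg u \<pi> n" and A': "A' \<in> cereg u' \<pi>' n"
  shows "stable_ok A A'"
  unfolding stable_ok_def
proof (intro allI impI)
  fix a x Q assume fl: "(a, x, Q) \<in> flags A"
  from cereg_flags[OF A fl] obtain P S1 where e: "corr [] P u" "scorr S1 \<pi>" "A = ENm P S1 n"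
    "(a, x, Q) = (''enter'', PW, Inp ''c'' PW (Par P (Out ''c'' tr_empty)))" by blast
  from cereg_to_EN[OF A'] obtain P' S1' where e': "corr [] P' u'" "scorr S1' \<pi>'" "mtau\<^sup>*\<^sup>* A' (ENm P' S1' n)" by blast
  have rel: "Rel (EN1m P S1 n) (EN1m P' S1' n)" using RelI_ev[OF eq fvb evx_EN1[OF e(1,2)] evx_EN1[OF e'(1,2)]] .
  have fa: "a = ''enter''" "x = PW" "Q = Inp ''c'' PW (Par P (Out ''c'' tr_empty))" using e(4) by auto
  have cl: "fvp P = {}" "fvp P' = {}" using corr_closed e(1) e'(1) by auto
  show "\<exists>W' x' Q'. mtau\<^sup>*\<^sup>* A' W' \<and> (a, x', Q') \<in> flags W' \<and>
      (\<forall>R. Rel (A - {#Inp a x Q#} + threads (subst Q x R)) (W' - {#Inp a x' Q'#} + threads (subst Q' x' R)))"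
  proof (intro exI conjI allI)
    show "mtau\<^sup>*\<^sup>* A' (ENm P' S1' n)" by (rule e'(3))
    show "(a, PW, Inp ''c'' PW (Par P' (Out ''c'' tr_empty))) \<in> flags (ENm P' S1' n)" using fa flags_EN by simp
    fix R show "Rel (A - {#Inp a x Q#} + threads (subst Q x R))
      (ENm P' S1' n - {#Inp a PW (Inp ''c'' PW (Par P' (Out ''c'' tr_empty)))#} + threads (subst (Inp ''c'' PW (Par P' (Out ''c'' tr_empty))) PW R))"
      using rel trans_EN[OF cl(1), of S1 n R] trans_EN[OF cl(2), of S1' n R] e(3) fa by simp
  qed
qed

lemma cs_stable:
  assumes eq: "list_all2 nf_equiv \<pi> \<pi>'" and fvb: "\<forall>f \<in> fvl \<pi> \<union> fvl \<pi>'. f < n" and A: "A \<in> csreg \<pi> n" and A': "A' \<in> csreg \<pi>' n"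
  shows "stable_ok A A'"
  unfolding stable_ok_def
proof (intro allI impI)
  fix a x Q assume fl: "(a, x, Q) \<in> flags A"
  from csreg_flags[OF A fl] obtain S1 where e: "scorr S1 \<pi>" "A = SKm S1 n" "(a, x, Q) = (''skip'', PW, Out ''init'' Nil)" by blast
  from csreg_to_SK[OF A'] obtain S1' where e': "scorr S1' \<pi>'" "mtau\<^sup>*\<^sup>* A' (SKm S1' n)" by blast
  have rel: "Rel (Zm S1 n) (Zm S1' n)" using RelI_z[OF eq fvb zreg_Z[OF e(1)] zreg_Z[OF e'(1)]] .
  have fa: "a = ''skip''" "x = PW" "Q = Out ''init'' Nil" using e(3) by auto
  show "\<exists>W' x' Q'. mtau\<^sup>*\<^sup>* A' W' \<and> (a, x', Q') \<in> flags W' \<and>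
      (\<forall>R. Rel (A - {#Inp a x Q#} + threads (subst Q x R)) (W' - {#Inp a x' Q'#} + threads (subst Q' x' R)))"
  proof (intro exI conjI allI)
    show "mtau\<^sup>*\<^sup>* A' (SKm S1' n)" by (rule e'(2))
    show "(a, PW, Out ''init'' Nil) \<in> flags (SKm S1' n)" using fa flags_SK by simp
    fix R show "Rel (A - {#Inp a x Q#} + threads (subst Q x R)) (SKm S1' n - {#Inp a PW (Out ''init'' Nil)#} + threads (subst (Out ''init'' Nil) PW R))"
      using rel trans_SK[of S1 n R] trans_SK[of S1' n R] e(2) fa by simp
  qed
qed

lemma dead_stable: "stable_ok (Deadm n) A'"
  unfolding stable_ok_def using flags_none by simp

lemma ev_tau: "nf_equiv t s \<Longrightarrow> \<forall>f \<in> fv t \<union> fv s. f < n \<Longrightarrow> A \<in> evx t n \<Longrightarrow> A' \<in> evx s n \<Longrightarrow> tau_ok A A'"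
  unfolding tau_ok_def using evx_step RelI_ev by blast

lemma n_tau: "A \<in> nreg f \<pi> n \<Longrightarrow> tau_ok A A'"
  unfolding tau_ok_def using nreg_step by blast

lemma ce_tau: "nf_equiv u u' \<Longrightarrow> \<forall>f \<in> fv u \<union> fv u'. f < n \<Longrightarrow> A \<in> cereg u \<pi> n \<Longrightarrow> A' \<in> cereg u' \<pi>' n \<Longrightarrow> tau_ok A A'"
  unfolding tau_ok_def using cereg_step RelI_ce by blast

lemma cs_tau: "list_all2 nf_equiv \<pi> \<pi>' \<Longrightarrow> \<forall>f \<in> fvl \<pi> \<union> fvl \<pi>'. f < n \<Longrightarrow> A \<in> csreg \<pi> n \<Longrightarrow> A' \<in> csreg \<pi>' n \<Longrightarrow> tau_ok A A'"
  unfolding tau_ok_def using csreg_step RelI_cs by blast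

lemma dead_tau: "tau_ok (Deadm n) A'"
  unfolding tau_ok_def using Dead_step by blast

lemma fvl_cons: "fvl (u # \<pi>) = fv u \<union> fvl \<pi>" by (simp add: fvl_def)

lemma z_tau:
  assumes eq: "list_all2 nf_equiv \<pi> \<pi>'" and fvb: "\<forall>f \<in> fvl \<pi> \<union> fvl \<pi>'. f < n" and A: "A \<in> zreg \<pi> n" and A': "A' \<in> zreg \<pi>' n"
  shows "tau_ok A A'"
  unfolding tau_ok_def
proof (intro allI impI)
  fix A1 assume st: "mtau A A1"
  from zreg_step[OF A st] show "\<exists>A1'. mtau\<^sup>*\<^sup>* A' A1' \<and> Rel A1 A1'"
  proof (elim disjE exE conjE)
    assume "A1 \<in> zreg \<pi> n" then show ?thesis using RelI_z[OF eq fvb _ A'] by blast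
  next
    fix u \<pi>1 P S1 assume e: "\<pi> = u # \<pi>1" "corr [] P u" "scorr S1 \<pi>1" "A = CPm P S1 n"
      and a: "A1 = CEm P S1 n"
    obtain u' \<pi>1' where p': "\<pi>' = u' # \<pi>1'" "nf_equiv u u'" "list_all2 nf_equiv \<pi>1 \<pi>1'"
      using eq e(1) by (cases \<pi>') auto
    obtain P' S1' where c': "corr [] P' u'" "scorr S1' \<pi>1'" "mtau\<^sup>*\<^sup>* A' (CPm P' S1' n)"
      using zreg_to_CP A' p'(1) by blast
    have fb1: "\<forall>f \<in> fv u \<union> fv u'. f < n" "\<forall>f \<in> fvl \<pi>1 \<union> fvl \<pi>1'. f < n"
      using fvb e(1) p'(1) by (auto simp: fvl_cons)
    have "A1 \<in> cereg u \<pi>1 n" "CEm P' S1' n \<in> cereg u' \<pi>1' n" unfolding cereg_def using a e c' by blast+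
    then have "Rel A1 (CEm P' S1' n)" using RelI_ce[OF p'(2) fb1(1)] by blast
    moreover have "mtau\<^sup>*\<^sup>* A' (CEm P' S1' n)" using c'(3) CP_toE by (rule rtranclp.rtrancl_into_rtrancl)
    ultimately show ?thesis by blast
  next
    fix u \<pi>1 P S1 assume e: "\<pi> = u # \<pi>1" "corr [] P u" "scorr S1 \<pi>1" "A = CPm P S1 n"
      and a: "A1 = CSm P S1 n"
    obtain u' \<pi>1' where p': "\<pi>' = u' # \<pi>1'" "nf_equiv u u'" "list_all2 nf_equiv \<pi>1 \<pi>1'"
      using eq e(1) by (cases \<pi>') auto
    obtain P' S1' where c': "corr [] P' u'" "scorr S1' \<pi>1'" "mtau\<^sup>*\<^sup>* A' (CPm P' S1' n)"
      using zreg_to_CP A' p'(1) by blast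
    have fb1: "\<forall>f \<in> fv u \<union> fv u'. f < n" "\<forall>f \<in> fvl \<pi>1 \<union> fvl \<pi>1'. f < n"
      using fvb e(1) p'(1) by (auto simp: fvl_cons)
    have "A1 \<in> csreg \<pi>1 n" "CSm P' S1' n \<in> csreg \<pi>1' n" unfolding csreg_def using a e c' by blast+
    then have "Rel A1 (CSm P' S1' n)" using RelI_cs[OF p'(3) fb1(2)] by blast
    moreover have "mtau\<^sup>*\<^sup>* A' (CSm P' S1' n)" using c'(3) CP_toS by (rule rtranclp.rtrancl_into_rtrancl)
    ultimately show ?thesis by blast
  qed
qed

lemma Rel_props: "Rel A A' \<Longrightarrow> stable_ok A A' \<and> tau_ok A A' \<and> outsH A"
proof -
  assume "Rel A A'"
  from this[unfolded Rel_def] show ?thesis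
  proof (elim disjE exE conjE)
    fix t s n assume a: "nf_equiv t s" "\<forall>f \<in> fv t \<union> fv s. f < n" "A \<in> evx t n" "A' \<in> evx s n"
    then show ?thesis using ev_stable[OF a] ev_tau[OF a] evx_outs[OF a(3)] by blast
  next
    fix f \<pi> \<pi>' n assume a: "list_all2 nf_equiv \<pi> \<pi>'" "\<forall>f \<in> fvl \<pi> \<union> fvl \<pi>'. f < n" "A \<in> nreg f \<pi> n" "A' \<in> nreg f \<pi>' n"
    then show ?thesis using n_stable[OF a] n_tau[OF a(3)] nreg_outs[OF a(3)] by blast
  next
    fix \<pi> \<pi>' n assume a: "list_all2 nf_equiv \<pi> \<pi>'" "\<forall>f \<in> fvl \<pi> \<union> fvl \<pi>'. f < n" "A \<in> zreg \<pi> n" "A' \<in> zreg \<pi>' n"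
    then show ?thesis using z_stable[OF a(1,3,4)] z_tau[OF a] zreg_outs[OF a(3)] by blast
  next
    fix u u' \<pi> \<pi>' n assume a: "nf_equiv u u'" "\<forall>f \<in> fv u \<union> fv u'. f < n" "A \<in> cereg u \<pi> n" "A' \<in> cereg u' \<pi>' n"
    then show ?thesis using ce_stable[OF a] ce_tau[OF a] cereg_outs[OF a(3)] by blast
  next
    fix \<pi> \<pi>' n assume a: "list_all2 nf_equiv \<pi> \<pi>'" "\<forall>f \<in> fvl \<pi> \<union> fvl \<pi>'. f < n" "A \<in> csreg \<pi> n" "A' \<in> csreg \<pi>' n"
    then show ?thesis using cs_stable[OF a] cs_tau[OF a] csreg_outs[OF a(3)] by blast
  next
    fix n n' assume "A = Deadm n" "A' = Deadm n'"
    then show ?thesis using dead_stable dead_tau outs_all by simp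
  qed
qed

lemma good_Rel: "good_rel Rel"
  unfolding good_rel_def
proof (intro conjI allI impI)
  show "symp Rel" unfolding symp_def using Rel_sym by blast
next
  fix A A' \<mu> assume r: "Rel A A'" and b: "mbarb H A \<mu>"
  have p: "stable_ok A A'" "outsH A" using Rel_props[OF r] by auto
  from b p(2) obtain a x Q where "\<mu> = BIn a" "(a, x, Q) \<in> flags A" using outsH_mbarb by blast
  then obtain W' x' Q' where "mtau\<^sup>*\<^sup>* A' W'" "(a, x', Q') \<in> flags W'" using p(1) unfolding stable_ok_def by blast
  then show "\<exists>A''. mtau\<^sup>*\<^sup>* A' A'' \<and> mbarb H A'' \<mu>" using \<open>\<mu> = BIn a\<close> unfolding flags_def by auto
next
  fix A A' A1 assume r: "Rel A A'" and st: "mtau A A1"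
  have "tau_ok A A'" using Rel_props[OF r] by auto
  then show "\<exists>A1'. mtau\<^sup>*\<^sup>* A' A1' \<and> Rel A1 A1'" using st unfolding tau_ok_def by blast
next
  fix A A' a x Q N R assume r: "Rel A A'" and e: "A = add_mset (Inp a x Q) N" and h: "a \<notin> H"
  have p: "stable_ok A A'" using Rel_props[OF r] by auto
  have "(a, x, Q) \<in> flags A" using e h unfolding flags_def by simp
  then obtain W' x' Q' where w: "mtau\<^sup>*\<^sup>* A' W'" "(a, x', Q') \<in> flags W'"
    "\<And>R. Rel (A - {#Inp a x Q#} + threads (subst Q x R)) (W' - {#Inp a x' Q'#} + threads (subst Q' x' R))"
    using p unfolding stable_ok_def by blast
  have "W' = add_mset (Inp a x' Q') (W' - {#Inp a x' Q'#})" using w(2) unfolding flags_def by simp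
  moreover have "N = A - {#Inp a x Q#}" using e by simp
  ultimately show "\<exists>x' Q' N'. mtau\<^sup>*\<^sup>* A' (add_mset (Inp a x' Q') N') \<and> Rel (N + threads (subst Q x R)) (N' + threads (subst Q' x' R))"
    using w(1) w(3)[of R] by metis
next
  fix A A' a R assume r: "Rel A A'" and o: "Out a R \<in># A"
  have "outsH A" using Rel_props[OF r] by auto
  then show "a \<in> H" using o unfolding outsH_def by blast
qed

lemma threads_rec_proc: "threads rec_proc = {#rec_proc#}" by (simp add: rec_proc_def)

lemma threads_tr_ev: "well_formed t \<Longrightarrow> threads (tr_ev t [] n) = EVm (tr 0 t) tr_empty n"
  using corr_threads[OF corr_tr0[of t]]
  by (simp add: tr_ev_def EVm_def baseL_def threads_rec_proc add_mset_commute)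

theorem forward: "well_formed t \<Longrightarrow> well_formed s \<Longrightarrow> nf_equiv t s \<Longrightarrow> \<forall>f \<in> fv t \<union> fv s. f < n \<Longrightarrow>
   hbisim H (tr_ev t [] n) (tr_ev s [] n)"
proof -
  assume a: "well_formed t" "well_formed s" "nf_equiv t s" "\<forall>f \<in> fv t \<union> fv s. f < n"
  have "EVm (tr 0 t) tr_empty n \<in> evx t n" "EVm (tr 0 s) tr_empty n \<in> evx s n"
    using evreg_EV corr_tr0 a(1,2) unfolding evx_def by blast+
  then have "Rel (threads (tr_ev t [] n)) (threads (tr_ev s [] n))"
    using RelI_ev[OF a(3) a(4)] threads_tr_ev a(1,2) by simp
  then show ?thesis using good_rel_hbisim[OF good_Rel] by blast
qed

lemma mset_cons_sym: "add_mset x (mset xs) = mset (x # xs)" by simp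

lemma WLlam_step: "mtau (add_mset (Out ''lambda'' Nil) (WLm j B n)) M \<longleftrightarrow> M = L1m j B n"
  unfolding sdefs mset_cons_sym mtau_succs by (simp add: succs_def unf add_mset_commute)
lemma num0z_step: "mtau (add_mset (Out ''z'' Nil) (EVm (num 0) S n)) M \<longleftrightarrow> M = Zm S n"
  unfolding sdefs mset_cons_sym mtau_succs by (simp add: succs_def unf add_mset_commute)
lemma numSsuc_step: "mtau (add_mset (Out ''suc'' Nil) (EVm (num (Suc g)) S n)) M \<longleftrightarrow> M = EVm (num g) S n"
  unfolding sdefs mset_cons_sym mtau_succs by (simp add: succs_def unf add_mset_commute)
lemma ENenter_step: "fvp P = {} \<Longrightarrow> threads P = {#P#} \<Longrightarrow> mtau (add_mset (Out ''enter'' Nil) (ENm P S1 n)) M \<longleftrightarrow> M = EN1m P S1 n"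
  unfolding sdefs mset_cons_sym mtau_succs by (simp add: succs_def unf add_mset_commute)
lemma SKskip_step: "mtau (add_mset (Out ''skip'' Nil) (SKm S1 n)) M \<longleftrightarrow> M = Zm S1 n"
  unfolding sdefs mset_cons_sym mtau_succs by (simp add: succs_def unf add_mset_commute)

lemma flags_add_out[simp]: "flags (add_mset (Out a R) M) = flags M"
  unfolding flags_def by auto

lemma no_tau_rtc: "mtau\<^sup>*\<^sup>* W X \<Longrightarrow> (\<And>M. \<not> mtau W M) \<Longrightarrow> X = W"
  by (induction rule: converse_rtranclp_induct) auto

lemma uniq_rtc: "mtau\<^sup>*\<^sup>* Y0 Y \<Longrightarrow> (\<And>M. mtau Y0 M \<longleftrightarrow> M = Y1) \<Longrightarrow> Y = Y0 \<or> mtau\<^sup>*\<^sup>* Y1 Y"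
  by (induction rule: converse_rtranclp_induct) auto

lemma hb_term: "hb X Y \<Longrightarrow> mtau\<^sup>*\<^sup>* Y Y' \<Longrightarrow> (\<And>M. \<not> mtau X M) \<Longrightarrow> hb X Y'"
proof -
  assume a: "hb X Y" "mtau\<^sup>*\<^sup>* Y Y'" "\<And>M. \<not> mtau X M"
  obtain X' where "mtau\<^sup>*\<^sup>* X X'" "hb Y' X'" using hb_taus[OF hb_sym[OF a(1)] a(2)] by blast
  moreover then have "X' = X" using no_tau_rtc a(3) by blast
  ultimately show ?thesis using hb_sym by blast
qed

lemma sync_ev: "hb X0 Y0 \<Longrightarrow> mtau X0 X1 \<Longrightarrow> (\<And>M. mtau Y0 M \<longleftrightarrow> M = Y1) \<Longrightarrow>
   \<exists>X Y. mtau\<^sup>*\<^sup>* X1 X \<and> mtau\<^sup>*\<^sup>* Y1 Y \<and> hb X Y"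
proof -
  assume a: "hb X0 Y0" "mtau X0 X1" "\<And>M. mtau Y0 M \<longleftrightarrow> M = Y1"
  obtain Y where y: "mtau\<^sup>*\<^sup>* Y0 Y" "hb X1 Y" using hb_taus[OF a(1) r0[OF a(2)]] by blast
  from uniq_rtc[OF y(1) a(3)] show ?thesis
  proof
    assume "Y = Y0"
    then have "hb Y0 X1" using y(2) hb_sym by blast
    moreover have "mtau\<^sup>*\<^sup>* Y0 Y1" using a(3) r0 by blast
    ultimately obtain X where "mtau\<^sup>*\<^sup>* X1 X" "hb Y1 X" using hb_taus by blast
    then show ?thesis using hb_sym by blast
  next
    assume "mtau\<^sup>*\<^sup>* Y1 Y" then show ?thesis using y(2) by blast
  qed
qed

definition wflag :: "proc multiset \<Rightarrow> name \<Rightarrow> bool" where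
  "wflag N a \<longleftrightarrow> (\<exists>N' x Q. mtau\<^sup>*\<^sup>* N N' \<and> (a, x, Q) \<in> flags N')"

lemma mbarb_flag: "mbarb H M (BIn a) \<longleftrightarrow> (\<exists>x Q. (a, x, Q) \<in> flags M)"
  unfolding flags_def by auto

lemma hb_wflag: "hb M N \<Longrightarrow> wflag M a \<Longrightarrow> wflag N a"
  unfolding wflag_def using hb_wbarb mbarb_flag by metis

lemma wflag_steps: "mtau\<^sup>*\<^sup>* M M' \<Longrightarrow> (a, x, Q) \<in> flags M' \<Longrightarrow> wflag M a"
  unfolding wflag_def by blast

lemma hb_flag_match: "hb M N \<Longrightarrow> (a, x, Q) \<in> flags M \<Longrightarrow> \<exists>N' x' Q'. mtau\<^sup>*\<^sup>* N N' \<and> (a, x', Q') \<in> flags N'"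
  using hb_wflag wflag_steps[OF rtranclp.rtrancl_refl] unfolding wflag_def by blast

lemma cereg_steps: "mtau\<^sup>*\<^sup>* M M' \<Longrightarrow> M \<in> cereg u \<pi> n \<Longrightarrow> M' \<in> cereg u \<pi> n"
  by (induction rule: rtranclp_induct) (auto intro: cereg_step)
lemma csreg_steps: "mtau\<^sup>*\<^sup>* M M' \<Longrightarrow> M \<in> csreg \<pi> n \<Longrightarrow> M' \<in> csreg \<pi> n"
  by (induction rule: rtranclp_induct) (auto intro: csreg_step)
lemma zreg_nil_steps: "mtau\<^sup>*\<^sup>* M M' \<Longrightarrow> M \<in> zreg [] n \<Longrightarrow> M' \<in> zreg [] n"
proof (induction rule: rtranclp_induct)
  case (step y z) then show ?case using zreg_step[OF step(3) step(2)] by auto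
qed simp
lemma evx_steps: "mtau\<^sup>*\<^sup>* M M' \<Longrightarrow> M \<in> evx t n \<Longrightarrow> M' \<in> evx t n"
  by (induction rule: rtranclp_induct) (auto intro: evx_step)

lemma wflag_cereg: "M \<in> cereg u \<pi> n \<Longrightarrow> wflag M a \<Longrightarrow> a = ''enter''"
  unfolding wflag_def using cereg_steps cereg_flags by blast
lemma wflag_csreg: "M \<in> csreg \<pi> n \<Longrightarrow> wflag M a \<Longrightarrow> a = ''skip''"
  unfolding wflag_def using csreg_steps csreg_flags by blast
lemma wflag_zreg_nil: "M \<in> zreg [] n \<Longrightarrow> wflag M a \<Longrightarrow> a = ''done''"
  unfolding wflag_def using zreg_nil_steps zreg_flags by blast

definition zall :: "lterm list \<Rightarrow> nat \<Rightarrow> proc multiset set" where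
  "zall \<pi> n = zreg \<pi> n \<union> {M. \<exists>u \<pi>1. \<pi> = u # \<pi>1 \<and> (M \<in> cereg u \<pi>1 n \<or> M \<in> csreg \<pi>1 n)}"

lemma zall_zreg: "M \<in> zreg \<pi> n \<Longrightarrow> M \<in> zall \<pi> n"
  unfolding zall_def by (rule UnI1)
lemma zall_ce: "M \<in> cereg u \<pi>1 n \<Longrightarrow> M \<in> zall (u # \<pi>1) n"
  unfolding zall_def by (rule UnI2) simp
lemma zall_cs: "M \<in> csreg \<pi>1 n \<Longrightarrow> M \<in> zall (u # \<pi>1) n"
  unfolding zall_def by (rule UnI2) simp
lemma zall_E: "M \<in> zall \<pi> n \<Longrightarrow> M \<notin> zreg \<pi> n \<Longrightarrow> \<exists>u \<pi>1. \<pi> = u # \<pi>1 \<and> (M \<in> cereg u \<pi>1 n \<or> M \<in> csreg \<pi>1 n)"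
  unfolding zall_def by simp

lemma zall_step: "M \<in> zall \<pi> n \<Longrightarrow> mtau M M' \<Longrightarrow> M' \<in> zall \<pi> n"
proof -
  assume a: "M \<in> zall \<pi> n" "mtau M M'"
  show ?thesis
  proof (cases "M \<in> zreg \<pi> n")
    case True
    from zreg_step[OF True a(2)] show ?thesis
    proof (elim disjE exE conjE)
      assume "M' \<in> zreg \<pi> n" then show ?thesis by (rule zall_zreg)
    next
      fix u \<pi>1 P S1 assume e: "\<pi> = u # \<pi>1" "corr [] P u" "scorr S1 \<pi>1" "M = CPm P S1 n" "M' = CEm P S1 n"
      then have "M' \<in> cereg u \<pi>1 n" unfolding cereg_def by blast
      then show ?thesis using e(1) zall_ce by simp
    next
      fix u \<pi>1 P S1 assume e: "\<pi> = u # \<pi>1" "corr [] P u" "scorr S1 \<pi>1" "M = CPm P S1 n" "M' = CSm P S1 n"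
      then have "M' \<in> csreg \<pi>1 n" unfolding csreg_def by blast
      then show ?thesis using e(1) zall_cs by simp
    qed
  next
    case False
    then obtain u \<pi>1 where u: "\<pi> = u # \<pi>1" "M \<in> cereg u \<pi>1 n \<or> M \<in> csreg \<pi>1 n" using zall_E a(1) by blast
    from u(2) show ?thesis
    proof
      assume "M \<in> cereg u \<pi>1 n" then show ?thesis using cereg_step[OF _ a(2)] zall_ce u(1) by simp
    next
      assume "M \<in> csreg \<pi>1 n" then show ?thesis using csreg_step[OF _ a(2)] zall_cs u(1) by simp
    qed
  qed
qed

lemma zall_steps: "mtau\<^sup>*\<^sup>* M M' \<Longrightarrow> M \<in> zall \<pi> n \<Longrightarrow> M' \<in> zall \<pi> n"
  by (induction rule: rtranclp_induct) (auto intro: zall_step)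

lemma zall_flags: "Y \<in> zall \<pi> n \<Longrightarrow> (a, x, Q) \<in> flags Y \<Longrightarrow>
   (a = ''done'' \<and> \<pi> = []) \<or> (\<exists>u \<pi>1. \<pi> = u # \<pi>1 \<and> ((a = ''enter'' \<and> Y \<in> cereg u \<pi>1 n) \<or> (a = ''skip'' \<and> Y \<in> csreg \<pi>1 n)))"
proof -
  assume a: "Y \<in> zall \<pi> n" "(a, x, Q) \<in> flags Y"
  show ?thesis
  proof (cases "Y \<in> zreg \<pi> n")
    case True then show ?thesis using zreg_flags[OF True a(2)] by auto
  next
    case False
    then obtain u \<pi>1 where u: "\<pi> = u # \<pi>1" "Y \<in> cereg u \<pi>1 n \<or> Y \<in> csreg \<pi>1 n" using zall_E a(1) by blast
    from u(2) show ?thesis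
    proof
      assume "Y \<in> cereg u \<pi>1 n" then show ?thesis using cereg_flags[OF _ a(2)] u(1) by blast
    next
      assume "Y \<in> csreg \<pi>1 n" then show ?thesis using csreg_flags[OF _ a(2)] u(1) by blast
    qed
  qed
qed

lemma CP_reach: "mtau\<^sup>*\<^sup>* (CPm P S1 n) X \<Longrightarrow> corr [] P u \<Longrightarrow> scorr S1 \<pi>1 \<Longrightarrow>
   X = CPm P S1 n \<or> X \<in> cereg u \<pi>1 n \<or> X \<in> csreg \<pi>1 n"
proof -
  assume a: "mtau\<^sup>*\<^sup>* (CPm P S1 n) X" "corr [] P u" "scorr S1 \<pi>1"
  from a(1) show ?thesis
  proof (cases rule: converse_rtranclpE)
    case base then show ?thesis by simp
  next
    case (step M)
    then have "M = CEm P S1 n \<or> M = CSm P S1 n" using CP_step by blast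
    then show ?thesis
    proof
      assume "M = CEm P S1 n"
      then have "M \<in> cereg u \<pi>1 n" unfolding cereg_def using a by blast
      then show ?thesis using cereg_steps step(2) by blast
    next
      assume "M = CSm P S1 n"
      then have "M \<in> csreg \<pi>1 n" unfolding csreg_def using a by blast
      then show ?thesis using csreg_steps step(2) by blast
    qed
  qed
qed

definition PZ :: "proc \<Rightarrow> nat \<Rightarrow> proc multiset set" where
  "PZ S n = {M. (\<forall>M'. mtau M M' \<longleftrightarrow> M' = Zm S n) \<and> (\<forall>x Q. (''done'', x, Q) \<notin> flags M \<and> (''enter'', x, Q) \<notin> flags M)}"

lemma PZ_reach: "M \<in> PZ S n \<Longrightarrow> scorr S \<pi> \<Longrightarrow> mtau\<^sup>*\<^sup>* M Y \<Longrightarrow> Y = M \<or> Y \<in> zall \<pi> n"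
proof -
  assume a: "M \<in> PZ S n" "scorr S \<pi>" "mtau\<^sup>*\<^sup>* M Y"
  have u: "\<And>M'. mtau M M' \<longleftrightarrow> M' = Zm S n" using a(1) unfolding PZ_def by blast
  from uniq_rtc[OF a(3) u] show ?thesis
  proof
    assume "mtau\<^sup>*\<^sup>* (Zm S n) Y"
    moreover have "Zm S n \<in> zall \<pi> n" using zreg_Z[OF a(2)] by (rule zall_zreg)
    ultimately show ?thesis using zall_steps by blast
  qed simp
qed

lemma PZ_wflag: "M \<in> PZ S n \<Longrightarrow> scorr S \<pi> \<Longrightarrow> wflag M a \<Longrightarrow> a = ''done'' \<or> a = ''enter'' \<Longrightarrow>
   \<exists>Y x Q. Y \<in> zall \<pi> n \<and> (a, x, Q) \<in> flags Y"
proof -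
  assume a: "M \<in> PZ S n" "scorr S \<pi>" "wflag M a" "a = ''done'' \<or> a = ''enter''"
  then obtain Y x Q where y: "mtau\<^sup>*\<^sup>* M Y" "(a, x, Q) \<in> flags Y" unfolding wflag_def by blast
  from PZ_reach[OF a(1,2) y(1)] show ?thesis
  proof
    assume "Y = M" then show ?thesis using y(2) a(1,4) unfolding PZ_def by blast
  next
    assume "Y \<in> zall \<pi> n" then show ?thesis using y(2) by blast
  qed
qed

definition Rb :: "lterm \<Rightarrow> lterm \<Rightarrow> bool" where
  "Rb t s \<longleftrightarrow> well_formed t \<and> well_formed s \<and>
     (\<exists>n. (\<forall>f \<in> fv t \<union> fv s. f < n) \<and> (\<exists>A A'. A \<in> evx t n \<and> A' \<in> evx s n \<and> hb A A'))"

lemma RbI: "well_formed t \<Longrightarrow> well_formed s \<Longrightarrow> \<forall>f \<in> fv t \<union> fv s. f < n \<Longrightarrow> A \<in> evx t n \<Longrightarrow> A' \<in> evx s n \<Longrightarrow> hb A A' \<Longrightarrow> Rb t s"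
  unfolding Rb_def by blast

lemma corr_wf: "corr [] P t \<Longrightarrow> well_formed t"
  using corr_lc unfolding well_formed_def by fastforce

lemma CP_to_EN: "mtau\<^sup>*\<^sup>* (CPm P S1 n) (ENm P S1 n)"
  by (rule r1[OF CP_toE r0[OF CE_to]])
lemma CP_to_SK: "mtau\<^sup>*\<^sup>* (CPm P S1 n) (SKm S1 n)"
  by (rule r1[OF CP_toS r0[OF CS_to]])

lemma wflag_CP_enter: "wflag (CPm P S1 n) ''enter''"
  using wflag_steps[OF CP_to_EN] flags_EN by blast
lemma wflag_CP_skip: "wflag (CPm P S1 n) ''skip''"
  using wflag_steps[OF CP_to_SK] flags_SK by blast

lemma stack_lemma:
  "scorr S \<pi> \<Longrightarrow> scorr S' \<pi>' \<Longrightarrow> (\<forall>f \<in> fvl \<pi> \<union> fvl \<pi>'. f < n) \<Longrightarrow> X0 \<in> PZ S n \<Longrightarrow> Y0 \<in> PZ S' n \<Longrightarrow>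
   hb X0 Y0 \<Longrightarrow> list_all2 Rb \<pi> \<pi>'"
proof (induction \<pi> arbitrary: S \<pi>' S' X0 Y0)
  case Nil
  have "mtau X0 (Zm S n)" using Nil(4) unfolding PZ_def by blast
  moreover have "mtau\<^sup>*\<^sup>* (Zm S n) (Dm n)" using zreg_to_D zreg_Z[OF Nil(1)] by blast
  ultimately have "mtau\<^sup>*\<^sup>* X0 (Dm n)" by (rule r1)
  then have "wflag X0 ''done''" using wflag_steps[of X0 "Dm n" "''done''" PW Nil] flags_D by simp
  then have "wflag Y0 ''done''" using hb_wflag Nil(6) by blast
  from PZ_wflag[OF Nil(5) Nil(2) this] obtain Y x Q where "Y \<in> zall \<pi>' n" "(''done'', x, Q) \<in> flags Y" by blast
  from zall_flags[OF this] have "\<pi>' = []" by auto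
  then show ?case by simp
next
  case (Cons u \<pi>1)
  have x0: "mtau X0 (Zm S n)" using Cons.prems(4) unfolding PZ_def by blast
  obtain P S1 where p: "corr [] P u" "scorr S1 \<pi>1" "mtau\<^sup>*\<^sup>* (Zm S n) (CPm P S1 n)"
    using zreg_to_CP zreg_Z[OF Cons.prems(1)] by blast
  let ?CPt = "CPm P S1 n"
  have "mtau\<^sup>*\<^sup>* X0 ?CPt" using x0 p(3) by (rule r1)
  then obtain Y where y: "mtau\<^sup>*\<^sup>* Y0 Y" "hb ?CPt Y" using hb_taus Cons.prems(6) by blast
  have wy: "wflag Y ''enter''" "wflag Y ''skip''" using hb_wflag[OF y(2)] wflag_CP_enter wflag_CP_skip by blast+
  have yr: "Y = Y0 \<or> Y \<in> zall \<pi>' n" using PZ_reach[OF Cons.prems(5,2) y(1)] .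
  obtain u' \<pi>1' where pi': "\<pi>' = u' # \<pi>1'"
  proof (cases \<pi>')
    case Nil
    show ?thesis
    proof (cases "Y = Y0")
      case True
      then have "wflag Y0 ''enter''" using wy by simp
      from PZ_wflag[OF Cons.prems(5) Cons.prems(2) this] obtain Y' x Q where "Y' \<in> zall \<pi>' n" "(''enter'', x, Q) \<in> flags Y'" by blast
      from zall_flags[OF this] Nil show ?thesis by auto
    next
      case False
      then have "Y \<in> zreg [] n" using yr Nil zall_E by blast
      then show ?thesis using wflag_zreg_nil wy by blast
    qed
  next
    case (Cons a list) then show ?thesis using that by blast
  qed
  have "\<exists>P' S1'. corr [] P' u' \<and> scorr S1' \<pi>1' \<and> mtau\<^sup>*\<^sup>* Y (CPm P' S1' n)"
  proof (cases "Y = Y0")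
    case True
    have m: "mtau Y0 (Zm S' n)" using Cons.prems(5) unfolding PZ_def by blast
    have "Zm S' n \<in> zreg (u' # \<pi>1') n" using zreg_Z[OF Cons.prems(2)] pi' by simp
    then obtain P' S1' where "corr [] P' u'" "scorr S1' \<pi>1'" "mtau\<^sup>*\<^sup>* (Zm S' n) (CPm P' S1' n)"
      using zreg_to_CP by blast
    then show ?thesis using True r1[OF m] by blast
  next
    case False
    then have yz: "Y \<in> zall \<pi>' n" using yr by blast
    show ?thesis
    proof (cases "Y \<in> zreg \<pi>' n")
      case True then show ?thesis using zreg_to_CP pi' by blast
    next
      case False
      then have "Y \<in> cereg u' \<pi>1' n \<or> Y \<in> csreg \<pi>1' n" using zall_E[OF yz] pi' by auto
      then show ?thesis
      proof
        assume "Y \<in> cereg u' \<pi>1' n" then have "''skip'' = ''enter''" using wflag_cereg wy(2) by blast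
        then show ?thesis by simp
      next
        assume "Y \<in> csreg \<pi>1' n" then have "''enter'' = ''skip''" using wflag_csreg wy(1) by blast
        then show ?thesis by simp
      qed
    qed
  qed
  then obtain P' S1' where p': "corr [] P' u'" "scorr S1' \<pi>1'" "mtau\<^sup>*\<^sup>* Y (CPm P' S1' n)" by blast
  let ?CPs = "CPm P' S1' n"
  obtain X where x: "mtau\<^sup>*\<^sup>* ?CPt X" "hb ?CPs X" using hb_taus[OF hb_sym[OF y(2)] p'(3)] by blast
  have wx: "wflag X ''enter''" "wflag X ''skip''" using hb_wflag[OF x(2)] wflag_CP_enter wflag_CP_skip by blast+
  have "X = ?CPt"
  proof -
    have "X \<notin> cereg u \<pi>1 n"
    proof
      assume "X \<in> cereg u \<pi>1 n" then have "''skip'' = ''enter''" using wflag_cereg wx(2) by blast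
      then show False by simp
    qed
    moreover have "X \<notin> csreg \<pi>1 n"
    proof
      assume "X \<in> csreg \<pi>1 n" then have "''enter'' = ''skip''" using wflag_csreg wx(1) by blast
      then show False by simp
    qed
    ultimately show ?thesis using CP_reach[OF x(1) p(1,2)] by blast
  qed
  then have cp: "hb ?CPt ?CPs" using x(2) hb_sym by simp
  have fb: "\<forall>f \<in> fv u \<union> fv u'. f < n" "\<forall>f \<in> fvl \<pi>1 \<union> fvl \<pi>1'. f < n"
    using Cons.prems(3) pi' by (auto simp: fvl_cons)
    have "Rb u u'"
  proof -
    obtain Y' where y': "mtau\<^sup>*\<^sup>* ?CPs Y'" "hb (ENm P S1 n) Y'" using hb_taus[OF cp CP_to_EN] by blast
    have "wflag (ENm P S1 n) ''enter''" unfolding wflag_def using flags_EN by blast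
    then have wy': "wflag Y' ''enter''" using hb_wflag[OF y'(2)] by blast
    have "Y' \<notin> csreg \<pi>1' n"
    proof
      assume "Y' \<in> csreg \<pi>1' n" then have "''enter'' = ''skip''" using wflag_csreg wy' by blast
      then show False by simp
    qed
    then have "Y' = ?CPs \<or> Y' \<in> cereg u' \<pi>1' n" using CP_reach[OF y'(1) p'(1,2)] by blast
    then have "\<exists>P'' S1''. corr [] P'' u' \<and> scorr S1'' \<pi>1' \<and> mtau\<^sup>*\<^sup>* Y' (ENm P'' S1'' n)"
    proof
      assume "Y' = ?CPs" then show ?thesis using CP_to_EN p'(1,2) by blast
    next
      assume "Y' \<in> cereg u' \<pi>1' n" then show ?thesis using cereg_to_EN by blast
    qed
    then obtain P'' S1'' where e: "corr [] P'' u'" "scorr S1'' \<pi>1'" "mtau\<^sup>*\<^sup>* Y' (ENm P'' S1'' n)" by blast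
    have "hb (ENm P S1 n) (ENm P'' S1'' n)" using hb_term[OF y'(2) e(3)] EN_step by blast
    then have "hb (add_mset (Out ''enter'' Nil) (ENm P S1 n)) (add_mset (Out ''enter'' Nil) (ENm P'' S1'' n))"
      using hb_ctx[of _ _ "Out ''enter'' Nil"] by (simp add: H_def)
    moreover have "mtau (add_mset (Out ''enter'' Nil) (ENm P S1 n)) (EN1m P S1 n)"
      using ENenter_step corr_facts[OF p(1)] by blast
    moreover have "\<And>M. mtau (add_mset (Out ''enter'' Nil) (ENm P'' S1'' n)) M \<longleftrightarrow> M = EN1m P'' S1'' n"
      using ENenter_step corr_facts[OF e(1)] by blast
    ultimately obtain X1 Y1 where xy: "mtau\<^sup>*\<^sup>* (EN1m P S1 n) X1" "mtau\<^sup>*\<^sup>* (EN1m P'' S1'' n) Y1" "hb X1 Y1"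
      using sync_ev by blast
    have "X1 \<in> evx u n" using evx_steps[OF xy(1) evx_EN1[OF p(1,2)]] .
    moreover have "Y1 \<in> evx u' n" using evx_steps[OF xy(2) evx_EN1[OF e(1,2)]] .
    ultimately show ?thesis using RbI[OF corr_wf[OF p(1)] corr_wf[OF p'(1)] fb(1)] xy(3) by blast
  qed
    moreover have "list_all2 Rb \<pi>1 \<pi>1'"
  proof -
    obtain Y' where y': "mtau\<^sup>*\<^sup>* ?CPs Y'" "hb (SKm S1 n) Y'" using hb_taus[OF cp CP_to_SK] by blast
    have "wflag (SKm S1 n) ''skip''" unfolding wflag_def using flags_SK by blast
    then have wy': "wflag Y' ''skip''" using hb_wflag[OF y'(2)] by blast
    have "Y' \<notin> cereg u' \<pi>1' n"
    proof
      assume "Y' \<in> cereg u' \<pi>1' n" then have "''skip'' = ''enter''" using wflag_cereg wy' by blast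
      then show False by simp
    qed
    then have "Y' = ?CPs \<or> Y' \<in> csreg \<pi>1' n" using CP_reach[OF y'(1) p'(1,2)] by blast
    then have "\<exists>S1''. scorr S1'' \<pi>1' \<and> mtau\<^sup>*\<^sup>* Y' (SKm S1'' n)"
    proof
      assume "Y' = ?CPs" then show ?thesis using CP_to_SK p'(2) by blast
    next
      assume "Y' \<in> csreg \<pi>1' n" then show ?thesis using csreg_to_SK by blast
    qed
    then obtain S1'' where e: "scorr S1'' \<pi>1'" "mtau\<^sup>*\<^sup>* Y' (SKm S1'' n)" by blast
    have "hb (SKm S1 n) (SKm S1'' n)" using hb_term[OF y'(2) e(2)] SK_step by blast
    then have h: "hb (add_mset (Out ''skip'' Nil) (SKm S1 n)) (add_mset (Out ''skip'' Nil) (SKm S1'' n))"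
      using hb_ctx[of _ _ "Out ''skip'' Nil"] by (simp add: H_def)
    have "add_mset (Out ''skip'' Nil) (SKm S1 n) \<in> PZ S1 n" "add_mset (Out ''skip'' Nil) (SKm S1'' n) \<in> PZ S1'' n"
      unfolding PZ_def using SKskip_step flags_SK by auto
    then show ?thesis using Cons.IH[OF p(2) e(1) fb(2) _ _ h] by blast
  qed
  ultimately show ?case using pi' by simp
qed

lemma num_lemma:
  "hb (EVm (num f) S n) (EVm (num g) S' n) \<Longrightarrow> scorr S \<pi> \<Longrightarrow> scorr S' \<pi>' \<Longrightarrow> (\<forall>f \<in> fvl \<pi> \<union> fvl \<pi>'. f < n) \<Longrightarrow>
   f = g \<and> list_all2 Rb \<pi> \<pi>'"
proof (induction f arbitrary: g)
  case 0
  have "(''z'', PW, Out ''init'' Nil) \<in> flags (EVm (num 0) S n)" using flags_num0 by simp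
  from hb_flag_match[OF 0(1) this] obtain N' x' Q' where "mtau\<^sup>*\<^sup>* (EVm (num g) S' n) N'" "(''z'', x', Q') \<in> flags N'" by blast
  moreover then have "N' = EVm (num g) S' n" using no_tau_rtc EV_num by blast
  ultimately have g0: "g = 0" using flags_numS by (cases g) auto
  have h: "hb (add_mset (Out ''z'' Nil) (EVm (num 0) S n)) (add_mset (Out ''z'' Nil) (EVm (num 0) S' n))"
    using hb_ctx[OF 0(1), of "Out ''z'' Nil"] g0 by (simp add: H_def)
  have "add_mset (Out ''z'' Nil) (EVm (num 0) S n) \<in> PZ S n" "add_mset (Out ''z'' Nil) (EVm (num 0) S' n) \<in> PZ S' n"
    unfolding PZ_def using num0z_step flags_num0 by auto
  then show ?case using stack_lemma[OF 0(2,3,4) _ _ h] g0 by blast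
next
  case (Suc f)
  have "(''suc'', PW, num f) \<in> flags (EVm (num (Suc f)) S n)" using flags_numS by simp
  from hb_flag_match[OF Suc(2) this] obtain N' x' Q' where "mtau\<^sup>*\<^sup>* (EVm (num g) S' n) N'" "(''suc'', x', Q') \<in> flags N'" by blast
  moreover then have "N' = EVm (num g) S' n" using no_tau_rtc EV_num by blast
  ultimately obtain g' where g': "g = Suc g'" using flags_num0 by (cases g) auto
  have h: "hb (add_mset (Out ''suc'' Nil) (EVm (num (Suc f)) S n)) (add_mset (Out ''suc'' Nil) (EVm (num (Suc g')) S' n))"
    using hb_ctx[OF Suc(2), of "Out ''suc'' Nil"] g' by (simp add: H_def)
  have "mtau (add_mset (Out ''suc'' Nil) (EVm (num (Suc f)) S n)) (EVm (num f) S n)" using numSsuc_step by blast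
  from sync_ev[OF h this numSsuc_step] obtain X Y where xy: "mtau\<^sup>*\<^sup>* (EVm (num f) S n) X"
    "mtau\<^sup>*\<^sup>* (EVm (num g') S' n) Y" "hb X Y" by blast
  then have "X = EVm (num f) S n" "Y = EVm (num g') S' n" using no_tau_rtc EV_num by blast+
  then have "f = g' \<and> list_all2 Rb \<pi> \<pi>'" using Suc.IH[OF _ Suc(3,4,5)] xy(3) by blast
  then show ?case using g' by simp
qed

lemma evx_flag_abs: "Y \<in> evx s n \<Longrightarrow> (''lambda'', x, Q) \<in> flags Y \<Longrightarrow>
   \<exists>s' j B. kam\<^sup>*\<^sup>* (s, []) (Abs s', []) \<and> corr [j] B s' \<and> Y = WLm j B n"
proof -
  assume a: "Y \<in> evx s n" "(''lambda'', x, Q) \<in> flags Y"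
  from evx_flags[OF a] show ?thesis
  proof (elim disjE exE conjE)
    fix f \<pi> S assume "Y = EVm (num f) S n"
    then show ?thesis using a(2) flags_num0 flags_numS by (cases f) auto
  qed blast
qed

lemma evx_flag_var: "Y \<in> evx s n \<Longrightarrow> (a, x, Q) \<in> flags Y \<Longrightarrow> a \<noteq> ''lambda'' \<Longrightarrow>
   \<exists>g \<pi> S. kam\<^sup>*\<^sup>* (s, []) (FVar g, \<pi>) \<and> scorr S \<pi> \<and> Y = EVm (num g) S n"
proof -
  assume a: "Y \<in> evx s n" "(a, x, Q) \<in> flags Y" "a \<noteq> ''lambda''"
  from evx_flags[OF a(1,2)] show ?thesis
  proof (elim disjE exE conjE)
    fix t' j B assume "(a, x, Q) = (''lambda'', PW, RB)" then show ?thesis using a(3) by simp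
  qed blast
qed

lemma scorr_wf: "scorr S \<pi> \<Longrightarrow> list_all well_formed \<pi>"
  by (induction rule: scorr.induct) (auto simp: corr_wf)

lemma Rb_nf_bisim: "nf_bisim Rb"
  unfolding nf_bisim_def
proof (intro conjI allI impI)
  show "symp Rb" unfolding symp_def Rb_def using hb_sym by blast
next
  fix t s t' assume r: "Rb t s" and k: "kam\<^sup>*\<^sup>* (t, []) (Abs t', [])"
  then obtain n A A' where rr: "well_formed t" "well_formed s" "\<forall>f \<in> fv t \<union> fv s. f < n" "A \<in> evx t n" "A' \<in> evx s n" "hb A A'"
    unfolding Rb_def by blast
  obtain j B where jb: "corr [j] B t'" "mtau\<^sup>*\<^sup>* A (WLm j B n)" using evx_to_abs[OF rr(4) k] by blast
  obtain Y1 where y1: "mtau\<^sup>*\<^sup>* A' Y1" "hb (WLm j B n) Y1" using hb_taus[OF rr(6) jb(2)] by blast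
  have "Y1 \<in> evx s n" using evx_steps[OF y1(1) rr(5)] .
  have "(''lambda'', PW, RB) \<in> flags (WLm j B n)" using flags_WL by simp
  from hb_flag_match[OF y1(2) this] obtain Y2 x' Q' where y2: "mtau\<^sup>*\<^sup>* Y1 Y2" "(''lambda'', x', Q') \<in> flags Y2" by blast
  have "Y2 \<in> evx s n" using evx_steps[OF y2(1) \<open>Y1 \<in> evx s n\<close>] .
  from evx_flag_abs[OF this y2(2)] obtain s' j' B' where s': "kam\<^sup>*\<^sup>* (s, []) (Abs s', [])" "corr [j'] B' s'" "Y2 = WLm j' B' n"
    by blast
  have "hb (WLm j B n) (WLm j' B' n)" using hb_term[OF y1(2)] y2(1) s'(3) WL_step by blast
  then have h: "hb (add_mset (Out ''lambda'' Nil) (WLm j B n)) (add_mset (Out ''lambda'' Nil) (WLm j' B' n))"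
    using hb_ctx[of _ _ "Out ''lambda'' Nil"] by (simp add: H_def)
  have "mtau (add_mset (Out ''lambda'' Nil) (WLm j B n)) (L1m j B n)" using WLlam_step by blast
  from sync_ev[OF h this WLlam_step] obtain X Y where xy: "mtau\<^sup>*\<^sup>* (L1m j B n) X" "mtau\<^sup>*\<^sup>* (L1m j' B' n) Y" "hb X Y"
    by blast
  have X: "X \<in> evx (opn n t') (Suc n)" using evx_steps[OF xy(1) evx_L1[OF jb(1)]] .
  have Y: "Y \<in> evx (opn n s') (Suc n)" using evx_steps[OF xy(2) evx_L1[OF s'(2)]] .
  have ft: "fv t' \<subseteq> fv t" "fv s' \<subseteq> fv s" using kam_abs_fv k s'(1) by auto
  then have fb: "\<forall>f \<in> fv (opn n t') \<union> fv (opn n s'). f < Suc n" using fb_lemma rr(3) by blast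
  have wf: "well_formed (opn n t')" "well_formed (opn n s')"
    using corr_wf[OF corr_subst0[OF jb(1) corr_num]] corr_wf[OF corr_subst0[OF s'(2) corr_num]] by auto
  have "Rb (opn n t') (opn n s')" using RbI[OF wf fb X Y xy(3)] .
  moreover have "n \<notin> fv t' \<union> fv s'" using ft rr(3) by auto
  ultimately show "\<exists>s'. kam\<^sup>*\<^sup>* (s, []) (Abs s', []) \<and> (\<exists>f. f \<notin> fv t' \<union> fv s' \<and> Rb (opn f t') (opn f s'))"
    using s'(1) by blast
next
  fix t s f \<pi> assume r: "Rb t s" and k: "kam\<^sup>*\<^sup>* (t, []) (FVar f, \<pi>)"
  then obtain n A A' where rr: "well_formed t" "well_formed s" "\<forall>f \<in> fv t \<union> fv s. f < n" "A \<in> evx t n" "A' \<in> evx s n" "hb A A'"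
    unfolding Rb_def by blast
  obtain S where sS: "scorr S \<pi>" "mtau\<^sup>*\<^sup>* A (EVm (num f) S n)" using evx_to_var[OF rr(4) k] by blast
  obtain Y1 where y1: "mtau\<^sup>*\<^sup>* A' Y1" "hb (EVm (num f) S n) Y1" using hb_taus[OF rr(6) sS(2)] by blast
  have "Y1 \<in> evx s n" using evx_steps[OF y1(1) rr(5)] .
  obtain a0 x0 Q0 where fl: "(a0, x0, Q0) \<in> flags (EVm (num f) S n)" "a0 \<noteq> ''lambda''"
    using flags_num0 flags_numS by (cases f) auto
  from hb_flag_match[OF y1(2) fl(1)] obtain Y2 x' Q' where y2: "mtau\<^sup>*\<^sup>* Y1 Y2" "(a0, x', Q') \<in> flags Y2" by blast
  have "Y2 \<in> evx s n" using evx_steps[OF y2(1) \<open>Y1 \<in> evx s n\<close>] .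
  from evx_flag_var[OF this y2(2) fl(2)] obtain g \<pi>' S' where s': "kam\<^sup>*\<^sup>* (s, []) (FVar g, \<pi>')" "scorr S' \<pi>'" "Y2 = EVm (num g) S' n"
    by blast
  have "hb (EVm (num f) S n) (EVm (num g) S' n)" using hb_term[OF y1(2)] y2(1) s'(3) EV_num by blast
  moreover have "\<forall>f \<in> fvl \<pi> \<union> fvl \<pi>'. f < n" using kam_var_fvl[OF k] kam_var_fvl[OF s'(1)] rr(3) by blast
  ultimately have "f = g \<and> list_all2 Rb \<pi> \<pi>'" using num_lemma sS(1) s'(2) by blast
  then show "\<exists>\<pi>'. kam\<^sup>*\<^sup>* (s, []) (FVar f, \<pi>') \<and> list_all2 Rb \<pi> \<pi>'" using s'(1) by blast
qed

theorem backward: "well_formed t \<Longrightarrow> well_formed s \<Longrightarrow> hbisim H (tr_ev t [] n) (tr_ev s [] n) \<Longrightarrow>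
   \<forall>f \<in> fv t \<union> fv s. f < n \<Longrightarrow> nf_equiv t s"
proof -
  assume a: "well_formed t" "well_formed s" "hbisim H (tr_ev t [] n) (tr_ev s [] n)" "\<forall>f \<in> fv t \<union> fv s. f < n"
  have "hb (EVm (tr 0 t) tr_empty n) (EVm (tr 0 s) tr_empty n)"
    unfolding hb_def using a(3) threads_tr_ev a(1,2) by blast
  moreover have "EVm (tr 0 t) tr_empty n \<in> evx t n" "EVm (tr 0 s) tr_empty n \<in> evx s n"
    using evreg_EV corr_tr0 a(1,2) unfolding evx_def by blast+
  ultimately have "Rb t s" using RbI[OF a(1,2,4)] by blast
  then show ?thesis using nf_bisim_le[OF Rb_nf_bisim] by blast
qed

lemma finite_fv: "finite (fv t)"
  by (induction t) auto

theorem corollary4p15: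
  assumes "well_formed t" and "well_formed s"
  shows "nf_equiv t s \<longleftrightarrow>
         (\<exists>n. (\<forall>f \<in> fv t \<union> fv s. f < n) \<and> hbisim H (tr_ev t [] n) (tr_ev s [] n))"
proof
  assume e: "nf_equiv t s"
  define n where "n = Suc (Max (fv t \<union> fv s \<union> {0}))"
  have fin: "finite (fv t \<union> fv s \<union> {0})" using finite_fv by auto
  have b: "\<forall>f \<in> fv t \<union> fv s. f < n"
  proof
    fix f assume "f \<in> fv t \<union> fv s"
    then have "f \<le> Max (fv t \<union> fv s \<union> {0})" using Max_ge[OF fin] by blast
    then show "f < n" unfolding n_def by simp
  qed
  show "\<exists>n. (\<forall>f \<in> fv t \<union> fv s. f < n) \<and> hbisim H (tr_ev t [] n) (tr_ev s [] n)"
    using forward[OF assms e b] b by blast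
next
  assume "\<exists>n. (\<forall>f \<in> fv t \<union> fv s. f < n) \<and> hbisim H (tr_ev t [] n) (tr_ev s [] n)"
  then obtain n where "\<forall>f \<in> fv t \<union> fv s. f < n" "hbisim H (tr_ev t [] n) (tr_ev s [] n)" by blast
  then show "nf_equiv t s" using backward[OF assms] by blast
qed

end
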